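(* Let $k$ be a commutative ring and $P,Q$ invertible $k$-modules. If $A$ is a $P$-Frobenius $k$-algebra and $B$ is a $Q$-Frobenius $k$-algebra, then the tensor product algebra $A\otimes_kB$ is a $P\otimes_kQ$-Frobenius algebra.
   Context: A $k$-module is invertible if it is finitely generated projective of constant rank one. For an invertible $P$, a $k$-algebra $A$ is $P$-Frobenius if it is finitely generated projective over $k$ and $A_A\cong\mathrm{Hom}_k(A,P)_A$ as right $A$-modules, where $(fa)(x)=f(ax)$. *)

theory Defs
  imports "HOL-Algebra.Algebra"
begin

definition lin_map :: "('k, 'c) ring_scheme \<Rightarrow> ('k, 'm, 'x) module_scheme
    \<Rightarrow> ('k, 'n, 'y) module_scheme \<Rightarrow> ('m \<Rightarrow> 'n) \<Rightarrow> bool" where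
  "lin_map R M N f \<longleftrightarrow>
     (\<forall>x\<in>carrier M. f x \<in> carrier N) \<and>
     (\<forall>x\<in>carrier M. \<forall>y\<in>carrier M. f (x \<oplus>\<^bsub>M\<^esub> y) = f x \<oplus>\<^bsub>N\<^esub> f y) \<and>
     (\<forall>r\<in>carrier R. \<forall>x\<in>carrier M. f (r \<odot>\<^bsub>M\<^esub> x) = r \<odot>\<^bsub>N\<^esub> f x)"

definition free_carrier :: "('k, 'c) ring_scheme \<Rightarrow> 's set \<Rightarrow> ('s \<Rightarrow> 'k) set" where
  "free_carrier R S = {f. (\<forall>x. f x \<in> carrier R) \<and> (\<forall>x. x \<notin> S \<longrightarrow> f x = \<zero>\<^bsub>R\<^esub>)
                          \<and> finite {x. f x \<noteq> \<zero>\<^bsub>R\<^esub>}}"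

definition free_module :: "('k, 'c) ring_scheme \<Rightarrow> 's set \<Rightarrow> ('k, 's \<Rightarrow> 'k) module" where
  "free_module R S = \<lparr>carrier = free_carrier R S, monoid.mult = undefined, monoid.one = undefined,
      ring.zero = (\<lambda>x. \<zero>\<^bsub>R\<^esub>), ring.add = (\<lambda>f g x. f x \<oplus>\<^bsub>R\<^esub> g x),
      module.smult = (\<lambda>r f x. r \<otimes>\<^bsub>R\<^esub> f x)\<rparr>"

definition fs_delta :: "('k, 'c) ring_scheme \<Rightarrow> 's \<Rightarrow> ('s \<Rightarrow> 'k)" where
  "fs_delta R s = (\<lambda>y. if y = s then \<one>\<^bsub>R\<^esub> else \<zero>\<^bsub>R\<^esub>)"

definition fin_gen :: "('k, 'c) ring_scheme \<Rightarrow> ('k, 'm, 'x) module_scheme \<Rightarrow> bool" where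
  "fin_gen R M \<longleftrightarrow> (\<exists>S. finite S \<and> S \<subseteq> carrier M \<and>
     (\<forall>m\<in>carrier M. \<exists>c. (\<forall>s\<in>S. c s \<in> carrier R) \<and>
        m = finsum M (\<lambda>s. c s \<odot>\<^bsub>M\<^esub> s) S))"

text \<open>Projective = direct summand of a free module (we may take the free module on the
  underlying set of M, which surjects onto M).\<close>
definition projective :: "('k, 'c) ring_scheme \<Rightarrow> ('k, 'm, 'x) module_scheme \<Rightarrow> bool" where
  "projective R M \<longleftrightarrow> (\<exists>f g. lin_map R M (free_module R (carrier M)) f \<and>
       lin_map R (free_module R (carrier M)) M g \<and> (\<forall>x\<in>carrier M. g (f x) = x))"

definition self_mod :: "('k, 'c) ring_scheme \<Rightarrow> ('k, 'k) module" where
  "self_mod R = \<lparr>carrier = carrier R, monoid.mult = monoid.mult R, monoid.one = \<one>\<^bsub>R\<^esub>,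
     ring.zero = \<zero>\<^bsub>R\<^esub>, ring.add = ring.add R, module.smult = monoid.mult R\<rparr>"



definition loc_rel :: "('k, 'c) ring_scheme \<Rightarrow> ('k, 'm, 'x) module_scheme \<Rightarrow> 'k set
    \<Rightarrow> (('m \<times> 'k) \<times> ('m \<times> 'k)) set" where
  "loc_rel R M p = {((m, s), (m', s')). m \<in> carrier M \<and> m' \<in> carrier M \<and>
       s \<in> carrier R - p \<and> s' \<in> carrier R - p \<and>
       (\<exists>u\<in>carrier R - p. u \<odot>\<^bsub>M\<^esub> ((s' \<odot>\<^bsub>M\<^esub> m) \<ominus>\<^bsub>M\<^esub> (s \<odot>\<^bsub>M\<^esub> m')) = \<zero>\<^bsub>M\<^esub>)}"

definition loc_carrier :: "('k, 'c) ring_scheme \<Rightarrow> ('k, 'm, 'x) module_scheme \<Rightarrow> 'k set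
    \<Rightarrow> ('m \<times> 'k) set set" where
  "loc_carrier R M p = (carrier M \<times> (carrier R - p)) // loc_rel R M p"

definition loc_smult :: "('k, 'c) ring_scheme \<Rightarrow> ('k, 'm, 'x) module_scheme \<Rightarrow> 'k set
    \<Rightarrow> ('k \<times> 'k) set \<Rightarrow> ('m \<times> 'k) set \<Rightarrow> ('m \<times> 'k) set" where
  "loc_smult R M p a x =
     (let (r, t) = (SOME rt. rt \<in> a); (m, s) = (SOME ms. ms \<in> x)
      in loc_rel R M p `` {(r \<odot>\<^bsub>M\<^esub> m, t \<otimes>\<^bsub>R\<^esub> s)})"

definition loc_rank_one :: "('k, 'c) ring_scheme \<Rightarrow> ('k, 'm, 'x) module_scheme \<Rightarrow> 'k set \<Rightarrow> bool" where
  "loc_rank_one R M p \<longleftrightarrow> (\<exists>x\<in>loc_carrier R M p. \<forall>y\<in>loc_carrier R M p.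
      \<exists>!a. a \<in> loc_carrier R (self_mod R) p \<and> y = loc_smult R M p a x)"

definition invertible_mod :: "('k, 'c) ring_scheme \<Rightarrow> ('k, 'm, 'x) module_scheme \<Rightarrow> bool" where
  "invertible_mod R M \<longleftrightarrow> module R M \<and> fin_gen R M \<and> projective R M \<and>
     (\<forall>p. primeideal p R \<longrightarrow> loc_rank_one R M p)"

definition tens_gens :: "('k, 'c) ring_scheme \<Rightarrow> ('k, 'm, 'x) module_scheme
    \<Rightarrow> ('k, 'n, 'y) module_scheme \<Rightarrow> ('m \<times> 'n \<Rightarrow> 'k) set" where
  "tens_gens R M N =
     {(\<lambda>z. fs_delta R (m \<oplus>\<^bsub>M\<^esub> m', n) z \<ominus>\<^bsub>R\<^esub> fs_delta R (m, n) z \<ominus>\<^bsub>R\<^esub> fs_delta R (m', n) z)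
        | m m' n. m \<in> carrier M \<and> m' \<in> carrier M \<and> n \<in> carrier N} \<union>
     {(\<lambda>z. fs_delta R (m, n \<oplus>\<^bsub>N\<^esub> n') z \<ominus>\<^bsub>R\<^esub> fs_delta R (m, n) z \<ominus>\<^bsub>R\<^esub> fs_delta R (m, n') z)
        | m n n'. m \<in> carrier M \<and> n \<in> carrier N \<and> n' \<in> carrier N} \<union>
     {(\<lambda>z. fs_delta R (r \<odot>\<^bsub>M\<^esub> m, n) z \<ominus>\<^bsub>R\<^esub> r \<otimes>\<^bsub>R\<^esub> fs_delta R (m, n) z)
        | r m n. r \<in> carrier R \<and> m \<in> carrier M \<and> n \<in> carrier N} \<union>
     {(\<lambda>z. fs_delta R (m, r \<odot>\<^bsub>N\<^esub> n) z \<ominus>\<^bsub>R\<^esub> r \<otimes>\<^bsub>R\<^esub> fs_delta R (m, n) z)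
        | r m n. r \<in> carrier R \<and> m \<in> carrier M \<and> n \<in> carrier N}"

definition tens_rel :: "('k, 'c) ring_scheme \<Rightarrow> ('k, 'm, 'x) module_scheme
    \<Rightarrow> ('k, 'n, 'y) module_scheme \<Rightarrow> ('m \<times> 'n \<Rightarrow> 'k) set" where
  "tens_rel R M N = \<Inter>{H. submodule H R (free_module R (carrier M \<times> carrier N))
                          \<and> tens_gens R M N \<subseteq> H}"

definition tens_cls :: "('k, 'c) ring_scheme \<Rightarrow> ('k, 'm, 'x) module_scheme
    \<Rightarrow> ('k, 'n, 'y) module_scheme \<Rightarrow> ('m \<times> 'n \<Rightarrow> 'k) \<Rightarrow> ('m \<times> 'n \<Rightarrow> 'k) set" where
  "tens_cls R M N f = {g \<in> free_carrier R (carrier M \<times> carrier N).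
                        (\<lambda>z. g z \<ominus>\<^bsub>R\<^esub> f z) \<in> tens_rel R M N}"

definition tens_rep :: "'a set \<Rightarrow> 'a" where
  "tens_rep S = (SOME u. u \<in> S)"

definition tensor_mod :: "('k, 'c) ring_scheme \<Rightarrow> ('k, 'm, 'x) module_scheme
    \<Rightarrow> ('k, 'n, 'y) module_scheme \<Rightarrow> ('k, ('m \<times> 'n \<Rightarrow> 'k) set) module" where
  "tensor_mod R M N =
    \<lparr>carrier = tens_cls R M N ` free_carrier R (carrier M \<times> carrier N),
     monoid.mult = undefined, monoid.one = undefined,
     ring.zero = tens_cls R M N (\<lambda>z. \<zero>\<^bsub>R\<^esub>),
     ring.add = (\<lambda>U V. tens_cls R M N (\<lambda>z. tens_rep U z \<oplus>\<^bsub>R\<^esub> tens_rep V z)),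
     module.smult = (\<lambda>r U. tens_cls R M N (\<lambda>z. r \<otimes>\<^bsub>R\<^esub> tens_rep U z))\<rparr>"

text \<open>Multiplication on the free module over A x B: (a,b)(a',b') = (aa',bb').\<close>
definition fs_mult :: "('k, 'c) ring_scheme \<Rightarrow> ('k, 'a, 'x) module_scheme
    \<Rightarrow> ('k, 'b, 'y) module_scheme \<Rightarrow> ('a \<times> 'b \<Rightarrow> 'k) \<Rightarrow> ('a \<times> 'b \<Rightarrow> 'k) \<Rightarrow> ('a \<times> 'b \<Rightarrow> 'k)" where
  "fs_mult R A B f g = (\<lambda>z. finsum R (\<lambda>(u, v). f u \<otimes>\<^bsub>R\<^esub> g v)
      {(u, v). f u \<noteq> \<zero>\<^bsub>R\<^esub> \<and> g v \<noteq> \<zero>\<^bsub>R\<^esub> \<and>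
               z = (fst u \<otimes>\<^bsub>A\<^esub> fst v, snd u \<otimes>\<^bsub>B\<^esub> snd v)})"

definition tensor_alg :: "('k, 'c) ring_scheme \<Rightarrow> ('k, 'a, 'x) module_scheme
    \<Rightarrow> ('k, 'b, 'y) module_scheme \<Rightarrow> ('k, ('a \<times> 'b \<Rightarrow> 'k) set) module" where
  "tensor_alg R A B = (tensor_mod R A B)
     \<lparr>monoid.mult := (\<lambda>U V. tens_cls R A B (fs_mult R A B (tens_rep U) (tens_rep V))),
      monoid.one := tens_cls R A B (fs_delta R (\<one>\<^bsub>A\<^esub>, \<one>\<^bsub>B\<^esub>))\<rparr>"

definition k_algebra :: "('k, 'c) ring_scheme \<Rightarrow> ('k, 'a, 'x) module_scheme \<Rightarrow> bool" where
  "k_algebra R A \<longleftrightarrow> ring A \<and> module R A \<and>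
     (\<forall>r\<in>carrier R. \<forall>x\<in>carrier A. \<forall>y\<in>carrier A.
        (r \<odot>\<^bsub>A\<^esub> x) \<otimes>\<^bsub>A\<^esub> y = r \<odot>\<^bsub>A\<^esub> (x \<otimes>\<^bsub>A\<^esub> y) \<and>
        x \<otimes>\<^bsub>A\<^esub> (r \<odot>\<^bsub>A\<^esub> y) = r \<odot>\<^bsub>A\<^esub> (x \<otimes>\<^bsub>A\<^esub> y))"

definition hom_set :: "('k, 'c) ring_scheme \<Rightarrow> ('k, 'a, 'x) module_scheme
    \<Rightarrow> ('k, 'p, 'y) module_scheme \<Rightarrow> ('a \<Rightarrow> 'p) set" where
  "hom_set R A P = {f. lin_map R A P f \<and> f \<in> extensional (carrier A)}"

text \<open>A is P-Frobenius: A f.g. projective over k and A_A \<cong> Hom_k(A,P)_A as right A-modules,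
  where (f a)(x) = f (a x).\<close>
definition frobenius :: "('k, 'c) ring_scheme \<Rightarrow> ('k, 'p, 'y) module_scheme
    \<Rightarrow> ('k, 'a, 'x) module_scheme \<Rightarrow> bool" where
  "frobenius R P A \<longleftrightarrow> k_algebra R A \<and> fin_gen R A \<and> projective R A \<and>
     (\<exists>\<phi>. bij_betw \<phi> (carrier A) (hom_set R A P) \<and>
        (\<forall>x\<in>carrier A. \<forall>y\<in>carrier A.
            \<phi> (x \<oplus>\<^bsub>A\<^esub> y) = (\<lambda>z\<in>carrier A. \<phi> x z \<oplus>\<^bsub>P\<^esub> \<phi> y z)) \<and>
        (\<forall>x\<in>carrier A. \<forall>a\<in>carrier A.
            \<phi> (x \<otimes>\<^bsub>A\<^esub> a) = (\<lambda>z\<in>carrier A. \<phi> x (a \<otimes>\<^bsub>A\<^esub> z))))"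

end

theory Submission
  imports Defs
begin

lemma free_carrier_iff: "f \<in> free_carrier R S \<longleftrightarrow> (\<forall>x. f x \<in> carrier R) \<and> (\<forall>x. x \<notin> S \<longrightarrow> f x = \<zero>\<^bsub>R\<^esub>)
                          \<and> finite {x. f x \<noteq> \<zero>\<^bsub>R\<^esub>}"
  by (simp add: free_carrier_def)

lemma free_module_simps [simp]:
  "carrier (free_module R S) = free_carrier R S"
  "\<zero>\<^bsub>free_module R S\<^esub> = (\<lambda>x. \<zero>\<^bsub>R\<^esub>)"
  "f \<oplus>\<^bsub>free_module R S\<^esub> g = (\<lambda>x. f x \<oplus>\<^bsub>R\<^esub> g x)"
  "r \<odot>\<^bsub>free_module R S\<^esub> f = (\<lambda>x. r \<otimes>\<^bsub>R\<^esub> f x)"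
  by (simp_all add: free_module_def)

context cring begin

lemma fc_closed: "f \<in> free_carrier R S \<Longrightarrow> f x \<in> carrier R"
  by (simp add: free_carrier_def)
lemma fc_out: "f \<in> free_carrier R S \<Longrightarrow> x \<notin> S \<Longrightarrow> f x = \<zero>"
  by (simp add: free_carrier_def)
lemma fc_fin: "f \<in> free_carrier R S \<Longrightarrow> finite {x. f x \<noteq> \<zero>}"
  by (simp add: free_carrier_def)
lemma fc_supp: "f \<in> free_carrier R S \<Longrightarrow> {x. f x \<noteq> \<zero>} \<subseteq> S"
  using fc_out[of f S] by auto

lemma fc_add: "f \<in> free_carrier R S \<Longrightarrow> g \<in> free_carrier R S \<Longrightarrow> (\<lambda>x. f x \<oplus> g x) \<in> free_carrier R S"
proof -
  assume f: "f \<in> free_carrier R S" and g: "g \<in> free_carrier R S"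
  have "{x. f x \<oplus> g x \<noteq> \<zero>} \<subseteq> {x. f x \<noteq> \<zero>} \<union> {x. g x \<noteq> \<zero>}" using f g by auto
  then show ?thesis using f g fc_fin[OF f] fc_fin[OF g] fc_out[OF f] fc_out[OF g]
    by (auto simp: free_carrier_iff intro: finite_subset)
qed

lemma fc_smult: "r \<in> carrier R \<Longrightarrow> f \<in> free_carrier R S \<Longrightarrow> (\<lambda>x. r \<otimes> f x) \<in> free_carrier R S"
proof -
  assume r: "r \<in> carrier R" and f: "f \<in> free_carrier R S"
  have "{x. r \<otimes> f x \<noteq> \<zero>} \<subseteq> {x. f x \<noteq> \<zero>}" using f r by auto
  then show ?thesis using f r fc_fin[OF f] fc_out[OF f]
    by (auto simp: free_carrier_iff intro: finite_subset)
qed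

lemma fc_neg: "f \<in> free_carrier R S \<Longrightarrow> (\<lambda>x. \<ominus> f x) \<in> free_carrier R S"
proof -
  assume f: "f \<in> free_carrier R S"
  have "{x. \<ominus> f x \<noteq> \<zero>} \<subseteq> {x. f x \<noteq> \<zero>}" using f by auto
  then show ?thesis using f fc_fin[OF f] fc_out[OF f]
    by (auto simp: free_carrier_iff intro: finite_subset)
qed

lemma fc_minus: "f \<in> free_carrier R S \<Longrightarrow> g \<in> free_carrier R S \<Longrightarrow> (\<lambda>x. f x \<ominus> g x) \<in> free_carrier R S"
  using fc_add[OF _ fc_neg] by (simp add: a_minus_def)

lemma fc_zero: "(\<lambda>x. \<zero>) \<in> free_carrier R S"
  by (simp add: free_carrier_iff)

lemma fc_delta: "s \<in> S \<Longrightarrow> fs_delta R s \<in> free_carrier R S"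
proof -
  assume "s \<in> S"
  have "{x. fs_delta R s x \<noteq> \<zero>} \<subseteq> {s}" by (auto simp: fs_delta_def)
  then show ?thesis using \<open>s \<in> S\<close> by (auto simp: free_carrier_iff fs_delta_def intro: finite_subset)
qed

lemma free_module_module: "module R (free_module R S)"
proof (rule moduleI)
  show "cring R" by (rule is_cring)
  show "abelian_group (free_module R S)"
  proof (rule abelian_groupI)
    fix x assume x: "x \<in> carrier (free_module R S)"
    show "\<exists>y\<in>carrier (free_module R S). y \<oplus>\<^bsub>free_module R S\<^esub> x = \<zero>\<^bsub>free_module R S\<^esub>"
      using x by (intro bexI[of _ "\<lambda>z. \<ominus> x z"]) (auto simp: fc_neg l_neg fc_closed)
  qed (auto simp: fc_add fc_zero a_ac fc_closed)
qed (auto simp: fc_smult l_distr r_distr m_assoc fc_closed)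

lemma free_finsum_apply:
  assumes "finite I" "F \<in> I \<rightarrow> free_carrier R S"
  shows "finsum (free_module R S) F I z = (\<Oplus>i\<in>I. F i z)"
  using assms
proof (induction I rule: finite_induct)
  case empty
  interpret FM: module R "free_module R S" by (rule free_module_module)
  show ?case by simp
next
  case (insert i I)
  interpret FM: module R "free_module R S" by (rule free_module_module)
  from insert have "finsum (free_module R S) F (insert i I) = F i \<oplus>\<^bsub>free_module R S\<^esub> finsum (free_module R S) F I"
    by (intro FM.finsum_insert) auto
  moreover from insert have "(\<Oplus>i\<in>insert i I. F i z) = F i z \<oplus> (\<Oplus>i\<in>I. F i z)"
    by (intro finsum_insert) (auto intro: fc_closed)
  ultimately show ?case using insert by simp
qed

lemma free_expand_apply:
  assumes f: "f \<in> free_carrier R S" and T: "finite T" "{x. f x \<noteq> \<zero>} \<subseteq> T"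
  shows "(\<Oplus>t\<in>T. f t \<otimes> fs_delta R t z) = f z"
proof -
  have fc: "\<And>x. f x \<in> carrier R" using f by (rule fc_closed)
  have "(\<Oplus>t\<in>T. f t \<otimes> fs_delta R t z) = (\<Oplus>t\<in>T. if z = t then f t else \<zero>)"
    using fc by (intro finsum_cong) (auto simp: fs_delta_def simp_implies_def)
  also have "\<dots> = f z"
  proof (cases "z \<in> T")
    case True then show ?thesis using finsum_singleton[OF True T(1), of f] fc by auto
  next
    case False
    then have "f z = \<zero>" using T by auto
    moreover have "(\<Oplus>t\<in>T. if z = t then f t else \<zero>) = (\<Oplus>t\<in>T. \<zero>)"
      using False by (intro finsum_cong) (auto simp: simp_implies_def)
    ultimately show ?thesis by simp
  qed
  finally show ?thesis .
qed

lemma fc_smult_delta: "r \<in> carrier R \<Longrightarrow> s \<in> S \<Longrightarrow> (\<lambda>x. r \<otimes> fs_delta R s x) \<in> free_carrier R S"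
  by (intro fc_smult fc_delta)

lemma free_expand:
  assumes f: "f \<in> free_carrier R S" and T: "finite T" "{x. f x \<noteq> \<zero>} \<subseteq> T" "T \<subseteq> S"
  shows "finsum (free_module R S) (\<lambda>t. f t \<odot>\<^bsub>free_module R S\<^esub> fs_delta R t) T = f"
proof
  fix z
  have "(\<lambda>t. f t \<odot>\<^bsub>free_module R S\<^esub> fs_delta R t) \<in> T \<rightarrow> free_carrier R S"
    using T f by (auto simp: fc_smult_delta fc_closed)
  then have "finsum (free_module R S) (\<lambda>t. f t \<odot>\<^bsub>free_module R S\<^esub> fs_delta R t) T z
     = (\<Oplus>t\<in>T. (f t \<odot>\<^bsub>free_module R S\<^esub> fs_delta R t) z)"
    by (intro free_finsum_apply[OF T(1)])
  also have "\<dots> = f z" using free_expand_apply[OF f T(1,2)] by simp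
  finally show "finsum (free_module R S) (\<lambda>t. f t \<odot>\<^bsub>free_module R S\<^esub> fs_delta R t) T z = f z" .
qed

end


definition flift :: "('k,'c) ring_scheme \<Rightarrow> ('k,'n,'y) module_scheme \<Rightarrow> ('s \<Rightarrow> 'n) \<Rightarrow> ('s \<Rightarrow> 'k) \<Rightarrow> 'n" where
  "flift R L \<beta> f = finsum L (\<lambda>z. f z \<odot>\<^bsub>L\<^esub> \<beta> z) {z. f z \<noteq> \<zero>\<^bsub>R\<^esub>}"

context abelian_monoid begin
lemma finsum_cong_simple:
  assumes "\<And>i. i \<in> A \<Longrightarrow> f i = g i" "g \<in> A \<rightarrow> carrier G"
  shows "finsum G f A = finsum G g A"
  using assms by (intro finsum_cong) (auto simp: simp_implies_def)
lemma finsum_single: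
  assumes "f a \<in> carrier G"
  shows "finsum G f {a} = f a"
  using assms finsum_insert[of "{}" a f] by simp
end

lemma lin_mapD:
  assumes "lin_map R M N h"
  shows "x \<in> carrier M \<Longrightarrow> h x \<in> carrier N"
    and "x \<in> carrier M \<Longrightarrow> y \<in> carrier M \<Longrightarrow> h (x \<oplus>\<^bsub>M\<^esub> y) = h x \<oplus>\<^bsub>N\<^esub> h y"
    and "r \<in> carrier R \<Longrightarrow> x \<in> carrier M \<Longrightarrow> h (r \<odot>\<^bsub>M\<^esub> x) = r \<odot>\<^bsub>N\<^esub> h x"
  using assms by (auto simp: lin_map_def)

lemma lin_mapI:
  assumes "\<And>x. x \<in> carrier M \<Longrightarrow> h x \<in> carrier N"
    and "\<And>x y. x \<in> carrier M \<Longrightarrow> y \<in> carrier M \<Longrightarrow> h (x \<oplus>\<^bsub>M\<^esub> y) = h x \<oplus>\<^bsub>N\<^esub> h y"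
    and "\<And>r x. r \<in> carrier R \<Longrightarrow> x \<in> carrier M \<Longrightarrow> h (r \<odot>\<^bsub>M\<^esub> x) = r \<odot>\<^bsub>N\<^esub> h x"
  shows "lin_map R M N h"
  using assms by (auto simp: lin_map_def)

lemma lin_map_zero:
  assumes "module R M" "module R N" "lin_map R M N h"
  shows "h \<zero>\<^bsub>M\<^esub> = \<zero>\<^bsub>N\<^esub>"
proof -
  interpret M: module R M by fact
  interpret N: module R N by fact
  have "h \<zero>\<^bsub>M\<^esub> = h (\<zero>\<^bsub>R\<^esub> \<odot>\<^bsub>M\<^esub> \<zero>\<^bsub>M\<^esub>)" by simp
  also have "\<dots> = \<zero>\<^bsub>R\<^esub> \<odot>\<^bsub>N\<^esub> h \<zero>\<^bsub>M\<^esub>" using lin_mapD(3)[OF assms(3), of "\<zero>\<^bsub>R\<^esub>" "\<zero>\<^bsub>M\<^esub>"] by simp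
  also have "\<dots> = \<zero>\<^bsub>N\<^esub>" using lin_mapD(1)[OF assms(3)] by simp
  finally show ?thesis .
qed

lemma lin_map_finsum:
  assumes "module R M" "module R N" "lin_map R M N h" "finite I" "F \<in> I \<rightarrow> carrier M"
  shows "h (finsum M F I) = finsum N (\<lambda>i. h (F i)) I"
  using assms(4,5)
proof (induction I rule: finite_induct)
  interpret M: module R M by fact
  interpret N: module R N by fact
  case empty
  then show ?case using lin_map_zero[OF assms(1-3)] by simp
next
  interpret M: module R M by fact
  interpret N: module R N by fact
  case (insert i I)
  have hc: "\<And>x. x \<in> carrier M \<Longrightarrow> h x \<in> carrier N" using lin_mapD(1)[OF assms(3)] .
  have "h (finsum M F (insert i I)) = h (F i \<oplus>\<^bsub>M\<^esub> finsum M F I)"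
    using insert by (subst M.finsum_insert) auto
  also have "\<dots> = h (F i) \<oplus>\<^bsub>N\<^esub> h (finsum M F I)"
    using insert by (intro lin_mapD(2)[OF assms(3)]) (auto intro: M.finsum_closed)
  also have "\<dots> = finsum N (\<lambda>i. h (F i)) (insert i I)"
    using insert hc by (subst N.finsum_insert) (auto simp: Pi_iff)
  finally show ?case .
qed

lemma lin_map_neg:
  assumes "module R M" "module R N" "lin_map R M N h" "x \<in> carrier M"
  shows "h (\<ominus>\<^bsub>M\<^esub> x) = \<ominus>\<^bsub>N\<^esub> h x"
proof -
  interpret M: module R M by fact
  interpret N: module R N by fact
  have "h (\<ominus>\<^bsub>M\<^esub> x) \<oplus>\<^bsub>N\<^esub> h x = h (\<ominus>\<^bsub>M\<^esub> x \<oplus>\<^bsub>M\<^esub> x)"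
    using assms by (simp add: lin_mapD(2))
  also have "\<dots> = \<zero>\<^bsub>N\<^esub>" using assms lin_map_zero by (simp add: M.l_neg)
  finally show ?thesis using assms lin_mapD(1)[OF assms(3)]
    by (metis M.add.inv_closed N.add.inv_equality)
qed

lemma lin_map_minus:
  assumes "module R M" "module R N" "lin_map R M N h" "x \<in> carrier M" "y \<in> carrier M"
  shows "h (x \<ominus>\<^bsub>M\<^esub> y) = h x \<ominus>\<^bsub>N\<^esub> h y"
proof -
  interpret M: module R M by fact
  interpret N: module R N by fact
  show ?thesis using assms lin_map_neg[OF assms(1-3)]
    by (simp add: a_minus_def lin_mapD(2))
qed

lemma lin_map_comp:
  "lin_map R M N h \<Longrightarrow> lin_map R N L g \<Longrightarrow> lin_map R M L (\<lambda>x. g (h x))"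
  by (auto simp: lin_map_def)

context module begin

lemma modM: "module R M" by unfold_locales

lemma flift_superset:
  assumes f: "f \<in> free_carrier R S" and T: "finite T" "{z. f z \<noteq> \<zero>} \<subseteq> T" "T \<subseteq> S"
    and b: "\<beta> \<in> S \<rightarrow> carrier M"
  shows "flift R M \<beta> f = (\<Oplus>\<^bsub>M\<^esub> z\<in>T. f z \<odot>\<^bsub>M\<^esub> \<beta> z)"
  unfolding flift_def
proof (rule M.add.finprod_mono_neutral_cong_left)
  show "finite T" by fact
  show "{z. f z \<noteq> \<zero>} \<subseteq> T" by fact
  show "f i \<odot>\<^bsub>M\<^esub> \<beta> i = \<zero>\<^bsub>M\<^esub>" if "i \<in> T - {z. f z \<noteq> \<zero>}" for i
  proof -
    have "\<beta> i \<in> carrier M" using that T b by auto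
    then show ?thesis using that by simp
  qed
  show "\<And>x. x \<in> {z. f z \<noteq> \<zero>} \<Longrightarrow> f x \<odot>\<^bsub>M\<^esub> \<beta> x = f x \<odot>\<^bsub>M\<^esub> \<beta> x" by simp
  show "(\<lambda>z. f z \<odot>\<^bsub>M\<^esub> \<beta> z) \<in> T \<rightarrow> carrier M"
    using T b f by (auto intro!: smult_closed fc_closed[OF f])
qed

lemma flift_closed:
  assumes f: "f \<in> free_carrier R S" and b: "\<beta> \<in> S \<rightarrow> carrier M"
  shows "flift R M \<beta> f \<in> carrier M"
  unfolding flift_def using f b fc_supp[OF f]
  by (intro M.finsum_closed) (auto intro!: smult_closed fc_closed[OF f])

lemma flift_add:
  assumes f: "f \<in> free_carrier R S" and g: "g \<in> free_carrier R S" and b: "\<beta> \<in> S \<rightarrow> carrier M"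
  shows "flift R M \<beta> (\<lambda>x. f x \<oplus> g x) = flift R M \<beta> f \<oplus>\<^bsub>M\<^esub> flift R M \<beta> g"
proof -
  let ?T = "{z. f z \<noteq> \<zero>} \<union> {z. g z \<noteq> \<zero>}"
  have T: "finite ?T" "?T \<subseteq> S" using fc_fin[OF f] fc_fin[OF g] fc_supp[OF f] fc_supp[OF g] by auto
  have fg: "(\<lambda>x. f x \<oplus> g x) \<in> free_carrier R S" using fc_add f g by blast
  have s: "{z. f z \<oplus> g z \<noteq> \<zero>} \<subseteq> ?T" using f g by (auto intro: fc_closed)
  have "flift R M \<beta> (\<lambda>x. f x \<oplus> g x) = (\<Oplus>\<^bsub>M\<^esub> z\<in>?T. (f z \<oplus> g z) \<odot>\<^bsub>M\<^esub> \<beta> z)"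
    by (rule flift_superset[OF fg T(1) s T(2) b])
  also have "\<dots> = (\<Oplus>\<^bsub>M\<^esub> z\<in>?T. f z \<odot>\<^bsub>M\<^esub> \<beta> z \<oplus>\<^bsub>M\<^esub> g z \<odot>\<^bsub>M\<^esub> \<beta> z)"
    using T b f g by (intro M.finsum_cong) (auto simp: smult_l_distr fc_closed Pi_iff simp_implies_def subset_iff)
  also have "\<dots> = (\<Oplus>\<^bsub>M\<^esub> z\<in>?T. f z \<odot>\<^bsub>M\<^esub> \<beta> z) \<oplus>\<^bsub>M\<^esub> (\<Oplus>\<^bsub>M\<^esub> z\<in>?T. g z \<odot>\<^bsub>M\<^esub> \<beta> z)"
    using T b f g by (intro M.finsum_addf) (auto simp: fc_closed Pi_iff subset_iff)
  also have "\<dots> = flift R M \<beta> f \<oplus>\<^bsub>M\<^esub> flift R M \<beta> g"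
    using flift_superset[OF f T(1) _ T(2) b] flift_superset[OF g T(1) _ T(2) b] by auto
  finally show ?thesis .
qed

lemma flift_smult:
  assumes f: "f \<in> free_carrier R S" and r: "r \<in> carrier R" and b: "\<beta> \<in> S \<rightarrow> carrier M"
  shows "flift R M \<beta> (\<lambda>x. r \<otimes> f x) = r \<odot>\<^bsub>M\<^esub> flift R M \<beta> f"
proof -
  let ?T = "{z. f z \<noteq> \<zero>}"
  have T: "finite ?T" "?T \<subseteq> S" using fc_fin[OF f] fc_supp[OF f] by auto
  have rf: "(\<lambda>x. r \<otimes> f x) \<in> free_carrier R S" using fc_smult f r by blast
  have s: "{z. r \<otimes> f z \<noteq> \<zero>} \<subseteq> ?T" using f r by (auto intro: fc_closed)
  have "flift R M \<beta> (\<lambda>x. r \<otimes> f x) = (\<Oplus>\<^bsub>M\<^esub> z\<in>?T. (r \<otimes> f z) \<odot>\<^bsub>M\<^esub> \<beta> z)"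
    by (rule flift_superset[OF rf T(1) s T(2) b])
  also have "\<dots> = (\<Oplus>\<^bsub>M\<^esub> z\<in>?T. r \<odot>\<^bsub>M\<^esub> (f z \<odot>\<^bsub>M\<^esub> \<beta> z))"
    using T b f r by (intro M.finsum_cong) (auto simp: smult_assoc1 fc_closed Pi_iff simp_implies_def subset_iff)
  also have "\<dots> = r \<odot>\<^bsub>M\<^esub> (\<Oplus>\<^bsub>M\<^esub> z\<in>?T. f z \<odot>\<^bsub>M\<^esub> \<beta> z)"
    using T b f r by (intro finsum_smult_ldistr[symmetric]) (auto simp: fc_closed Pi_iff subset_iff)
  also have "\<dots> = r \<odot>\<^bsub>M\<^esub> flift R M \<beta> f" by (simp add: flift_def)
  finally show ?thesis .
qed

lemma flift_lin:
  assumes b: "\<beta> \<in> S \<rightarrow> carrier M"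
  shows "lin_map R (free_module R S) M (flift R M \<beta>)"
  by (rule lin_mapI) (auto simp: flift_closed[OF _ b] flift_add[OF _ _ b] flift_smult[OF _ _ b])

lemma flift_delta:
  assumes s: "s \<in> S" and b: "\<beta> \<in> S \<rightarrow> carrier M"
  shows "flift R M \<beta> (fs_delta R s) = \<beta> s"
proof -
  have "flift R M \<beta> (fs_delta R s) = (\<Oplus>\<^bsub>M\<^esub> z\<in>{s}. fs_delta R s z \<odot>\<^bsub>M\<^esub> \<beta> z)"
    using s by (intro flift_superset[OF fc_delta[OF s] _ _ _ b]) (auto simp: fs_delta_def)
  also have "\<dots> = \<one> \<odot>\<^bsub>M\<^esub> \<beta> s" using s b by (subst M.finsum_single) (auto simp: fs_delta_def)
  also have "\<dots> = \<beta> s" using funcset_mem[OF b s] by simp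
  finally show ?thesis .
qed

lemma lin_free_eq:
  assumes G: "lin_map R (free_module R S) M G" and f: "f \<in> free_carrier R S"
  shows "G f = flift R M (\<lambda>s. G (fs_delta R s)) f"
proof -
  interpret FM: module R "free_module R S" by (rule free_module_module)
  let ?T = "{z. f z \<noteq> \<zero>}"
  have T: "finite ?T" "?T \<subseteq> S" using fc_fin[OF f] fc_supp[OF f] by auto
  have "G f = G (finsum (free_module R S) (\<lambda>t. f t \<odot>\<^bsub>free_module R S\<^esub> fs_delta R t) ?T)"
    using free_expand[OF f T(1) _ T(2)] by simp
  also have "\<dots> = (\<Oplus>\<^bsub>M\<^esub> t\<in>?T. G (f t \<odot>\<^bsub>free_module R S\<^esub> fs_delta R t))"
    using T f by (intro lin_map_finsum[OF free_module_module modM G])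
       (auto simp: Pi_iff subset_iff fc_smult_delta fc_closed)
  also have "\<dots> = (\<Oplus>\<^bsub>M\<^esub> t\<in>?T. f t \<odot>\<^bsub>M\<^esub> G (fs_delta R t))"
  proof (rule M.finsum_cong_simple)
    fix t assume "t \<in> ?T"
    then have "t \<in> S" using T by auto
    then show "G (f t \<odot>\<^bsub>free_module R S\<^esub> fs_delta R t) = f t \<odot>\<^bsub>M\<^esub> G (fs_delta R t)"
      by (intro lin_mapD(3)[OF G] fc_closed[OF f]) (simp add: fc_delta)
  next
    show "(\<lambda>t. f t \<odot>\<^bsub>M\<^esub> G (fs_delta R t)) \<in> ?T \<rightarrow> carrier M"
      using T by (auto intro!: smult_closed lin_mapD(1)[OF G] fc_delta fc_closed[OF f])
  qed
  also have "\<dots> = flift R M (\<lambda>s. G (fs_delta R s)) f" by (simp add: flift_def)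
  finally show ?thesis .
qed

end


lemma module_image:
  fixes F :: "('k, 'f, 'z) module_scheme" and T :: "('k, 't, 'w) module_scheme"
  assumes modF: "module R F" and surj: "carrier T = q ` carrier F"
    and add: "\<And>x y. x \<in> carrier F \<Longrightarrow> y \<in> carrier F \<Longrightarrow> q x \<oplus>\<^bsub>T\<^esub> q y = q (x \<oplus>\<^bsub>F\<^esub> y)"
    and sm: "\<And>r x. r \<in> carrier R \<Longrightarrow> x \<in> carrier F \<Longrightarrow> r \<odot>\<^bsub>T\<^esub> q x = q (r \<odot>\<^bsub>F\<^esub> x)"
    and zero: "\<zero>\<^bsub>T\<^esub> = q \<zero>\<^bsub>F\<^esub>"
  shows "module R T"
proof -
  interpret F: module R F by fact
  show ?thesis
  proof (rule moduleI)
    show "cring R" by (rule F.is_cring)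
    show "abelian_group T"
    proof (rule abelian_groupI)
      show "\<And>x y. x \<in> carrier T \<Longrightarrow> y \<in> carrier T \<Longrightarrow> x \<oplus>\<^bsub>T\<^esub> y \<in> carrier T"
        unfolding surj by (auto simp: add)
      show "\<zero>\<^bsub>T\<^esub> \<in> carrier T" unfolding surj zero by auto
      show "\<And>x y z. x \<in> carrier T \<Longrightarrow> y \<in> carrier T \<Longrightarrow> z \<in> carrier T \<Longrightarrow>
          x \<oplus>\<^bsub>T\<^esub> y \<oplus>\<^bsub>T\<^esub> z = x \<oplus>\<^bsub>T\<^esub> (y \<oplus>\<^bsub>T\<^esub> z)"
        unfolding surj by (auto simp: add F.a_assoc)
      show "\<And>x y. x \<in> carrier T \<Longrightarrow> y \<in> carrier T \<Longrightarrow> x \<oplus>\<^bsub>T\<^esub> y = y \<oplus>\<^bsub>T\<^esub> x"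
        unfolding surj by (auto simp: add F.a_comm)
      show "\<And>x. x \<in> carrier T \<Longrightarrow> \<zero>\<^bsub>T\<^esub> \<oplus>\<^bsub>T\<^esub> x = x"
        unfolding surj zero by (auto simp: add)
      show "\<And>x. x \<in> carrier T \<Longrightarrow> \<exists>y\<in>carrier T. y \<oplus>\<^bsub>T\<^esub> x = \<zero>\<^bsub>T\<^esub>"
      proof -
        fix x assume "x \<in> carrier T"
        then obtain a where a: "a \<in> carrier F" "x = q a" unfolding surj by auto
        then have "q (\<ominus>\<^bsub>F\<^esub> a) \<oplus>\<^bsub>T\<^esub> x = \<zero>\<^bsub>T\<^esub>" by (simp add: add zero F.l_neg)
        moreover have "q (\<ominus>\<^bsub>F\<^esub> a) \<in> carrier T" unfolding surj using a by auto
        ultimately show "\<exists>y\<in>carrier T. y \<oplus>\<^bsub>T\<^esub> x = \<zero>\<^bsub>T\<^esub>" by blast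
      qed
    qed
    show "\<And>a x. a \<in> carrier R \<Longrightarrow> x \<in> carrier T \<Longrightarrow> a \<odot>\<^bsub>T\<^esub> x \<in> carrier T"
      unfolding surj by (auto simp: sm)
    show "\<And>a b x. a \<in> carrier R \<Longrightarrow> b \<in> carrier R \<Longrightarrow> x \<in> carrier T \<Longrightarrow>
        (a \<oplus>\<^bsub>R\<^esub> b) \<odot>\<^bsub>T\<^esub> x = a \<odot>\<^bsub>T\<^esub> x \<oplus>\<^bsub>T\<^esub> b \<odot>\<^bsub>T\<^esub> x"
      unfolding surj by (auto simp: sm add F.smult_l_distr)
    show "\<And>a x y. a \<in> carrier R \<Longrightarrow> x \<in> carrier T \<Longrightarrow> y \<in> carrier T \<Longrightarrow>
        a \<odot>\<^bsub>T\<^esub> (x \<oplus>\<^bsub>T\<^esub> y) = a \<odot>\<^bsub>T\<^esub> x \<oplus>\<^bsub>T\<^esub> a \<odot>\<^bsub>T\<^esub> y"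
      unfolding surj by (auto simp: sm add F.smult_r_distr)
    show "\<And>a b x. a \<in> carrier R \<Longrightarrow> b \<in> carrier R \<Longrightarrow> x \<in> carrier T \<Longrightarrow>
        (a \<otimes>\<^bsub>R\<^esub> b) \<odot>\<^bsub>T\<^esub> x = a \<odot>\<^bsub>T\<^esub> (b \<odot>\<^bsub>T\<^esub> x)"
      unfolding surj by (auto simp: sm F.smult_assoc1)
    show "\<And>x. x \<in> carrier T \<Longrightarrow> \<one>\<^bsub>R\<^esub> \<odot>\<^bsub>T\<^esub> x = x"
      unfolding surj by (auto simp: sm)
  qed
qed

context cring begin

lemma free_a_inv: "f \<in> free_carrier R S \<Longrightarrow> \<ominus>\<^bsub>free_module R S\<^esub> f = (\<lambda>z. \<ominus> f z)"
proof -
  assume f: "f \<in> free_carrier R S"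
  interpret FM: module R "free_module R S" by (rule free_module_module)
  show ?thesis
    by (rule FM.add.inv_equality) (use f in \<open>auto simp: fc_neg l_neg fc_closed\<close>)
qed

lemma free_minus: "f \<in> free_carrier R S \<Longrightarrow> g \<in> free_carrier R S \<Longrightarrow>
   f \<ominus>\<^bsub>free_module R S\<^esub> g = (\<lambda>z. f z \<ominus> g z)"
  by (simp add: a_minus_def free_a_inv)

end

locale tctx = cring R + M: module R M + N: module R N
  for R :: "('k, 'c) ring_scheme" (structure) and M :: "('k, 'm, 'x) module_scheme"
    and N :: "('k, 'n, 'y) module_scheme"
begin

abbreviation "FMN \<equiv> free_module R (carrier M \<times> carrier N)"
abbreviation "TMN \<equiv> tensor_mod R M N"
abbreviation "cls \<equiv> tens_cls R M N"
abbreviation "rel \<equiv> tens_rel R M N"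
abbreviation "tm m n \<equiv> tens_cls R M N (fs_delta R (m, n))"

lemma FM_mod: "module R FMN" by (rule free_module_module)

lemma gens_sub: "tens_gens R M N \<subseteq> free_carrier R (carrier M \<times> carrier N)"
  unfolding tens_gens_def
  by (auto intro!: fc_minus fc_delta fc_smult)

lemma rel_family: "carrier FMN \<in> {H. submodule H R FMN \<and> tens_gens R M N \<subseteq> H}"
  using gens_sub module.carrier_is_submodule[OF FM_mod] by simp

lemma rel_sub: "rel \<subseteq> free_carrier R (carrier M \<times> carrier N)"
  unfolding tens_rel_def using rel_family by auto

lemma gens_rel: "tens_gens R M N \<subseteq> rel"
  unfolding tens_rel_def by auto

lemma rel_least: "submodule H R FMN \<Longrightarrow> tens_gens R M N \<subseteq> H \<Longrightarrow> rel \<subseteq> H"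
  unfolding tens_rel_def by auto

lemma rel_zero: "(\<lambda>z. \<zero>) \<in> rel"
proof -
  have "\<zero>\<^bsub>FMN\<^esub> \<in> H" if "submodule H R FMN" for H
    using subgroup.one_closed[OF submodule.axioms(1)[OF that]] by simp
  then show ?thesis unfolding tens_rel_def by auto
qed

lemma rel_add: "f \<in> rel \<Longrightarrow> g \<in> rel \<Longrightarrow> (\<lambda>z. f z \<oplus> g z) \<in> rel"
proof -
  assume f: "f \<in> rel" and g: "g \<in> rel"
  have "f \<oplus>\<^bsub>FMN\<^esub> g \<in> H" if "submodule H R FMN" "f \<in> H" "g \<in> H" for H
    using subgroup.m_closed[OF submodule.axioms(1)[OF that(1)] that(2,3)] by simp
  then show ?thesis using f g unfolding tens_rel_def by auto
qed

lemma rel_smult: "r \<in> carrier R \<Longrightarrow> f \<in> rel \<Longrightarrow> (\<lambda>z. r \<otimes> f z) \<in> rel"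
proof -
  assume r: "r \<in> carrier R" and f: "f \<in> rel"
  have "r \<odot>\<^bsub>FMN\<^esub> f \<in> H" if "submodule H R FMN" "f \<in> H" for H
    using submodule.smult_closed[OF that(1) r that(2)] by simp
  then show ?thesis using f unfolding tens_rel_def by auto
qed

lemma rel_neg: "f \<in> rel \<Longrightarrow> (\<lambda>z. \<ominus> f z) \<in> rel"
proof -
  assume f: "f \<in> rel"
  have fc: "f \<in> free_carrier R (carrier M \<times> carrier N)" using f rel_sub by auto
  have "(\<lambda>z. (\<ominus> \<one>) \<otimes> f z) \<in> rel" by (rule rel_smult) (use f in auto)
  moreover have "(\<lambda>z. (\<ominus> \<one>) \<otimes> f z) = (\<lambda>z. \<ominus> f z)"
    using fc_closed[OF fc] by (auto simp: l_minus)
  ultimately show ?thesis by simp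
qed

lemma rel_minus: "f \<in> rel \<Longrightarrow> g \<in> rel \<Longrightarrow> (\<lambda>z. f z \<ominus> g z) \<in> rel"
  using rel_add[OF _ rel_neg] by (simp add: a_minus_def)

lemma rel_kill:
  assumes L: "module R L" and lin: "lin_map R FMN L h"
    and gens: "\<And>g. g \<in> tens_gens R M N \<Longrightarrow> h g = \<zero>\<^bsub>L\<^esub>"
    and f: "f \<in> rel"
  shows "h f = \<zero>\<^bsub>L\<^esub>"
proof -
  interpret L: module R L by fact
  interpret FM: module R FMN by (rule FM_mod)
  let ?K = "{f \<in> carrier FMN. h f = \<zero>\<^bsub>L\<^esub>}"
  have "submodule ?K R FMN"
  proof (rule FM.submoduleI)
    show "?K \<subseteq> carrier FMN" by auto
    show "\<zero>\<^bsub>FMN\<^esub> \<in> ?K" using lin_map_zero[OF FM_mod L lin] FM.zero_closed by simp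
    show "\<ominus>\<^bsub>FMN\<^esub> a \<in> ?K" if "a \<in> ?K" for a
      using that lin_map_neg[OF FM_mod L lin, of a] FM.a_inv_closed[of a] by simp
    show "a \<oplus>\<^bsub>FMN\<^esub> b \<in> ?K" if "a \<in> ?K" "b \<in> ?K" for a b
      using that lin_mapD(2)[OF lin, of a b] by (simp del: free_module_simps)
    show "r \<odot>\<^bsub>FMN\<^esub> a \<in> ?K" if "r \<in> carrier R" "a \<in> ?K" for r a
      using that lin_mapD(3)[OF lin, of r a] by (simp del: free_module_simps)
  qed
  moreover have "tens_gens R M N \<subseteq> ?K" using gens gens_sub by auto
  ultimately have "rel \<subseteq> ?K" by (rule rel_least)
  then show ?thesis using f by auto
qed

lemma cls_mem: "g \<in> cls f \<longleftrightarrow> g \<in> free_carrier R (carrier M \<times> carrier N) \<and> (\<lambda>z. g z \<ominus> f z) \<in> rel"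
  by (simp add: tens_cls_def)

lemma cls_self: "f \<in> free_carrier R (carrier M \<times> carrier N) \<Longrightarrow> f \<in> cls f"
proof -
  assume f: "f \<in> free_carrier R (carrier M \<times> carrier N)"
  have "(\<lambda>z. f z \<ominus> f z) = (\<lambda>z. \<zero>)" using fc_closed[OF f] by (auto simp: r_neg a_minus_def)
  then show ?thesis using f rel_zero by (simp add: cls_mem)
qed

lemma cls_eq:
  assumes f: "f \<in> free_carrier R (carrier M \<times> carrier N)" and g: "g \<in> free_carrier R (carrier M \<times> carrier N)"
    and d: "(\<lambda>z. f z \<ominus> g z) \<in> rel"
  shows "cls f = cls g"
proof -
  have "h \<in> cls f \<longleftrightarrow> h \<in> cls g" if h: "h \<in> free_carrier R (carrier M \<times> carrier N)" for h
  proof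
    assume "h \<in> cls f"
    then have "(\<lambda>z. h z \<ominus> f z) \<in> rel" by (simp add: cls_mem)
    from rel_add[OF this d] have "(\<lambda>z. (h z \<ominus> f z) \<oplus> (f z \<ominus> g z)) \<in> rel" .
    moreover have "(\<lambda>z. (h z \<ominus> f z) \<oplus> (f z \<ominus> g z)) = (\<lambda>z. h z \<ominus> g z)"
    proof
      fix z
      have "h z \<in> carrier R" "f z \<in> carrier R" "g z \<in> carrier R" using h f g by (auto intro: fc_closed)
      then show "(h z \<ominus> f z) \<oplus> (f z \<ominus> g z) = h z \<ominus> g z" by algebra
    qed
    ultimately show "h \<in> cls g" using h by (simp add: cls_mem)
  next
    assume "h \<in> cls g"
    then have "(\<lambda>z. h z \<ominus> g z) \<in> rel" by (simp add: cls_mem)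
    from rel_minus[OF this d] have "(\<lambda>z. (h z \<ominus> g z) \<ominus> (f z \<ominus> g z)) \<in> rel" .
    moreover have "(\<lambda>z. (h z \<ominus> g z) \<ominus> (f z \<ominus> g z)) = (\<lambda>z. h z \<ominus> f z)"
    proof
      fix z
      have "h z \<in> carrier R" "f z \<in> carrier R" "g z \<in> carrier R" using h f g by (auto intro: fc_closed)
      then show "(h z \<ominus> g z) \<ominus> (f z \<ominus> g z) = h z \<ominus> f z" by algebra
    qed
    ultimately show "h \<in> cls f" using h by (simp add: cls_mem)
  qed
  then show ?thesis unfolding tens_cls_def by auto
qed

lemma cls_eq_iff:
  assumes f: "f \<in> free_carrier R (carrier M \<times> carrier N)" and g: "g \<in> free_carrier R (carrier M \<times> carrier N)"
  shows "cls f = cls g \<longleftrightarrow> (\<lambda>z. f z \<ominus> g z) \<in> rel"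
  using cls_eq[OF f g] cls_self[OF f] by (auto simp: cls_mem)

lemma rep_cls:
  assumes f: "f \<in> free_carrier R (carrier M \<times> carrier N)"
  shows "tens_rep (cls f) \<in> free_carrier R (carrier M \<times> carrier N)"
    and "(\<lambda>z. tens_rep (cls f) z \<ominus> f z) \<in> rel"
    and "cls (tens_rep (cls f)) = cls f"
proof -
  have "tens_rep (cls f) \<in> cls f" unfolding tens_rep_def using cls_self[OF f] by (rule someI[of "\<lambda>u. u \<in> cls f"])
  then show r: "tens_rep (cls f) \<in> free_carrier R (carrier M \<times> carrier N)"
    and d: "(\<lambda>z. tens_rep (cls f) z \<ominus> f z) \<in> rel" by (auto simp: cls_mem)
  show "cls (tens_rep (cls f)) = cls f" by (rule cls_eq[OF r f d])
qed

lemma T_simps: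
  "carrier TMN = cls ` free_carrier R (carrier M \<times> carrier N)"
  "\<zero>\<^bsub>TMN\<^esub> = cls (\<lambda>z. \<zero>)"
  "U \<oplus>\<^bsub>TMN\<^esub> V = cls (\<lambda>z. tens_rep U z \<oplus> tens_rep V z)"
  "r \<odot>\<^bsub>TMN\<^esub> U = cls (\<lambda>z. r \<otimes> tens_rep U z)"
  by (simp_all add: tensor_mod_def)

lemma cls_add:
  assumes f: "f \<in> free_carrier R (carrier M \<times> carrier N)" and g: "g \<in> free_carrier R (carrier M \<times> carrier N)"
  shows "cls f \<oplus>\<^bsub>TMN\<^esub> cls g = cls (\<lambda>z. f z \<oplus> g z)"
proof -
  let ?f' = "tens_rep (cls f)" and ?g' = "tens_rep (cls g)"
  have f': "?f' \<in> free_carrier R (carrier M \<times> carrier N)" and g': "?g' \<in> free_carrier R (carrier M \<times> carrier N)"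
    using rep_cls f g by auto
  have "(\<lambda>z. (?f' z \<ominus> f z) \<oplus> (?g' z \<ominus> g z)) \<in> rel"
    using rel_add[OF rep_cls(2)[OF f] rep_cls(2)[OF g]] .
  moreover have "(\<lambda>z. (?f' z \<ominus> f z) \<oplus> (?g' z \<ominus> g z)) = (\<lambda>z. (?f' z \<oplus> ?g' z) \<ominus> (f z \<oplus> g z))"
  proof
    fix z
    have "?f' z \<in> carrier R" "?g' z \<in> carrier R" "f z \<in> carrier R" "g z \<in> carrier R"
      using f g f' g' by (auto intro: fc_closed)
    then show "(?f' z \<ominus> f z) \<oplus> (?g' z \<ominus> g z) = (?f' z \<oplus> ?g' z) \<ominus> (f z \<oplus> g z)" by algebra
  qed
  ultimately show ?thesis unfolding T_simps
    by (intro cls_eq fc_add f g f' g') simp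
qed

lemma cls_smult:
  assumes f: "f \<in> free_carrier R (carrier M \<times> carrier N)" and r: "r \<in> carrier R"
  shows "r \<odot>\<^bsub>TMN\<^esub> cls f = cls (\<lambda>z. r \<otimes> f z)"
proof -
  let ?f' = "tens_rep (cls f)"
  have f': "?f' \<in> free_carrier R (carrier M \<times> carrier N)" using rep_cls f by auto
  have "(\<lambda>z. r \<otimes> (?f' z \<ominus> f z)) \<in> rel"
    using rel_smult[OF r rep_cls(2)[OF f]] .
  moreover have "(\<lambda>z. r \<otimes> (?f' z \<ominus> f z)) = (\<lambda>z. r \<otimes> ?f' z \<ominus> r \<otimes> f z)"
  proof
    fix z
    have "?f' z \<in> carrier R" "f z \<in> carrier R" using f f' by (auto intro: fc_closed)
    then show "r \<otimes> (?f' z \<ominus> f z) = r \<otimes> ?f' z \<ominus> r \<otimes> f z" using r by algebra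
  qed
  ultimately show ?thesis unfolding T_simps
    by (intro cls_eq fc_smult f f' r) simp
qed

lemma T_module: "module R TMN"
proof (rule module_image[OF FM_mod, where q = cls])
  show "carrier TMN = cls ` carrier FMN" by (simp add: T_simps)
  show "\<zero>\<^bsub>TMN\<^esub> = cls \<zero>\<^bsub>FMN\<^esub>" by (simp add: T_simps)
  show "\<And>x y. x \<in> carrier FMN \<Longrightarrow> y \<in> carrier FMN \<Longrightarrow> cls x \<oplus>\<^bsub>TMN\<^esub> cls y = cls (x \<oplus>\<^bsub>FMN\<^esub> y)"
    by (simp only: free_module_simps) (rule cls_add)
  show "\<And>r x. r \<in> carrier R \<Longrightarrow> x \<in> carrier FMN \<Longrightarrow> r \<odot>\<^bsub>TMN\<^esub> cls x = cls (r \<odot>\<^bsub>FMN\<^esub> x)"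
    by (simp only: free_module_simps) (rule cls_smult)
qed

lemma cls_closed: "f \<in> free_carrier R (carrier M \<times> carrier N) \<Longrightarrow> cls f \<in> carrier TMN"
  by (simp add: T_simps)

lemma cls_lin: "lin_map R FMN TMN cls"
proof (rule lin_mapI)
  show "\<And>x. x \<in> carrier FMN \<Longrightarrow> cls x \<in> carrier TMN" using cls_closed by simp
  show "\<And>x y. x \<in> carrier FMN \<Longrightarrow> y \<in> carrier FMN \<Longrightarrow> cls (x \<oplus>\<^bsub>FMN\<^esub> y) = cls x \<oplus>\<^bsub>TMN\<^esub> cls y"
    by (simp only: free_module_simps) (rule cls_add[symmetric])
  show "\<And>r x. r \<in> carrier R \<Longrightarrow> x \<in> carrier FMN \<Longrightarrow> cls (r \<odot>\<^bsub>FMN\<^esub> x) = r \<odot>\<^bsub>TMN\<^esub> cls x"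
    by (simp only: free_module_simps) (rule cls_smult[symmetric])
qed

lemma tm_closed: "m \<in> carrier M \<Longrightarrow> n \<in> carrier N \<Longrightarrow> tm m n \<in> carrier TMN"
  by (intro cls_closed fc_delta) simp

lemma T_elem: "U \<in> carrier TMN \<Longrightarrow> \<exists>f \<in> free_carrier R (carrier M \<times> carrier N). U = cls f"
  by (auto simp: T_simps)

end


lemma (in abelian_group) minus_eq_zero_eq:
  assumes "x \<in> carrier G" "y \<in> carrier G" "x \<ominus> y = \<zero>"
  shows "x = y"
proof -
  have "x = (x \<ominus> y) \<oplus> y" using assms(1,2) by (simp add: a_minus_def a_assoc l_neg)
  then show ?thesis using assms by simp
qed

lemma (in abelian_group) add_minus_cancel3:
  assumes "x \<in> carrier G" "y \<in> carrier G"
  shows "x \<oplus> y \<ominus> x \<ominus> y = \<zero>"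
proof -
  have "x \<oplus> y \<ominus> x = y \<oplus> (x \<ominus> x)" using assms by (simp add: a_minus_def a_assoc a_comm a_lcomm)
  also have "\<dots> = y" using assms by (simp add: a_minus_def r_neg)
  finally show ?thesis using assms by (simp add: a_minus_def r_neg)
qed

lemma (in abelian_group) minus_self: "x \<in> carrier G \<Longrightarrow> x \<ominus> x = \<zero>"
  by (simp add: a_minus_def r_neg)

definition bilin :: "('k,'c) ring_scheme \<Rightarrow> ('k,'m,'x) module_scheme \<Rightarrow> ('k,'n,'y) module_scheme
   \<Rightarrow> ('k,'l,'z) module_scheme \<Rightarrow> ('m \<Rightarrow> 'n \<Rightarrow> 'l) \<Rightarrow> bool" where
  "bilin R M N L \<beta> \<longleftrightarrow>
    (\<forall>m\<in>carrier M. \<forall>n\<in>carrier N. \<beta> m n \<in> carrier L) \<and>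
    (\<forall>m\<in>carrier M. \<forall>m'\<in>carrier M. \<forall>n\<in>carrier N. \<beta> (m \<oplus>\<^bsub>M\<^esub> m') n = \<beta> m n \<oplus>\<^bsub>L\<^esub> \<beta> m' n) \<and>
    (\<forall>m\<in>carrier M. \<forall>n\<in>carrier N. \<forall>n'\<in>carrier N. \<beta> m (n \<oplus>\<^bsub>N\<^esub> n') = \<beta> m n \<oplus>\<^bsub>L\<^esub> \<beta> m n') \<and>
    (\<forall>r\<in>carrier R. \<forall>m\<in>carrier M. \<forall>n\<in>carrier N. \<beta> (r \<odot>\<^bsub>M\<^esub> m) n = r \<odot>\<^bsub>L\<^esub> \<beta> m n) \<and>
    (\<forall>r\<in>carrier R. \<forall>m\<in>carrier M. \<forall>n\<in>carrier N. \<beta> m (r \<odot>\<^bsub>N\<^esub> n) = r \<odot>\<^bsub>L\<^esub> \<beta> m n)"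

lemma bilinI:
  assumes "\<And>m n. m \<in> carrier M \<Longrightarrow> n \<in> carrier N \<Longrightarrow> \<beta> m n \<in> carrier L"
    and "\<And>m m' n. m \<in> carrier M \<Longrightarrow> m' \<in> carrier M \<Longrightarrow> n \<in> carrier N \<Longrightarrow> \<beta> (m \<oplus>\<^bsub>M\<^esub> m') n = \<beta> m n \<oplus>\<^bsub>L\<^esub> \<beta> m' n"
    and "\<And>m n n'. m \<in> carrier M \<Longrightarrow> n \<in> carrier N \<Longrightarrow> n' \<in> carrier N \<Longrightarrow> \<beta> m (n \<oplus>\<^bsub>N\<^esub> n') = \<beta> m n \<oplus>\<^bsub>L\<^esub> \<beta> m n'"
    and "\<And>r m n. r \<in> carrier R \<Longrightarrow> m \<in> carrier M \<Longrightarrow> n \<in> carrier N \<Longrightarrow> \<beta> (r \<odot>\<^bsub>M\<^esub> m) n = r \<odot>\<^bsub>L\<^esub> \<beta> m n"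
    and "\<And>r m n. r \<in> carrier R \<Longrightarrow> m \<in> carrier M \<Longrightarrow> n \<in> carrier N \<Longrightarrow> \<beta> m (r \<odot>\<^bsub>N\<^esub> n) = r \<odot>\<^bsub>L\<^esub> \<beta> m n"
  shows "bilin R M N L \<beta>"
  using assms unfolding bilin_def by blast

lemma bilinD:
  assumes "bilin R M N L \<beta>"
  shows "\<And>m n. m \<in> carrier M \<Longrightarrow> n \<in> carrier N \<Longrightarrow> \<beta> m n \<in> carrier L"
    and "\<And>m m' n. m \<in> carrier M \<Longrightarrow> m' \<in> carrier M \<Longrightarrow> n \<in> carrier N \<Longrightarrow> \<beta> (m \<oplus>\<^bsub>M\<^esub> m') n = \<beta> m n \<oplus>\<^bsub>L\<^esub> \<beta> m' n"
    and "\<And>m n n'. m \<in> carrier M \<Longrightarrow> n \<in> carrier N \<Longrightarrow> n' \<in> carrier N \<Longrightarrow> \<beta> m (n \<oplus>\<^bsub>N\<^esub> n') = \<beta> m n \<oplus>\<^bsub>L\<^esub> \<beta> m n'"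
    and "\<And>r m n. r \<in> carrier R \<Longrightarrow> m \<in> carrier M \<Longrightarrow> n \<in> carrier N \<Longrightarrow> \<beta> (r \<odot>\<^bsub>M\<^esub> m) n = r \<odot>\<^bsub>L\<^esub> \<beta> m n"
    and "\<And>r m n. r \<in> carrier R \<Longrightarrow> m \<in> carrier M \<Longrightarrow> n \<in> carrier N \<Longrightarrow> \<beta> m (r \<odot>\<^bsub>N\<^esub> n) = r \<odot>\<^bsub>L\<^esub> \<beta> m n"
  using assms unfolding bilin_def by blast+

definition tlift :: "('k,'c) ring_scheme \<Rightarrow> ('k,'l,'z) module_scheme \<Rightarrow> ('m \<Rightarrow> 'n \<Rightarrow> 'l)
   \<Rightarrow> ('m \<times> 'n \<Rightarrow> 'k) set \<Rightarrow> 'l" where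
  "tlift R L \<beta> U = flift R L (\<lambda>z. \<beta> (fst z) (snd z)) (tens_rep U)"

context tctx begin

lemma delta_closed: "m \<in> carrier M \<Longrightarrow> n \<in> carrier N \<Longrightarrow> fs_delta R (m, n) \<in> free_carrier R (carrier M \<times> carrier N)"
  by (intro fc_delta) simp

lemma delta_closed': "z \<in> carrier M \<times> carrier N \<Longrightarrow> fs_delta R z \<in> free_carrier R (carrier M \<times> carrier N)"
  by (intro fc_delta)

lemma delta_carrier: "fs_delta R z x \<in> carrier R"
  by (simp add: fs_delta_def)

lemma tm_add_l:
  assumes m: "m \<in> carrier M" "m' \<in> carrier M" and n: "n \<in> carrier N"
  shows "tm (m \<oplus>\<^bsub>M\<^esub> m') n = tm m n \<oplus>\<^bsub>TMN\<^esub> tm m' n"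
proof -
  let ?g = "\<lambda>z. fs_delta R (m \<oplus>\<^bsub>M\<^esub> m', n) z \<ominus> fs_delta R (m, n) z \<ominus> fs_delta R (m', n) z"
  have "?g \<in> tens_gens R M N" unfolding tens_gens_def using m n by blast
  then have g: "?g \<in> rel" using gens_rel by auto
  have eq: "?g = (\<lambda>z. fs_delta R (m \<oplus>\<^bsub>M\<^esub> m', n) z \<ominus> (fs_delta R (m, n) z \<oplus> fs_delta R (m', n) z))"
  proof
    fix z
    have "fs_delta R (m \<oplus>\<^bsub>M\<^esub> m', n) z \<in> carrier R" "fs_delta R (m, n) z \<in> carrier R" "fs_delta R (m', n) z \<in> carrier R"
      by (rule delta_carrier)+
    then show "?g z = fs_delta R (m \<oplus>\<^bsub>M\<^esub> m', n) z \<ominus> (fs_delta R (m, n) z \<oplus> fs_delta R (m', n) z)" by algebra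
  qed
  have "tm (m \<oplus>\<^bsub>M\<^esub> m') n = cls (\<lambda>z. fs_delta R (m, n) z \<oplus> fs_delta R (m', n) z)"
    using g m n unfolding eq
    by (intro cls_eq[OF delta_closed fc_add[OF delta_closed delta_closed]]) auto
  then show ?thesis using cls_add[OF delta_closed delta_closed] m n by simp
qed

lemma tm_add_r:
  assumes m: "m \<in> carrier M" and n: "n \<in> carrier N" "n' \<in> carrier N"
  shows "tm m (n \<oplus>\<^bsub>N\<^esub> n') = tm m n \<oplus>\<^bsub>TMN\<^esub> tm m n'"
proof -
  let ?g = "\<lambda>z. fs_delta R (m, n \<oplus>\<^bsub>N\<^esub> n') z \<ominus> fs_delta R (m, n) z \<ominus> fs_delta R (m, n') z"
  have "?g \<in> tens_gens R M N" unfolding tens_gens_def using m n by blast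
  then have g: "?g \<in> rel" using gens_rel by auto
  have eq: "?g = (\<lambda>z. fs_delta R (m, n \<oplus>\<^bsub>N\<^esub> n') z \<ominus> (fs_delta R (m, n) z \<oplus> fs_delta R (m, n') z))"
  proof
    fix z
    have "fs_delta R (m, n \<oplus>\<^bsub>N\<^esub> n') z \<in> carrier R" "fs_delta R (m, n) z \<in> carrier R" "fs_delta R (m, n') z \<in> carrier R"
      by (rule delta_carrier)+
    then show "?g z = fs_delta R (m, n \<oplus>\<^bsub>N\<^esub> n') z \<ominus> (fs_delta R (m, n) z \<oplus> fs_delta R (m, n') z)" by algebra
  qed
  have "tm m (n \<oplus>\<^bsub>N\<^esub> n') = cls (\<lambda>z. fs_delta R (m, n) z \<oplus> fs_delta R (m, n') z)"
    using g m n unfolding eq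
    by (intro cls_eq[OF delta_closed fc_add[OF delta_closed delta_closed]]) auto
  then show ?thesis using cls_add[OF delta_closed delta_closed] m n by simp
qed

lemma tm_smult_l:
  assumes r: "r \<in> carrier R" and m: "m \<in> carrier M" and n: "n \<in> carrier N"
  shows "tm (r \<odot>\<^bsub>M\<^esub> m) n = r \<odot>\<^bsub>TMN\<^esub> tm m n"
proof -
  let ?g = "\<lambda>z. fs_delta R (r \<odot>\<^bsub>M\<^esub> m, n) z \<ominus> r \<otimes> fs_delta R (m, n) z"
  have "?g \<in> tens_gens R M N" unfolding tens_gens_def using r m n by blast
  then have g: "?g \<in> rel" using gens_rel by auto
  have "tm (r \<odot>\<^bsub>M\<^esub> m) n = cls (\<lambda>z. r \<otimes> fs_delta R (m, n) z)"
    using g r m n by (intro cls_eq[OF delta_closed fc_smult[OF r delta_closed]]) auto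
  then show ?thesis using cls_smult[OF delta_closed r] m n by simp
qed

lemma tm_smult_r:
  assumes r: "r \<in> carrier R" and m: "m \<in> carrier M" and n: "n \<in> carrier N"
  shows "tm m (r \<odot>\<^bsub>N\<^esub> n) = r \<odot>\<^bsub>TMN\<^esub> tm m n"
proof -
  let ?g = "\<lambda>z. fs_delta R (m, r \<odot>\<^bsub>N\<^esub> n) z \<ominus> r \<otimes> fs_delta R (m, n) z"
  have "?g \<in> tens_gens R M N" unfolding tens_gens_def using r m n by blast
  then have g: "?g \<in> rel" using gens_rel by auto
  have "tm m (r \<odot>\<^bsub>N\<^esub> n) = cls (\<lambda>z. r \<otimes> fs_delta R (m, n) z)"
    using g r m n by (intro cls_eq[OF delta_closed fc_smult[OF r delta_closed]]) auto
  then show ?thesis using cls_smult[OF delta_closed r] m n by simp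
qed

lemma tm_bilin: "bilin R M N TMN (\<lambda>m n. tm m n)"
  by (rule bilinI) (auto simp: tm_closed tm_add_l tm_add_r tm_smult_l tm_smult_r)

lemma cls_expand:
  assumes f: "f \<in> free_carrier R (carrier M \<times> carrier N)"
  shows "cls f = flift R TMN (\<lambda>z. tm (fst z) (snd z)) f"
  using module.lin_free_eq[OF T_module cls_lin f] by simp

lemma tens_induct [consumes 1, case_names zero tm add]:
  assumes U: "U \<in> carrier TMN"
    and zero: "P \<zero>\<^bsub>TMN\<^esub>"
    and tmP: "\<And>m n. m \<in> carrier M \<Longrightarrow> n \<in> carrier N \<Longrightarrow> P (tm m n)"
    and add: "\<And>U V. U \<in> carrier TMN \<Longrightarrow> V \<in> carrier TMN \<Longrightarrow> P U \<Longrightarrow> P V \<Longrightarrow> P (U \<oplus>\<^bsub>TMN\<^esub> V)"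
  shows "P U"
proof -
  interpret T: module R TMN by (rule T_module)
  obtain f where f: "f \<in> free_carrier R (carrier M \<times> carrier N)" and Uf: "U = cls f"
    using T_elem[OF U] by blast
  let ?F = "\<lambda>z. f z \<odot>\<^bsub>TMN\<^esub> tm (fst z) (snd z)"
  have Fc: "?F z \<in> carrier TMN" if "z \<in> carrier M \<times> carrier N" for z
    using that f by (auto intro!: T.smult_closed tm_closed fc_closed[OF f])
  have FP: "P (?F z)" if "z \<in> carrier M \<times> carrier N" for z
  proof -
    have "?F z = tm (f z \<odot>\<^bsub>M\<^esub> fst z) (snd z)" using that by (auto simp: tm_smult_l fc_closed[OF f])
    then show ?thesis using that tmP fc_closed[OF f] by auto
  qed
  have main: "A \<subseteq> carrier M \<times> carrier N \<Longrightarrow> P (finsum TMN ?F A) \<and> finsum TMN ?F A \<in> carrier TMN" if "finite A" for A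
    using that
  proof (induction A rule: finite_induct)
    case empty
    then show ?case using zero by simp
  next
    case (insert a A)
    then have "finsum TMN ?F (insert a A) = ?F a \<oplus>\<^bsub>TMN\<^esub> finsum TMN ?F A"
      using Fc by (intro T.finsum_insert) auto
    then show ?case using insert Fc FP add by auto
  qed
  have "U = finsum TMN ?F {z. f z \<noteq> \<zero>}"
    unfolding Uf cls_expand[OF f] flift_def by simp
  then show ?thesis using main[OF fc_fin[OF f] fc_supp[OF f]] by simp
qed

lemma tlift_cls:
  assumes L: "module R L" and b: "bilin R M N L \<beta>" and f: "f \<in> free_carrier R (carrier M \<times> carrier N)"
  shows "tlift R L \<beta> (cls f) = flift R L (\<lambda>z. \<beta> (fst z) (snd z)) f"
proof -
  interpret L: module R L by fact
  interpret FM: module R FMN by (rule FM_mod)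
  let ?b = "\<lambda>z. \<beta> (fst z) (snd z)"
  have bc: "?b \<in> carrier M \<times> carrier N \<rightarrow> carrier L" using bilinD(1)[OF b] by auto
  have lin: "lin_map R FMN L (flift R L ?b)" by (rule L.flift_lin[OF bc])
  have fd: "\<And>m n. m \<in> carrier M \<Longrightarrow> n \<in> carrier N \<Longrightarrow> flift R L ?b (fs_delta R (m, n)) = \<beta> m n"
    using L.flift_delta[OF _ bc] by auto
  have kill: "flift R L ?b g = \<zero>\<^bsub>L\<^esub>" if g: "g \<in> tens_gens R M N" for g
  proof -
    have minus: "flift R L ?b (\<lambda>z. u z \<ominus> v z) = flift R L ?b u \<ominus>\<^bsub>L\<^esub> flift R L ?b v"
      if "u \<in> free_carrier R (carrier M \<times> carrier N)" "v \<in> free_carrier R (carrier M \<times> carrier N)" for u v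
      using lin_map_minus[OF FM_mod L lin, of u v] that by (simp add: free_minus)
    have sm: "flift R L ?b (\<lambda>z. r \<otimes> u z) = r \<odot>\<^bsub>L\<^esub> flift R L ?b u"
      if "r \<in> carrier R" "u \<in> free_carrier R (carrier M \<times> carrier N)" for u r
      using L.flift_smult[OF that(2) that(1) bc] .
    have fdm: "flift R L ?b (\<lambda>z. fs_delta R a z \<ominus> fs_delta R b z \<ominus> fs_delta R c z)
       = \<beta> (fst a) (snd a) \<ominus>\<^bsub>L\<^esub> \<beta> (fst b) (snd b) \<ominus>\<^bsub>L\<^esub> \<beta> (fst c) (snd c)"
      if "a \<in> carrier M \<times> carrier N" "b \<in> carrier M \<times> carrier N" "c \<in> carrier M \<times> carrier N" for a b c
    proof -
      have "flift R L ?b (\<lambda>z. fs_delta R a z \<ominus> fs_delta R b z \<ominus> fs_delta R c z)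
         = flift R L ?b (\<lambda>z. fs_delta R a z \<ominus> fs_delta R b z) \<ominus>\<^bsub>L\<^esub> flift R L ?b (fs_delta R c)"
        using that by (intro minus fc_minus delta_closed') auto
      also have "\<dots> = flift R L ?b (fs_delta R a) \<ominus>\<^bsub>L\<^esub> flift R L ?b (fs_delta R b) \<ominus>\<^bsub>L\<^esub> flift R L ?b (fs_delta R c)"
        using that by (subst minus) (auto intro: delta_closed')
      also have "\<dots> = \<beta> (fst a) (snd a) \<ominus>\<^bsub>L\<^esub> \<beta> (fst b) (snd b) \<ominus>\<^bsub>L\<^esub> \<beta> (fst c) (snd c)"
        using that L.flift_delta[OF _ bc] by simp
      finally show ?thesis .
    qed
    have fds: "flift R L ?b (\<lambda>z. fs_delta R a z \<ominus> r \<otimes> fs_delta R c z)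
       = \<beta> (fst a) (snd a) \<ominus>\<^bsub>L\<^esub> r \<odot>\<^bsub>L\<^esub> \<beta> (fst c) (snd c)"
      if "a \<in> carrier M \<times> carrier N" "c \<in> carrier M \<times> carrier N" "r \<in> carrier R" for a c r
    proof -
      have "flift R L ?b (\<lambda>z. fs_delta R a z \<ominus> r \<otimes> fs_delta R c z)
         = flift R L ?b (fs_delta R a) \<ominus>\<^bsub>L\<^esub> flift R L ?b (\<lambda>z. r \<otimes> fs_delta R c z)"
        using that by (intro minus fc_smult delta_closed') auto
      also have "\<dots> = flift R L ?b (fs_delta R a) \<ominus>\<^bsub>L\<^esub> r \<odot>\<^bsub>L\<^esub> flift R L ?b (fs_delta R c)"
        using that by (subst sm) (auto intro: delta_closed')
      also have "\<dots> = \<beta> (fst a) (snd a) \<ominus>\<^bsub>L\<^esub> r \<odot>\<^bsub>L\<^esub> \<beta> (fst c) (snd c)"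
        using that L.flift_delta[OF _ bc] by simp
      finally show ?thesis .
    qed
    from g show ?thesis unfolding tens_gens_def
    proof (elim UnE CollectE exE conjE)
      fix m m' n assume *: "g = (\<lambda>z. fs_delta R (m \<oplus>\<^bsub>M\<^esub> m', n) z \<ominus> fs_delta R (m, n) z \<ominus> fs_delta R (m', n) z)"
        "m \<in> carrier M" "m' \<in> carrier M" "n \<in> carrier N"
      then have "flift R L ?b g = \<beta> (m \<oplus>\<^bsub>M\<^esub> m') n \<ominus>\<^bsub>L\<^esub> \<beta> m n \<ominus>\<^bsub>L\<^esub> \<beta> m' n"
        using fdm[of "(m \<oplus>\<^bsub>M\<^esub> m', n)" "(m, n)" "(m', n)"] by simp
      also have "\<dots> = \<zero>\<^bsub>L\<^esub>" using * bilinD(1,2)[OF b] by (simp add: L.add_minus_cancel3)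
      finally show ?thesis .
    next
      fix m n n' assume *: "g = (\<lambda>z. fs_delta R (m, n \<oplus>\<^bsub>N\<^esub> n') z \<ominus> fs_delta R (m, n) z \<ominus> fs_delta R (m, n') z)"
        "m \<in> carrier M" "n \<in> carrier N" "n' \<in> carrier N"
      then have "flift R L ?b g = \<beta> m (n \<oplus>\<^bsub>N\<^esub> n') \<ominus>\<^bsub>L\<^esub> \<beta> m n \<ominus>\<^bsub>L\<^esub> \<beta> m n'"
        using fdm[of "(m, n \<oplus>\<^bsub>N\<^esub> n')" "(m, n)" "(m, n')"] by simp
      also have "\<dots> = \<zero>\<^bsub>L\<^esub>" using * bilinD(1,3)[OF b] by (simp add: L.add_minus_cancel3)
      finally show ?thesis .
    next
      fix r m n assume *: "g = (\<lambda>z. fs_delta R (r \<odot>\<^bsub>M\<^esub> m, n) z \<ominus> r \<otimes> fs_delta R (m, n) z)"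
        "r \<in> carrier R" "m \<in> carrier M" "n \<in> carrier N"
      then have "flift R L ?b g = \<beta> (r \<odot>\<^bsub>M\<^esub> m) n \<ominus>\<^bsub>L\<^esub> r \<odot>\<^bsub>L\<^esub> \<beta> m n"
        using fds[of "(r \<odot>\<^bsub>M\<^esub> m, n)" "(m, n)" r] by simp
      also have "\<dots> = \<zero>\<^bsub>L\<^esub>" using * bilinD(1,4)[OF b] by (simp add: L.minus_self)
      finally show ?thesis .
    next
      fix r m n assume *: "g = (\<lambda>z. fs_delta R (m, r \<odot>\<^bsub>N\<^esub> n) z \<ominus> r \<otimes> fs_delta R (m, n) z)"
        "r \<in> carrier R" "m \<in> carrier M" "n \<in> carrier N"
      then have "flift R L ?b g = \<beta> m (r \<odot>\<^bsub>N\<^esub> n) \<ominus>\<^bsub>L\<^esub> r \<odot>\<^bsub>L\<^esub> \<beta> m n"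
        using fds[of "(m, r \<odot>\<^bsub>N\<^esub> n)" "(m, n)" r] by simp
      also have "\<dots> = \<zero>\<^bsub>L\<^esub>" using * bilinD(1,5)[OF b] by (simp add: L.minus_self)
      finally show ?thesis .
    qed
  qed
  have r: "tens_rep (cls f) \<in> free_carrier R (carrier M \<times> carrier N)" using rep_cls(1)[OF f] .
  have "flift R L ?b (\<lambda>z. tens_rep (cls f) z \<ominus> f z) = \<zero>\<^bsub>L\<^esub>"
    by (rule rel_kill[OF L lin kill rep_cls(2)[OF f]])
  then have "flift R L ?b (tens_rep (cls f)) \<ominus>\<^bsub>L\<^esub> flift R L ?b f = \<zero>\<^bsub>L\<^esub>"
    using lin_map_minus[OF FM_mod L lin, of "tens_rep (cls f)" f] r f by (simp add: free_minus[OF r f])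
  then show ?thesis unfolding tlift_def
    by (rule L.minus_eq_zero_eq[OF L.flift_closed[OF r bc] L.flift_closed[OF f bc]])
qed

lemma tlift_tm:
  assumes L: "module R L" and b: "bilin R M N L \<beta>" and m: "m \<in> carrier M" and n: "n \<in> carrier N"
  shows "tlift R L \<beta> (tm m n) = \<beta> m n"
proof -
  interpret L: module R L by fact
  have bc: "(\<lambda>z. \<beta> (fst z) (snd z)) \<in> carrier M \<times> carrier N \<rightarrow> carrier L" using bilinD(1)[OF b] by auto
  show ?thesis using tlift_cls[OF L b delta_closed[OF m n]] L.flift_delta[OF _ bc, of "(m, n)"] m n by simp
qed

lemma tlift_lin:
  assumes L: "module R L" and b: "bilin R M N L \<beta>"
  shows "lin_map R TMN L (tlift R L \<beta>)"
proof -
  interpret L: module R L by fact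
  have bc: "(\<lambda>z. \<beta> (fst z) (snd z)) \<in> carrier M \<times> carrier N \<rightarrow> carrier L" using bilinD(1)[OF b] by auto
  show ?thesis
  proof (rule lin_mapI)
    fix U assume "U \<in> carrier TMN"
    then obtain f where f: "f \<in> free_carrier R (carrier M \<times> carrier N)" "U = cls f" using T_elem by blast
    then show "tlift R L \<beta> U \<in> carrier L" using tlift_cls[OF L b] L.flift_closed[OF _ bc] by simp
  next
    fix U V assume "U \<in> carrier TMN" "V \<in> carrier TMN"
    then obtain f g where f: "f \<in> free_carrier R (carrier M \<times> carrier N)" "U = cls f"
      and g: "g \<in> free_carrier R (carrier M \<times> carrier N)" "V = cls g" using T_elem by meson
    then show "tlift R L \<beta> (U \<oplus>\<^bsub>TMN\<^esub> V) = tlift R L \<beta> U \<oplus>\<^bsub>L\<^esub> tlift R L \<beta> V"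
      using tlift_cls[OF L b] L.flift_add[OF _ _ bc] by (simp add: cls_add fc_add)
  next
    fix r U assume r: "r \<in> carrier R" and "U \<in> carrier TMN"
    then obtain f where f: "f \<in> free_carrier R (carrier M \<times> carrier N)" "U = cls f" using T_elem by blast
    then show "tlift R L \<beta> (r \<odot>\<^bsub>TMN\<^esub> U) = r \<odot>\<^bsub>L\<^esub> tlift R L \<beta> U"
      using tlift_cls[OF L b] L.flift_smult[OF _ r bc] r by (simp add: cls_smult fc_smult)
  qed
qed

lemma tens_lin_eq:
  assumes L: "module R L" and F: "lin_map R TMN L F" and G: "lin_map R TMN L G"
    and eq: "\<And>m n. m \<in> carrier M \<Longrightarrow> n \<in> carrier N \<Longrightarrow> F (tm m n) = G (tm m n)"
    and U: "U \<in> carrier TMN"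
  shows "F U = G U"
  using U
proof (induction rule: tens_induct)
  case zero
  then show ?case using lin_map_zero[OF T_module L F] lin_map_zero[OF T_module L G] by simp
next
  case (tm m n)
  then show ?case by (rule eq)
next
  case (add U V)
  then show ?case using lin_mapD(2)[OF F] lin_mapD(2)[OF G] by simp
qed

end


lemma (in abelian_monoid) finsum_product:
  assumes A: "finite A" and B: "finite B" and F: "\<And>a b. a \<in> A \<Longrightarrow> b \<in> B \<Longrightarrow> F a b \<in> carrier G"
  shows "finsum G (\<lambda>a. finsum G (\<lambda>b. F a b) B) A = finsum G (\<lambda>p. F (fst p) (snd p)) (A \<times> B)"
  using A F
proof (induction A rule: finite_induct)
  case empty
  then show ?case by simp
next
  case (insert a A)
  have d: "({a} \<times> B) \<inter> (A \<times> B) = {}" using insert by auto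
  have u: "insert a A \<times> B = ({a} \<times> B) \<union> (A \<times> B)" by auto
  have "finsum G (\<lambda>p. F (fst p) (snd p)) (insert a A \<times> B)
     = finsum G (\<lambda>p. F (fst p) (snd p)) ({a} \<times> B) \<oplus> finsum G (\<lambda>p. F (fst p) (snd p)) (A \<times> B)"
    unfolding u using insert B d by (intro finsum_Un_disjoint) (auto simp: Pi_iff)
  moreover have "finsum G (\<lambda>p. F (fst p) (snd p)) ({a} \<times> B) = finsum G (\<lambda>b. F a b) B"
  proof -
    have "{a} \<times> B = Pair a ` B" by auto
    then show ?thesis using insert by (simp add: finsum_reindex inj_on_def Pi_iff)
  qed
  moreover have "finsum G (\<lambda>a. finsum G (\<lambda>b. F a b) B) (insert a A)
      = finsum G (\<lambda>b. F a b) B \<oplus> finsum G (\<lambda>a. finsum G (\<lambda>b. F a b) B) A"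
    using insert by (intro finsum_insert) (auto simp: Pi_iff intro!: finsum_closed)
  ultimately show ?case using insert by simp
qed

context module begin

lemma flift_cong:
  assumes f: "f \<in> free_carrier R S" and eq: "\<And>z. z \<in> S \<Longrightarrow> \<beta> z = \<gamma> z"
    and c: "\<gamma> \<in> S \<rightarrow> carrier M"
  shows "flift R M \<beta> f = flift R M \<gamma> f"
  unfolding flift_def using fc_supp[OF f] eq c
  by (intro M.finsum_cong') (auto simp: fc_closed[OF f] Pi_iff subset_iff intro!: smult_closed)

lemma flift_fun_add:
  assumes f: "f \<in> free_carrier R S" and b: "\<beta> \<in> S \<rightarrow> carrier M" and c: "\<gamma> \<in> S \<rightarrow> carrier M"
  shows "flift R M (\<lambda>z. \<beta> z \<oplus>\<^bsub>M\<^esub> \<gamma> z) f = flift R M \<beta> f \<oplus>\<^bsub>M\<^esub> flift R M \<gamma> f"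
proof -
  have s: "{z. f z \<noteq> \<zero>} \<subseteq> S" "finite {z. f z \<noteq> \<zero>}" using fc_supp[OF f] fc_fin[OF f] by auto
  have "flift R M (\<lambda>z. \<beta> z \<oplus>\<^bsub>M\<^esub> \<gamma> z) f = (\<Oplus>\<^bsub>M\<^esub>z\<in>{z. f z \<noteq> \<zero>}. f z \<odot>\<^bsub>M\<^esub> \<beta> z \<oplus>\<^bsub>M\<^esub> f z \<odot>\<^bsub>M\<^esub> \<gamma> z)"
    unfolding flift_def using s b c
    by (intro M.finsum_cong_simple) (auto simp: smult_r_distr fc_closed[OF f] Pi_iff subset_iff)
  also have "\<dots> = flift R M \<beta> f \<oplus>\<^bsub>M\<^esub> flift R M \<gamma> f"
    unfolding flift_def using s b c
    by (intro M.finsum_addf) (auto simp: fc_closed[OF f] Pi_iff subset_iff)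
  finally show ?thesis .
qed

lemma flift_fun_smult:
  assumes f: "f \<in> free_carrier R S" and b: "\<beta> \<in> S \<rightarrow> carrier M" and r: "r \<in> carrier R"
  shows "flift R M (\<lambda>z. r \<odot>\<^bsub>M\<^esub> \<beta> z) f = r \<odot>\<^bsub>M\<^esub> flift R M \<beta> f"
proof -
  have s: "{z. f z \<noteq> \<zero>} \<subseteq> S" "finite {z. f z \<noteq> \<zero>}" using fc_supp[OF f] fc_fin[OF f] by auto
  have "flift R M (\<lambda>z. r \<odot>\<^bsub>M\<^esub> \<beta> z) f = (\<Oplus>\<^bsub>M\<^esub>z\<in>{z. f z \<noteq> \<zero>}. r \<odot>\<^bsub>M\<^esub> (f z \<odot>\<^bsub>M\<^esub> \<beta> z))"
    unfolding flift_def using s b r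
    by (intro M.finsum_cong_simple) (auto simp: smult_assoc1[symmetric] fc_closed[OF f] Pi_iff subset_iff m_comm)
  also have "\<dots> = r \<odot>\<^bsub>M\<^esub> flift R M \<beta> f"
    unfolding flift_def using s b r
    by (intro finsum_smult_ldistr[symmetric]) (auto simp: fc_closed[OF f] Pi_iff subset_iff)
  finally show ?thesis .
qed

end

context tctx begin

lemma rep_free: "U \<in> carrier TMN \<Longrightarrow> tens_rep U \<in> free_carrier R (carrier M \<times> carrier N)"
  using T_elem rep_cls(1) by blast

lemma rep_eq: "U \<in> carrier TMN \<Longrightarrow> cls (tens_rep U) = U"
  using T_elem rep_cls(3) by blast

lemma tlift_cong:
  assumes L: "module R L" and U: "U \<in> carrier TMN"
    and eq: "\<And>m n. m \<in> carrier M \<Longrightarrow> n \<in> carrier N \<Longrightarrow> \<beta> m n = \<gamma> m n"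
    and c: "\<And>m n. m \<in> carrier M \<Longrightarrow> n \<in> carrier N \<Longrightarrow> \<gamma> m n \<in> carrier L"
  shows "tlift R L \<beta> U = tlift R L \<gamma> U"
  unfolding tlift_def
  by (rule module.flift_cong[OF L rep_free[OF U]]) (auto intro: eq c)

lemma tlift_fun_add:
  assumes L: "module R L" and U: "U \<in> carrier TMN"
    and b: "\<And>m n. m \<in> carrier M \<Longrightarrow> n \<in> carrier N \<Longrightarrow> \<beta> m n \<in> carrier L"
    and c: "\<And>m n. m \<in> carrier M \<Longrightarrow> n \<in> carrier N \<Longrightarrow> \<gamma> m n \<in> carrier L"
  shows "tlift R L (\<lambda>m n. \<beta> m n \<oplus>\<^bsub>L\<^esub> \<gamma> m n) U = tlift R L \<beta> U \<oplus>\<^bsub>L\<^esub> tlift R L \<gamma> U"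
  unfolding tlift_def using b c
  by (intro module.flift_fun_add[OF L rep_free[OF U]]) auto

lemma tlift_fun_smult:
  assumes L: "module R L" and U: "U \<in> carrier TMN" and r: "r \<in> carrier R"
    and b: "\<And>m n. m \<in> carrier M \<Longrightarrow> n \<in> carrier N \<Longrightarrow> \<beta> m n \<in> carrier L"
  shows "tlift R L (\<lambda>m n. r \<odot>\<^bsub>L\<^esub> \<beta> m n) U = r \<odot>\<^bsub>L\<^esub> tlift R L \<beta> U"
  unfolding tlift_def using b r
  by (intro module.flift_fun_smult[OF L rep_free[OF U]]) auto

lemma tlift_closed:
  assumes L: "module R L" and b: "bilin R M N L \<beta>" and U: "U \<in> carrier TMN"
  shows "tlift R L \<beta> U \<in> carrier L"
  using lin_mapD(1)[OF tlift_lin[OF L b] U] .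

end


locale actx = tctx R A B for R (structure) and A and B +
  assumes algA: "k_algebra R A" and algB: "k_algebra R B"

sublocale actx \<subseteq> RA: ring A using algA unfolding k_algebra_def by auto
sublocale actx \<subseteq> RB: ring B using algB unfolding k_algebra_def by auto

context actx begin

lemma algA_l: "r \<in> carrier R \<Longrightarrow> x \<in> carrier A \<Longrightarrow> y \<in> carrier A \<Longrightarrow> (r \<odot>\<^bsub>A\<^esub> x) \<otimes>\<^bsub>A\<^esub> y = r \<odot>\<^bsub>A\<^esub> (x \<otimes>\<^bsub>A\<^esub> y)"
  using algA unfolding k_algebra_def by blast
lemma algA_r: "r \<in> carrier R \<Longrightarrow> x \<in> carrier A \<Longrightarrow> y \<in> carrier A \<Longrightarrow> x \<otimes>\<^bsub>A\<^esub> (r \<odot>\<^bsub>A\<^esub> y) = r \<odot>\<^bsub>A\<^esub> (x \<otimes>\<^bsub>A\<^esub> y)"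
  using algA unfolding k_algebra_def by blast
lemma algB_l: "r \<in> carrier R \<Longrightarrow> x \<in> carrier B \<Longrightarrow> y \<in> carrier B \<Longrightarrow> (r \<odot>\<^bsub>B\<^esub> x) \<otimes>\<^bsub>B\<^esub> y = r \<odot>\<^bsub>B\<^esub> (x \<otimes>\<^bsub>B\<^esub> y)"
  using algB unfolding k_algebra_def by blast
lemma algB_r: "r \<in> carrier R \<Longrightarrow> x \<in> carrier B \<Longrightarrow> y \<in> carrier B \<Longrightarrow> x \<otimes>\<^bsub>B\<^esub> (r \<odot>\<^bsub>B\<^esub> y) = r \<odot>\<^bsub>B\<^esub> (x \<otimes>\<^bsub>B\<^esub> y)"
  using algB unfolding k_algebra_def by blast

abbreviation "TA \<equiv> tensor_alg R A B"

lemma T_add_closed: "U \<in> carrier TMN \<Longrightarrow> V \<in> carrier TMN \<Longrightarrow> U \<oplus>\<^bsub>TMN\<^esub> V \<in> carrier TMN"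
proof -
  interpret T: module R TMN by (rule T_module)
  show "U \<in> carrier TMN \<Longrightarrow> V \<in> carrier TMN \<Longrightarrow> U \<oplus>\<^bsub>TMN\<^esub> V \<in> carrier TMN" by simp
qed

definition mu1 where "mu1 a b = (\<lambda>a' b'. tm (a \<otimes>\<^bsub>A\<^esub> a') (b \<otimes>\<^bsub>B\<^esub> b'))"
definition mu2 where "mu2 V = (\<lambda>a b. tlift R TMN (mu1 a b) V)"
definition amul where "amul U V = tlift R TMN (mu2 V) U"

lemma mu1_closed: "a \<in> carrier A \<Longrightarrow> b \<in> carrier B \<Longrightarrow> a' \<in> carrier A \<Longrightarrow> b' \<in> carrier B \<Longrightarrow> mu1 a b a' b' \<in> carrier TMN"
  unfolding mu1_def by (intro tm_closed RA.m_closed RB.m_closed)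

lemma mu1_bilin: "a \<in> carrier A \<Longrightarrow> b \<in> carrier B \<Longrightarrow> bilin R A B TMN (mu1 a b)"
  by (rule bilinI)
     (auto simp: mu1_closed, auto simp: mu1_def RA.r_distr RB.r_distr tm_add_l tm_add_r algA_r algB_r tm_smult_l tm_smult_r)

lemma mu2_closed: "V \<in> carrier TMN \<Longrightarrow> a \<in> carrier A \<Longrightarrow> b \<in> carrier B \<Longrightarrow> mu2 V a b \<in> carrier TMN"
  unfolding mu2_def by (intro tlift_closed T_module mu1_bilin)

lemma mu2_bilin:
  assumes V: "V \<in> carrier TMN"
  shows "bilin R A B TMN (mu2 V)"
proof (rule bilinI)
  show "\<And>m n. m \<in> carrier A \<Longrightarrow> n \<in> carrier B \<Longrightarrow> mu2 V m n \<in> carrier TMN" using mu2_closed[OF V] .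
next
  fix a a' b assume ab: "a \<in> carrier A" "a' \<in> carrier A" "b \<in> carrier B"
  have "mu2 V (a \<oplus>\<^bsub>A\<^esub> a') b = tlift R TMN (\<lambda>x y. mu1 a b x y \<oplus>\<^bsub>TMN\<^esub> mu1 a' b x y) V"
    unfolding mu2_def using ab
    by (intro tlift_cong[OF T_module V])
       (auto simp: mu1_def RA.l_distr tm_add_l intro!: T_add_closed tm_closed)
  also have "\<dots> = mu2 V a b \<oplus>\<^bsub>TMN\<^esub> mu2 V a' b"
    unfolding mu2_def using ab by (intro tlift_fun_add[OF T_module V]) (auto intro: mu1_closed)
  finally show "mu2 V (a \<oplus>\<^bsub>A\<^esub> a') b = mu2 V a b \<oplus>\<^bsub>TMN\<^esub> mu2 V a' b" .
next
  fix a b b' assume ab: "a \<in> carrier A" "b \<in> carrier B" "b' \<in> carrier B"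
  have "mu2 V a (b \<oplus>\<^bsub>B\<^esub> b') = tlift R TMN (\<lambda>x y. mu1 a b x y \<oplus>\<^bsub>TMN\<^esub> mu1 a b' x y) V"
    unfolding mu2_def using ab
    by (intro tlift_cong[OF T_module V])
       (auto simp: mu1_def RB.l_distr tm_add_r intro!: T_add_closed tm_closed)
  also have "\<dots> = mu2 V a b \<oplus>\<^bsub>TMN\<^esub> mu2 V a b'"
    unfolding mu2_def using ab by (intro tlift_fun_add[OF T_module V]) (auto intro: mu1_closed)
  finally show "mu2 V a (b \<oplus>\<^bsub>B\<^esub> b') = mu2 V a b \<oplus>\<^bsub>TMN\<^esub> mu2 V a b'" .
next
  fix r a b assume ab: "r \<in> carrier R" "a \<in> carrier A" "b \<in> carrier B"
  have "mu2 V (r \<odot>\<^bsub>A\<^esub> a) b = tlift R TMN (\<lambda>x y. r \<odot>\<^bsub>TMN\<^esub> mu1 a b x y) V"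
    unfolding mu2_def using ab
    by (intro tlift_cong[OF T_module V])
       (auto simp: mu1_def algA_l tm_smult_l intro!: module.smult_closed[OF T_module] tm_closed)
  also have "\<dots> = r \<odot>\<^bsub>TMN\<^esub> mu2 V a b"
    unfolding mu2_def using ab by (intro tlift_fun_smult[OF T_module V]) (auto intro: mu1_closed)
  finally show "mu2 V (r \<odot>\<^bsub>A\<^esub> a) b = r \<odot>\<^bsub>TMN\<^esub> mu2 V a b" .
next
  fix r a b assume ab: "r \<in> carrier R" "a \<in> carrier A" "b \<in> carrier B"
  have "mu2 V a (r \<odot>\<^bsub>B\<^esub> b) = tlift R TMN (\<lambda>x y. r \<odot>\<^bsub>TMN\<^esub> mu1 a b x y) V"
    unfolding mu2_def using ab
    by (intro tlift_cong[OF T_module V])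
       (auto simp: mu1_def algB_l tm_smult_r intro!: module.smult_closed[OF T_module] tm_closed)
  also have "\<dots> = r \<odot>\<^bsub>TMN\<^esub> mu2 V a b"
    unfolding mu2_def using ab by (intro tlift_fun_smult[OF T_module V]) (auto intro: mu1_closed)
  finally show "mu2 V a (r \<odot>\<^bsub>B\<^esub> b) = r \<odot>\<^bsub>TMN\<^esub> mu2 V a b" .
qed

lemma amul_lin_l: "V \<in> carrier TMN \<Longrightarrow> lin_map R TMN TMN (\<lambda>U. amul U V)"
  unfolding amul_def by (intro tlift_lin T_module mu2_bilin)

lemma amul_closed: "U \<in> carrier TMN \<Longrightarrow> V \<in> carrier TMN \<Longrightarrow> amul U V \<in> carrier TMN"
  using lin_mapD(1)[OF amul_lin_l] by blast

lemma amul_tm_l: "a \<in> carrier A \<Longrightarrow> b \<in> carrier B \<Longrightarrow> V \<in> carrier TMN \<Longrightarrow> amul (tm a b) V = tlift R TMN (mu1 a b) V"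
  unfolding amul_def using tlift_tm[OF T_module mu2_bilin] by (simp add: mu2_def)

lemma amul_tm: "a \<in> carrier A \<Longrightarrow> b \<in> carrier B \<Longrightarrow> a' \<in> carrier A \<Longrightarrow> b' \<in> carrier B \<Longrightarrow>
   amul (tm a b) (tm a' b') = tm (a \<otimes>\<^bsub>A\<^esub> a') (b \<otimes>\<^bsub>B\<^esub> b')"
  using amul_tm_l tm_closed tlift_tm[OF T_module mu1_bilin] by (simp add: mu1_def)

lemma amul_lin_r:
  assumes U: "U \<in> carrier TMN"
  shows "lin_map R TMN TMN (\<lambda>V. amul U V)"
proof (rule lin_mapI)
  show "\<And>x. x \<in> carrier TMN \<Longrightarrow> amul U x \<in> carrier TMN" using amul_closed U by blast
next
  fix V V' assume V: "V \<in> carrier TMN" "V' \<in> carrier TMN"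
  have "amul U (V \<oplus>\<^bsub>TMN\<^esub> V') = tlift R TMN (\<lambda>a b. mu2 V a b \<oplus>\<^bsub>TMN\<^esub> mu2 V' a b) U"
    unfolding amul_def using V
    by (intro tlift_cong[OF T_module U])
       (auto simp: mu2_def lin_mapD(2)[OF tlift_lin[OF T_module mu1_bilin]]
             intro!: T_add_closed tlift_closed[OF T_module mu1_bilin])
  also have "\<dots> = amul U V \<oplus>\<^bsub>TMN\<^esub> amul U V'"
    unfolding amul_def using V by (intro tlift_fun_add[OF T_module U]) (auto intro: mu2_closed)
  finally show "amul U (V \<oplus>\<^bsub>TMN\<^esub> V') = amul U V \<oplus>\<^bsub>TMN\<^esub> amul U V'" .
next
  fix r V assume r: "r \<in> carrier R" and V: "V \<in> carrier TMN"
  have "amul U (r \<odot>\<^bsub>TMN\<^esub> V) = tlift R TMN (\<lambda>a b. r \<odot>\<^bsub>TMN\<^esub> mu2 V a b) U"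
    unfolding amul_def using V r
    by (intro tlift_cong[OF T_module U])
       (auto simp: mu2_def lin_mapD(3)[OF tlift_lin[OF T_module mu1_bilin]]
             intro!: module.smult_closed[OF T_module] tlift_closed[OF T_module mu1_bilin])
  also have "\<dots> = r \<odot>\<^bsub>TMN\<^esub> amul U V"
    unfolding amul_def using V r by (intro tlift_fun_smult[OF T_module U]) (auto intro: mu2_closed)
  finally show "amul U (r \<odot>\<^bsub>TMN\<^esub> V) = r \<odot>\<^bsub>TMN\<^esub> amul U V" .
qed

end


lemma lin_map_id: "lin_map R M M (\<lambda>x. x)"
  by (simp add: lin_map_def)

context actx begin

definition pr where "pr u v = (fst u \<otimes>\<^bsub>A\<^esub> fst v, snd u \<otimes>\<^bsub>B\<^esub> snd v)"

lemma pr_closed: "u \<in> carrier A \<times> carrier B \<Longrightarrow> v \<in> carrier A \<times> carrier B \<Longrightarrow> pr u v \<in> carrier A \<times> carrier B"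
  by (auto simp: pr_def)

lemma fs_mult_expand:
  assumes f: "f \<in> free_carrier R (carrier A \<times> carrier B)" and g: "g \<in> free_carrier R (carrier A \<times> carrier B)"
  shows "fs_mult R A B f g = finsum FMN (\<lambda>u. finsum FMN (\<lambda>v. (f u \<otimes> g v) \<odot>\<^bsub>FMN\<^esub> fs_delta R (pr u v)) {v. g v \<noteq> \<zero>}) {u. f u \<noteq> \<zero>}"
proof
  fix z
  interpret FM: module R FMN by (rule FM_mod)
  let ?Sf = "{u. f u \<noteq> \<zero>}" and ?Sg = "{v. g v \<noteq> \<zero>}"
  have Sf: "finite ?Sf" "?Sf \<subseteq> carrier A \<times> carrier B" using fc_fin[OF f] fc_supp[OF f] by auto
  have Sg: "finite ?Sg" "?Sg \<subseteq> carrier A \<times> carrier B" using fc_fin[OF g] fc_supp[OF g] by auto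
  let ?G = "\<lambda>u. finsum FMN (\<lambda>v. (f u \<otimes> g v) \<odot>\<^bsub>FMN\<^esub> fs_delta R (pr u v)) ?Sg"
  have term_c: "(f u \<otimes> g v) \<odot>\<^bsub>FMN\<^esub> fs_delta R (pr u v) \<in> free_carrier R (carrier A \<times> carrier B)"
    if "u \<in> ?Sf" "v \<in> ?Sg" for u v
    using that Sf Sg by (auto intro!: fc_smult fc_delta pr_closed fc_closed[OF f] fc_closed[OF g])
  have G_c: "?G u \<in> free_carrier R (carrier A \<times> carrier B)" if "u \<in> ?Sf" for u
    using FM.finsum_closed[of "\<lambda>v. (f u \<otimes> g v) \<odot>\<^bsub>FMN\<^esub> fs_delta R (pr u v)" ?Sg] term_c[OF that] by auto
  let ?F = "\<lambda>u v. (f u \<otimes> g v) \<otimes> fs_delta R (pr u v) z"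
  have F_c: "?F u v \<in> carrier R" for u v
    using fc_closed[OF f, of u] fc_closed[OF g, of v] delta_carrier[of "pr u v" z] by (intro m_closed)
  have "finsum FMN ?G ?Sf z = (\<Oplus>u\<in>?Sf. ?G u z)"
    using G_c Sf by (intro free_finsum_apply) auto
  also have "\<dots> = (\<Oplus>u\<in>?Sf. \<Oplus>v\<in>?Sg. ?F u v)"
  proof (rule finsum_cong_simple)
    fix u assume u: "u \<in> ?Sf"
    have "?G u z = (\<Oplus>v\<in>?Sg. ((f u \<otimes> g v) \<odot>\<^bsub>FMN\<^esub> fs_delta R (pr u v)) z)"
      using term_c[OF u] Sg by (intro free_finsum_apply) auto
    then show "?G u z = (\<Oplus>v\<in>?Sg. ?F u v)" by simp
  next
    show "(\<lambda>u. \<Oplus>v\<in>?Sg. ?F u v) \<in> ?Sf \<rightarrow> carrier R" using F_c by (auto intro: finsum_closed)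
  qed
  also have "\<dots> = (\<Oplus>p\<in>?Sf \<times> ?Sg. ?F (fst p) (snd p))"
    using Sf Sg F_c by (intro finsum_product) auto
  also have "\<dots> = finsum R (\<lambda>(u, v). f u \<otimes> g v)
      {(u, v). f u \<noteq> \<zero> \<and> g v \<noteq> \<zero> \<and> z = (fst u \<otimes>\<^bsub>A\<^esub> fst v, snd u \<otimes>\<^bsub>B\<^esub> snd v)}"
  proof (rule add.finprod_mono_neutral_cong_right)
    show "finite (?Sf \<times> ?Sg)" using Sf Sg by auto
    show "{(u, v). f u \<noteq> \<zero> \<and> g v \<noteq> \<zero> \<and> z = (fst u \<otimes>\<^bsub>A\<^esub> fst v, snd u \<otimes>\<^bsub>B\<^esub> snd v)} \<subseteq> ?Sf \<times> ?Sg"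
      by auto
    show "?F (fst i) (snd i) = \<zero>" if "i \<in> ?Sf \<times> ?Sg - {(u, v). f u \<noteq> \<zero> \<and> g v \<noteq> \<zero> \<and> z = (fst u \<otimes>\<^bsub>A\<^esub> fst v, snd u \<otimes>\<^bsub>B\<^esub> snd v)}" for i
      using that fc_closed[OF f] fc_closed[OF g] by (auto simp: fs_delta_def pr_def)
    show "?F (fst x) (snd x) = (case x of (u, v) \<Rightarrow> f u \<otimes> g v)"
      if "x \<in> {(u, v). f u \<noteq> \<zero> \<and> g v \<noteq> \<zero> \<and> z = (fst u \<otimes>\<^bsub>A\<^esub> fst v, snd u \<otimes>\<^bsub>B\<^esub> snd v)}" for x
      using that fc_closed[OF f] fc_closed[OF g] by (auto simp: fs_delta_def pr_def)
    show "(\<lambda>p. ?F (fst p) (snd p)) \<in> ?Sf \<times> ?Sg \<rightarrow> carrier R" using F_c by auto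
  qed
  also have "\<dots> = fs_mult R A B f g z" by (simp add: fs_mult_def)
  finally show "fs_mult R A B f g z = finsum FMN ?G ?Sf z" by simp
qed

end


context actx begin

lemma TA_simps:
  "carrier TA = carrier TMN"
  "\<zero>\<^bsub>TA\<^esub> = \<zero>\<^bsub>TMN\<^esub>"
  "U \<oplus>\<^bsub>TA\<^esub> V = U \<oplus>\<^bsub>TMN\<^esub> V"
  "r \<odot>\<^bsub>TA\<^esub> U = r \<odot>\<^bsub>TMN\<^esub> U"
  "U \<otimes>\<^bsub>TA\<^esub> V = cls (fs_mult R A B (tens_rep U) (tens_rep V))"
  "\<one>\<^bsub>TA\<^esub> = tm \<one>\<^bsub>A\<^esub> \<one>\<^bsub>B\<^esub>"
  by (simp_all add: tensor_alg_def tensor_mod_def)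

lemma mult_eq:
  assumes U: "U \<in> carrier TMN" and V: "V \<in> carrier TMN"
  shows "U \<otimes>\<^bsub>TA\<^esub> V = amul U V"
proof -
  interpret FM: module R FMN by (rule FM_mod)
  interpret T: module R TMN by (rule T_module)
  let ?f = "tens_rep U" and ?g = "tens_rep V"
  have f: "?f \<in> free_carrier R (carrier A \<times> carrier B)" using rep_free[OF U] .
  have g: "?g \<in> free_carrier R (carrier A \<times> carrier B)" using rep_free[OF V] .
  let ?Sf = "{u. ?f u \<noteq> \<zero>}" and ?Sg = "{v. ?g v \<noteq> \<zero>}"
  have Sf: "finite ?Sf" "?Sf \<subseteq> carrier A \<times> carrier B" using fc_fin[OF f] fc_supp[OF f] by auto
  have Sg: "finite ?Sg" "?Sg \<subseteq> carrier A \<times> carrier B" using fc_fin[OF g] fc_supp[OF g] by auto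
  have term_c: "(?f u \<otimes> ?g v) \<odot>\<^bsub>FMN\<^esub> fs_delta R (pr u v) \<in> carrier FMN"
    if "u \<in> ?Sf" "v \<in> ?Sg" for u v
    using that Sf Sg by (auto intro!: fc_smult fc_delta pr_closed fc_closed[OF f] fc_closed[OF g])
  let ?G = "\<lambda>u. finsum FMN (\<lambda>v. (?f u \<otimes> ?g v) \<odot>\<^bsub>FMN\<^esub> fs_delta R (pr u v)) ?Sg"
  have G_c: "?G u \<in> carrier FMN" if "u \<in> ?Sf" for u
    using term_c[OF that] by (intro FM.finsum_closed) auto
  have tmc: "tm (fst u \<otimes>\<^bsub>A\<^esub> fst v) (snd u \<otimes>\<^bsub>B\<^esub> snd v) \<in> carrier TMN"
    if "u \<in> ?Sf" "v \<in> ?Sg" for u v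
  proof -
    have "u \<in> carrier A \<times> carrier B" "v \<in> carrier A \<times> carrier B" using that Sf Sg by auto
    then show ?thesis by (auto intro!: tm_closed RA.m_closed RB.m_closed)
  qed
  have "U \<otimes>\<^bsub>TA\<^esub> V = cls (finsum FMN ?G ?Sf)"
    by (simp add: TA_simps fs_mult_expand[OF f g])
  also have "\<dots> = (\<Oplus>\<^bsub>TMN\<^esub>u\<in>?Sf. cls (?G u))"
    using G_c Sf by (intro lin_map_finsum[OF FM_mod T_module cls_lin]) auto
  also have "\<dots> = (\<Oplus>\<^bsub>TMN\<^esub>u\<in>?Sf. ?f u \<odot>\<^bsub>TMN\<^esub> (\<Oplus>\<^bsub>TMN\<^esub>v\<in>?Sg. ?g v \<odot>\<^bsub>TMN\<^esub> tm (fst u \<otimes>\<^bsub>A\<^esub> fst v) (snd u \<otimes>\<^bsub>B\<^esub> snd v)))"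
  proof (rule T.finsum_cong_simple)
    fix u assume u: "u \<in> ?Sf"
    have "cls (?G u) = (\<Oplus>\<^bsub>TMN\<^esub>v\<in>?Sg. cls ((?f u \<otimes> ?g v) \<odot>\<^bsub>FMN\<^esub> fs_delta R (pr u v)))"
      using term_c[OF u] Sg by (intro lin_map_finsum[OF FM_mod T_module cls_lin]) auto
    also have "\<dots> = (\<Oplus>\<^bsub>TMN\<^esub>v\<in>?Sg. ?f u \<odot>\<^bsub>TMN\<^esub> (?g v \<odot>\<^bsub>TMN\<^esub> tm (fst u \<otimes>\<^bsub>A\<^esub> fst v) (snd u \<otimes>\<^bsub>B\<^esub> snd v)))"
    proof (rule T.finsum_cong_simple)
      fix v assume v: "v \<in> ?Sg"
      have "cls ((?f u \<otimes> ?g v) \<odot>\<^bsub>FMN\<^esub> fs_delta R (pr u v)) = (?f u \<otimes> ?g v) \<odot>\<^bsub>TMN\<^esub> cls (fs_delta R (pr u v))"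
        using u v Sf Sg by (intro lin_mapD(3)[OF cls_lin]) (auto intro!: fc_delta pr_closed fc_closed[OF f] fc_closed[OF g])
      also have "\<dots> = ?f u \<odot>\<^bsub>TMN\<^esub> (?g v \<odot>\<^bsub>TMN\<^esub> tm (fst u \<otimes>\<^bsub>A\<^esub> fst v) (snd u \<otimes>\<^bsub>B\<^esub> snd v))"
        using tmc[OF u v] by (simp add: pr_def T.smult_assoc1 fc_closed[OF f] fc_closed[OF g])
      finally show "cls ((?f u \<otimes> ?g v) \<odot>\<^bsub>FMN\<^esub> fs_delta R (pr u v)) = ?f u \<odot>\<^bsub>TMN\<^esub> (?g v \<odot>\<^bsub>TMN\<^esub> tm (fst u \<otimes>\<^bsub>A\<^esub> fst v) (snd u \<otimes>\<^bsub>B\<^esub> snd v))" .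
    next
      show "(\<lambda>v. ?f u \<odot>\<^bsub>TMN\<^esub> (?g v \<odot>\<^bsub>TMN\<^esub> tm (fst u \<otimes>\<^bsub>A\<^esub> fst v) (snd u \<otimes>\<^bsub>B\<^esub> snd v))) \<in> ?Sg \<rightarrow> carrier TMN"
        using tmc[OF u] by (auto simp: fc_closed[OF f] fc_closed[OF g])
    qed
    also have "\<dots> = ?f u \<odot>\<^bsub>TMN\<^esub> (\<Oplus>\<^bsub>TMN\<^esub>v\<in>?Sg. ?g v \<odot>\<^bsub>TMN\<^esub> tm (fst u \<otimes>\<^bsub>A\<^esub> fst v) (snd u \<otimes>\<^bsub>B\<^esub> snd v))"
      using tmc[OF u] Sg by (intro T.finsum_smult_ldistr[symmetric]) (auto simp: fc_closed[OF f] fc_closed[OF g])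
    finally show "cls (?G u) = ?f u \<odot>\<^bsub>TMN\<^esub> (\<Oplus>\<^bsub>TMN\<^esub>v\<in>?Sg. ?g v \<odot>\<^bsub>TMN\<^esub> tm (fst u \<otimes>\<^bsub>A\<^esub> fst v) (snd u \<otimes>\<^bsub>B\<^esub> snd v))" .
  next
    show "(\<lambda>u. ?f u \<odot>\<^bsub>TMN\<^esub> (\<Oplus>\<^bsub>TMN\<^esub>v\<in>?Sg. ?g v \<odot>\<^bsub>TMN\<^esub> tm (fst u \<otimes>\<^bsub>A\<^esub> fst v) (snd u \<otimes>\<^bsub>B\<^esub> snd v))) \<in> ?Sf \<rightarrow> carrier TMN"
      using tmc by (auto simp: fc_closed[OF f] fc_closed[OF g] intro!: T.finsum_closed)
  qed
  also have "\<dots> = amul U V"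
    unfolding amul_def tlift_def flift_def mu2_def mu1_def by simp
  finally show ?thesis .
qed

lemma TA_module: "module R TA"
  by (rule module_image[OF T_module, where q = "\<lambda>x. x"]) (simp_all add: TA_simps)

lemma amul_assoc:
  assumes U: "U \<in> carrier TMN" and V: "V \<in> carrier TMN" and W: "W \<in> carrier TMN"
  shows "amul (amul U V) W = amul U (amul V W)"
proof -
  have step3: "amul (tm (a \<otimes>\<^bsub>A\<^esub> a') (b \<otimes>\<^bsub>B\<^esub> b')) W = amul (tm a b) (amul (tm a' b') W)"
    if ab: "a \<in> carrier A" "b \<in> carrier B" "a' \<in> carrier A" "b' \<in> carrier B" and W: "W \<in> carrier TMN" for a b a' b' W
    using W
  proof (rule tens_lin_eq[OF T_module, rotated 3])
    show "lin_map R TMN TMN (amul (tm (a \<otimes>\<^bsub>A\<^esub> a') (b \<otimes>\<^bsub>B\<^esub> b')))"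
      using ab by (intro amul_lin_r tm_closed) auto
    show "lin_map R TMN TMN (\<lambda>W. amul (tm a b) (amul (tm a' b') W))"
      using ab by (intro lin_map_comp[OF amul_lin_r amul_lin_r] tm_closed)
    fix m n assume mn: "m \<in> carrier A" "n \<in> carrier B"
    show "amul (tm (a \<otimes>\<^bsub>A\<^esub> a') (b \<otimes>\<^bsub>B\<^esub> b')) (tm m n) = amul (tm a b) (amul (tm a' b') (tm m n))"
      using ab mn by (simp add: amul_tm RA.m_assoc RB.m_assoc)
  qed
  have step2: "amul (amul (tm a b) V) W = amul (tm a b) (amul V W)"
    if ab: "a \<in> carrier A" "b \<in> carrier B" and V: "V \<in> carrier TMN" and W: "W \<in> carrier TMN" for a b V W
    using V
  proof (rule tens_lin_eq[OF T_module, rotated 3])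
    show "lin_map R TMN TMN (\<lambda>V. amul (amul (tm a b) V) W)"
      using ab W by (intro lin_map_comp[OF amul_lin_r amul_lin_l] tm_closed)
    show "lin_map R TMN TMN (\<lambda>V. amul (tm a b) (amul V W))"
      using ab W by (intro lin_map_comp[OF amul_lin_l amul_lin_r] tm_closed)
    fix m n assume mn: "m \<in> carrier A" "n \<in> carrier B"
    show "amul (amul (tm a b) (tm m n)) W = amul (tm a b) (amul (tm m n) W)"
      using ab mn W by (simp add: amul_tm step3)
  qed
  show ?thesis
    using U
  proof (rule tens_lin_eq[OF T_module, rotated 3])
    show "lin_map R TMN TMN (\<lambda>U. amul (amul U V) W)"
      using V W by (intro lin_map_comp[OF amul_lin_l amul_lin_l])
    show "lin_map R TMN TMN (\<lambda>U. amul U (amul V W))"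
      using V W by (intro amul_lin_l amul_closed)
    fix m n assume mn: "m \<in> carrier A" "n \<in> carrier B"
    show "amul (amul (tm m n) V) W = amul (tm m n) (amul V W)"
      using mn V W by (rule step2)
  qed
qed

lemma amul_one_l:
  assumes U: "U \<in> carrier TMN"
  shows "amul (tm \<one>\<^bsub>A\<^esub> \<one>\<^bsub>B\<^esub>) U = U"
  using U
proof (rule tens_lin_eq[OF T_module, rotated 3])
  show "lin_map R TMN TMN (amul (tm \<one>\<^bsub>A\<^esub> \<one>\<^bsub>B\<^esub>))" by (intro amul_lin_r tm_closed) auto
  show "lin_map R TMN TMN (\<lambda>x. x)" by (rule lin_map_id)
  fix m n assume mn: "m \<in> carrier A" "n \<in> carrier B"
  show "amul (tm \<one>\<^bsub>A\<^esub> \<one>\<^bsub>B\<^esub>) (tm m n) = tm m n" using mn by (simp add: amul_tm)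
qed

lemma amul_one_r:
  assumes U: "U \<in> carrier TMN"
  shows "amul U (tm \<one>\<^bsub>A\<^esub> \<one>\<^bsub>B\<^esub>) = U"
  using U
proof (rule tens_lin_eq[OF T_module, rotated 3])
  show "lin_map R TMN TMN (\<lambda>U. amul U (tm \<one>\<^bsub>A\<^esub> \<one>\<^bsub>B\<^esub>))" by (intro amul_lin_l tm_closed) auto
  show "lin_map R TMN TMN (\<lambda>x. x)" by (rule lin_map_id)
  fix m n assume mn: "m \<in> carrier A" "n \<in> carrier B"
  show "amul (tm m n) (tm \<one>\<^bsub>A\<^esub> \<one>\<^bsub>B\<^esub>) = tm m n" using mn by (simp add: amul_tm)
qed

lemma TA_ring: "ring TA"
proof (rule ringI)
  show "abelian_group TA" using module.axioms(2)[OF TA_module] .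
  show "monoid TA"
  proof (rule monoidI)
    show "\<And>x y. x \<in> carrier TA \<Longrightarrow> y \<in> carrier TA \<Longrightarrow> x \<otimes>\<^bsub>TA\<^esub> y \<in> carrier TA"
      by (simp only: TA_simps(1)) (simp add: mult_eq amul_closed)
    show "\<one>\<^bsub>TA\<^esub> \<in> carrier TA" by (simp add: TA_simps tm_closed)
    show "\<And>x y z. x \<in> carrier TA \<Longrightarrow> y \<in> carrier TA \<Longrightarrow> z \<in> carrier TA \<Longrightarrow>
        x \<otimes>\<^bsub>TA\<^esub> y \<otimes>\<^bsub>TA\<^esub> z = x \<otimes>\<^bsub>TA\<^esub> (y \<otimes>\<^bsub>TA\<^esub> z)"
      by (simp only: TA_simps(1)) (simp add: mult_eq amul_closed amul_assoc)
    show "\<And>x. x \<in> carrier TA \<Longrightarrow> \<one>\<^bsub>TA\<^esub> \<otimes>\<^bsub>TA\<^esub> x = x"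
      by (simp only: TA_simps(1,6)) (simp add: mult_eq amul_one_l tm_closed)
    show "\<And>x. x \<in> carrier TA \<Longrightarrow> x \<otimes>\<^bsub>TA\<^esub> \<one>\<^bsub>TA\<^esub> = x"
      by (simp only: TA_simps(1,6)) (simp add: mult_eq amul_one_r tm_closed)
  qed
  show "\<And>x y z. x \<in> carrier TA \<Longrightarrow> y \<in> carrier TA \<Longrightarrow> z \<in> carrier TA \<Longrightarrow>
      (x \<oplus>\<^bsub>TA\<^esub> y) \<otimes>\<^bsub>TA\<^esub> z = x \<otimes>\<^bsub>TA\<^esub> z \<oplus>\<^bsub>TA\<^esub> y \<otimes>\<^bsub>TA\<^esub> z"
    by (simp only: TA_simps(1,3)) (simp add: mult_eq T_add_closed lin_mapD(2)[OF amul_lin_l])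
  show "\<And>x y z. x \<in> carrier TA \<Longrightarrow> y \<in> carrier TA \<Longrightarrow> z \<in> carrier TA \<Longrightarrow>
      z \<otimes>\<^bsub>TA\<^esub> (x \<oplus>\<^bsub>TA\<^esub> y) = z \<otimes>\<^bsub>TA\<^esub> x \<oplus>\<^bsub>TA\<^esub> z \<otimes>\<^bsub>TA\<^esub> y"
    by (simp only: TA_simps(1,3)) (simp add: mult_eq T_add_closed lin_mapD(2)[OF amul_lin_r])
qed

lemma TA_k_algebra: "k_algebra R TA"
  unfolding k_algebra_def
proof (intro conjI ballI TA_ring TA_module)
  fix r x y assume r: "r \<in> carrier R" and x: "x \<in> carrier TA" and y: "y \<in> carrier TA"
  have sc: "r \<odot>\<^bsub>TMN\<^esub> z \<in> carrier TMN" if "z \<in> carrier TMN" for z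
    using module.smult_closed[OF T_module r that] .
  show "r \<odot>\<^bsub>TA\<^esub> x \<otimes>\<^bsub>TA\<^esub> y = r \<odot>\<^bsub>TA\<^esub> (x \<otimes>\<^bsub>TA\<^esub> y)"
    using x y r by (simp only: TA_simps(1,4)) (simp add: mult_eq sc lin_mapD(3)[OF amul_lin_l] amul_closed)
  show "x \<otimes>\<^bsub>TA\<^esub> (r \<odot>\<^bsub>TA\<^esub> y) = r \<odot>\<^bsub>TA\<^esub> (x \<otimes>\<^bsub>TA\<^esub> y)"
    using x y r by (simp only: TA_simps(1,4)) (simp add: mult_eq sc lin_mapD(3)[OF amul_lin_r] amul_closed)
qed

end


definition fspan :: "('k,'c) ring_scheme \<Rightarrow> ('k,'m,'x) module_scheme \<Rightarrow> 'm set \<Rightarrow> 'm set" where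
  "fspan R M S = {m. \<exists>c. (\<forall>s\<in>S. c s \<in> carrier R) \<and> m = finsum M (\<lambda>s. c s \<odot>\<^bsub>M\<^esub> s) S}"

context module begin

lemma span_zero:
  assumes S: "finite S" "S \<subseteq> carrier M"
  shows "\<zero>\<^bsub>M\<^esub> \<in> fspan R M S"
proof -
  have "finsum M (\<lambda>s. \<zero> \<odot>\<^bsub>M\<^esub> s) S = finsum M (\<lambda>s. \<zero>\<^bsub>M\<^esub>) S"
    using S by (intro M.finsum_cong_simple) auto
  then show ?thesis unfolding fspan_def by (intro CollectI exI[of _ "\<lambda>s. \<zero>"]) simp
qed

lemma span_add:
  assumes S: "finite S" "S \<subseteq> carrier M" and x: "x \<in> fspan R M S" and y: "y \<in> fspan R M S"
  shows "x \<oplus>\<^bsub>M\<^esub> y \<in> fspan R M S"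
proof -
  obtain c where c: "\<forall>s\<in>S. c s \<in> carrier R" "x = finsum M (\<lambda>s. c s \<odot>\<^bsub>M\<^esub> s) S" using x by (auto simp: fspan_def)
  obtain d where d: "\<forall>s\<in>S. d s \<in> carrier R" "y = finsum M (\<lambda>s. d s \<odot>\<^bsub>M\<^esub> s) S" using y by (auto simp: fspan_def)
  have "x \<oplus>\<^bsub>M\<^esub> y = finsum M (\<lambda>s. c s \<odot>\<^bsub>M\<^esub> s \<oplus>\<^bsub>M\<^esub> d s \<odot>\<^bsub>M\<^esub> s) S"
    unfolding c d using S c d by (intro M.finsum_addf[symmetric]) (auto simp: Pi_iff subset_iff)
  also have "\<dots> = finsum M (\<lambda>s. (c s \<oplus> d s) \<odot>\<^bsub>M\<^esub> s) S"
    using S c d by (intro M.finsum_cong_simple) (auto simp: smult_l_distr subset_iff)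
  finally show ?thesis unfolding fspan_def using c d by (intro CollectI exI[of _ "\<lambda>s. c s \<oplus> d s"]) auto
qed

lemma span_smult:
  assumes S: "finite S" "S \<subseteq> carrier M" and r: "r \<in> carrier R" and x: "x \<in> fspan R M S"
  shows "r \<odot>\<^bsub>M\<^esub> x \<in> fspan R M S"
proof -
  obtain c where c: "\<forall>s\<in>S. c s \<in> carrier R" "x = finsum M (\<lambda>s. c s \<odot>\<^bsub>M\<^esub> s) S" using x by (auto simp: fspan_def)
  have "r \<odot>\<^bsub>M\<^esub> x = finsum M (\<lambda>s. r \<odot>\<^bsub>M\<^esub> (c s \<odot>\<^bsub>M\<^esub> s)) S"
    unfolding c using S c r by (intro finsum_smult_ldistr) (auto simp: Pi_iff subset_iff)
  also have "\<dots> = finsum M (\<lambda>s. (r \<otimes> c s) \<odot>\<^bsub>M\<^esub> s) S"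
    using S c r by (intro M.finsum_cong_simple) (auto simp: smult_assoc1 subset_iff)
  finally show ?thesis unfolding fspan_def using c r by (intro CollectI exI[of _ "\<lambda>s. r \<otimes> c s"]) auto
qed

lemma span_gen:
  assumes S: "finite S" "S \<subseteq> carrier M" and t: "t \<in> S"
  shows "t \<in> fspan R M S"
proof -
  have "finsum M (\<lambda>s. (if s = t then \<one> else \<zero>) \<odot>\<^bsub>M\<^esub> s) S = finsum M (\<lambda>s. if t = s then s else \<zero>\<^bsub>M\<^esub>) S"
    using S by (intro M.finsum_cong_simple) (auto simp: subset_iff)
  also have "\<dots> = t" using M.finsum_singleton[OF t S(1), of "\<lambda>s. s"] S by auto
  finally show ?thesis unfolding fspan_def by (intro CollectI exI[of _ "\<lambda>s. if s = t then \<one> else \<zero>"]) auto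
qed

lemma span_finsum:
  assumes S: "finite S" "S \<subseteq> carrier M" and I: "finite I" and F: "\<And>i. i \<in> I \<Longrightarrow> F i \<in> fspan R M S"
    and Fc: "\<And>i. i \<in> I \<Longrightarrow> F i \<in> carrier M"
  shows "finsum M F I \<in> fspan R M S"
  using I F Fc
proof (induction I rule: finite_induct)
  case empty
  then show ?case using span_zero[OF S] by simp
next
  case (insert i I)
  then show ?case using span_add[OF S] by (simp add: M.finsum_insert Pi_iff)
qed

lemma fin_gen_span:
  assumes S: "finite S" "S \<subseteq> carrier M" and all: "carrier M \<subseteq> fspan R M S"
  shows "fin_gen R M"
  unfolding fin_gen_def using S all by (auto simp: fspan_def subset_iff)

lemma fin_gen_obtain:
  assumes "fin_gen R M"
  obtains S where "finite S" "S \<subseteq> carrier M" "carrier M \<subseteq> fspan R M S"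
  using assms unfolding fin_gen_def fspan_def by blast

end

context tctx begin

lemma tm_lin_l: "n \<in> carrier N \<Longrightarrow> lin_map R M TMN (\<lambda>m. tm m n)"
  by (rule lin_mapI) (auto simp: tm_closed tm_add_l tm_smult_l)

lemma tm_lin_r: "m \<in> carrier M \<Longrightarrow> lin_map R N TMN (\<lambda>n. tm m n)"
  by (rule lin_mapI) (auto simp: tm_closed tm_add_r tm_smult_r)

lemma T_fin_gen:
  assumes fM: "fin_gen R M" and fN: "fin_gen R N"
  shows "fin_gen R TMN"
proof -
  interpret T: module R TMN by (rule T_module)
  obtain SM where SM: "finite SM" "SM \<subseteq> carrier M" "carrier M \<subseteq> fspan R M SM" using M.fin_gen_obtain[OF fM] by blast
  obtain SN where SN: "finite SN" "SN \<subseteq> carrier N" "carrier N \<subseteq> fspan R N SN" using N.fin_gen_obtain[OF fN] by blast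
  let ?S = "(\<lambda>p. tm (fst p) (snd p)) ` (SM \<times> SN)"
  have S: "finite ?S" "?S \<subseteq> carrier TMN" using SM SN by (auto intro!: tm_closed)
  have tmS: "tm m n \<in> fspan R TMN ?S" if m: "m \<in> carrier M" and n: "n \<in> carrier N" for m n
  proof -
    obtain c where c: "\<forall>s\<in>SM. c s \<in> carrier R" "m = finsum M (\<lambda>s. c s \<odot>\<^bsub>M\<^esub> s) SM"
      using SM m by (auto simp: fspan_def)
    obtain d where d: "\<forall>t\<in>SN. d t \<in> carrier R" "n = finsum N (\<lambda>t. d t \<odot>\<^bsub>N\<^esub> t) SN"
      using SN n by (auto simp: fspan_def)
    have in_s: "tm s n \<in> fspan R TMN ?S" if s: "s \<in> SM" for s
    proof -
      have "tm s n = finsum TMN (\<lambda>t. tm s (d t \<odot>\<^bsub>N\<^esub> t)) SN"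
        unfolding d(2) using SN d s SM by (intro lin_map_finsum[OF N.modM T_module tm_lin_r]) auto
      also have "\<dots> \<in> fspan R TMN ?S"
      proof (rule T.span_finsum[OF S SN(1)])
        fix t assume t: "t \<in> SN"
        have "tm s (d t \<odot>\<^bsub>N\<^esub> t) = d t \<odot>\<^bsub>TMN\<^esub> tm s t" using s t SM SN d by (intro tm_smult_r) auto
        moreover have "tm s t \<in> fspan R TMN ?S" using s t by (intro T.span_gen[OF S]) auto
        ultimately show "tm s (d t \<odot>\<^bsub>N\<^esub> t) \<in> fspan R TMN ?S" using T.span_smult[OF S] d t by auto
        show "tm s (d t \<odot>\<^bsub>N\<^esub> t) \<in> carrier TMN" using s t SM SN d by (auto intro!: tm_closed)
      qed
      finally show ?thesis .
    qed
    have "tm m n = finsum TMN (\<lambda>s. tm (c s \<odot>\<^bsub>M\<^esub> s) n) SM"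
      unfolding c(2) using SM c n by (intro lin_map_finsum[OF M.modM T_module tm_lin_l]) auto
    also have "\<dots> \<in> fspan R TMN ?S"
    proof (rule T.span_finsum[OF S SM(1)])
      fix s assume s: "s \<in> SM"
      have "tm (c s \<odot>\<^bsub>M\<^esub> s) n = c s \<odot>\<^bsub>TMN\<^esub> tm s n" using s SM n c by (intro tm_smult_l) auto
      then show "tm (c s \<odot>\<^bsub>M\<^esub> s) n \<in> fspan R TMN ?S" using T.span_smult[OF S] c s in_s by auto
      show "tm (c s \<odot>\<^bsub>M\<^esub> s) n \<in> carrier TMN" using s SM n c by (auto intro!: tm_closed)
    qed
    finally show ?thesis .
  qed
  have "carrier TMN \<subseteq> fspan R TMN ?S"
  proof
    fix U assume "U \<in> carrier TMN"
    then show "U \<in> fspan R TMN ?S"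
    proof (induction rule: tens_induct)
      case zero
      then show ?case by (rule T.span_zero[OF S])
    next
      case (tm m n)
      then show ?case by (rule tmS)
    next
      case (add U V)
      show ?case using add(3,4) by (rule T.span_add[OF S])
    qed
  qed
  then show ?thesis by (rule T.fin_gen_span[OF S])
qed

end


context module begin

lemma proj_via:
  fixes Idx :: "'s set"
  assumes F: "lin_map R M (free_module R Idx) F" and G: "lin_map R (free_module R Idx) M G"
    and id: "\<And>x. x \<in> carrier M \<Longrightarrow> G (F x) = x"
  shows "projective R M"
proof -
  interpret FX: module R "free_module R Idx" by (rule free_module_module)
  interpret FC: module R "free_module R (carrier M)" by (rule free_module_module)
  let ?\<beta> = "\<lambda>x. fs_delta R (G (fs_delta R x))"
  have Gd: "G (fs_delta R x) \<in> carrier M" if "x \<in> Idx" for x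
    using lin_mapD(1)[OF G] fc_delta[OF that] by simp
  have bc: "?\<beta> \<in> Idx \<rightarrow> carrier (free_module R (carrier M))"
    using Gd by (auto intro: fc_delta)
  let ?f = "\<lambda>m. flift R (free_module R (carrier M)) ?\<beta> (F m)"
  let ?g = "flift R M (\<lambda>w. w)"
  have idc: "(\<lambda>w. w) \<in> carrier M \<rightarrow> carrier M" by auto
  have f_lin: "lin_map R M (free_module R (carrier M)) ?f"
    by (rule lin_map_comp[OF F FC.flift_lin[OF bc]])
  have g_lin: "lin_map R (free_module R (carrier M)) M ?g" by (rule flift_lin[OF idc])
  have H_lin: "lin_map R (free_module R Idx) M (\<lambda>h. ?g (flift R (free_module R (carrier M)) ?\<beta> h))"
    by (rule lin_map_comp[OF FC.flift_lin[OF bc] g_lin])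
  have HG: "?g (flift R (free_module R (carrier M)) ?\<beta> h) = G h" if h: "h \<in> free_carrier R Idx" for h
  proof -
    have "?g (flift R (free_module R (carrier M)) ?\<beta> h)
        = flift R M (\<lambda>s. ?g (flift R (free_module R (carrier M)) ?\<beta> (fs_delta R s))) h"
      using lin_free_eq[OF H_lin h] .
    also have "\<dots> = flift R M (\<lambda>s. G (fs_delta R s)) h"
    proof (rule flift_cong[OF h])
      fix s assume s: "s \<in> Idx"
      have "flift R (free_module R (carrier M)) ?\<beta> (fs_delta R s) = ?\<beta> s" by (rule FC.flift_delta[OF s bc])
      then show "?g (flift R (free_module R (carrier M)) ?\<beta> (fs_delta R s)) = G (fs_delta R s)"
        using flift_delta[OF Gd[OF s] idc] by simp
    next
      show "(\<lambda>s. G (fs_delta R s)) \<in> Idx \<rightarrow> carrier M" using Gd by auto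
    qed
    also have "\<dots> = G h" using lin_free_eq[OF G h] by simp
    finally show ?thesis .
  qed
  have "\<forall>x\<in>carrier M. ?g (?f x) = x"
    using HG lin_mapD(1)[OF F] id by simp
  then show ?thesis unfolding projective_def using f_lin g_lin by blast
qed

end

lemma (in cring) fc_prod:
  assumes f: "f \<in> free_carrier R S1" and g: "g \<in> free_carrier R S2"
  shows "(\<lambda>p. f (fst p) \<otimes> g (snd p)) \<in> free_carrier R (S1 \<times> S2)"
proof -
  have "{p. f (fst p) \<otimes> g (snd p) \<noteq> \<zero>} \<subseteq> {u. f u \<noteq> \<zero>} \<times> {v. g v \<noteq> \<zero>}"
    using fc_closed[OF f] fc_closed[OF g] by auto
  moreover have "finite ({u. f u \<noteq> \<zero>} \<times> {v. g v \<noteq> \<zero>})" using fc_fin[OF f] fc_fin[OF g] by auto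
  ultimately show ?thesis
    using fc_closed[OF f] fc_closed[OF g] fc_out[OF f] fc_out[OF g]
    by (auto simp: free_carrier_iff intro: finite_subset)
qed

context tctx begin

lemma T_projective:
  assumes pM: "projective R M" and pN: "projective R N"
  shows "projective R TMN"
proof -
  interpret T: module R TMN by (rule T_module)
  interpret FMm: module R "free_module R (carrier M)" by (rule free_module_module)
  interpret FNm: module R "free_module R (carrier N)" by (rule free_module_module)
  interpret FM: module R FMN by (rule FM_mod)
  obtain fM gM where fM: "lin_map R M (free_module R (carrier M)) fM" and gM: "lin_map R (free_module R (carrier M)) M gM"
    and idM: "\<forall>x\<in>carrier M. gM (fM x) = x" using pM unfolding projective_def by blast
  obtain fN gN where fN: "lin_map R N (free_module R (carrier N)) fN" and gN: "lin_map R (free_module R (carrier N)) N gN"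
    and idN: "\<forall>x\<in>carrier N. gN (fN x) = x" using pN unfolding projective_def by blast
  have fMc: "fM m \<in> free_carrier R (carrier M)" if "m \<in> carrier M" for m using lin_mapD(1)[OF fM that] by simp
  have fNc: "fN n \<in> free_carrier R (carrier N)" if "n \<in> carrier N" for n using lin_mapD(1)[OF fN that] by simp
  let ?P = "\<lambda>m n. (\<lambda>p. fM m (fst p) \<otimes> fN n (snd p))"
  have Pb: "bilin R M N FMN ?P"
  proof (rule bilinI)
    show "\<And>m n. m \<in> carrier M \<Longrightarrow> n \<in> carrier N \<Longrightarrow> ?P m n \<in> carrier FMN"
      using fMc fNc by (simp add: fc_prod)
  next
    fix m m' n assume *: "m \<in> carrier M" "m' \<in> carrier M" "n \<in> carrier N"
    have "fM (m \<oplus>\<^bsub>M\<^esub> m') = (\<lambda>u. fM m u \<oplus> fM m' u)" using lin_mapD(2)[OF fM *(1,2)] by simp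
    then show "?P (m \<oplus>\<^bsub>M\<^esub> m') n = ?P m n \<oplus>\<^bsub>FMN\<^esub> ?P m' n"
      using * fc_closed[OF fMc] fc_closed[OF fNc] by (auto simp: l_distr)
  next
    fix m n n' assume *: "m \<in> carrier M" "n \<in> carrier N" "n' \<in> carrier N"
    have "fN (n \<oplus>\<^bsub>N\<^esub> n') = (\<lambda>u. fN n u \<oplus> fN n' u)" using lin_mapD(2)[OF fN *(2,3)] by simp
    then show "?P m (n \<oplus>\<^bsub>N\<^esub> n') = ?P m n \<oplus>\<^bsub>FMN\<^esub> ?P m n'"
      using * fc_closed[OF fMc] fc_closed[OF fNc] by (auto simp: r_distr)
  next
    fix r m n assume *: "r \<in> carrier R" "m \<in> carrier M" "n \<in> carrier N"
    have "fM (r \<odot>\<^bsub>M\<^esub> m) = (\<lambda>u. r \<otimes> fM m u)" using lin_mapD(3)[OF fM *(1,2)] by simp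
    then show "?P (r \<odot>\<^bsub>M\<^esub> m) n = r \<odot>\<^bsub>FMN\<^esub> ?P m n"
      using * fc_closed[OF fMc] fc_closed[OF fNc] by (auto simp: m_assoc)
  next
    fix r m n assume *: "r \<in> carrier R" "m \<in> carrier M" "n \<in> carrier N"
    have "fN (r \<odot>\<^bsub>N\<^esub> n) = (\<lambda>u. r \<otimes> fN n u)" using lin_mapD(3)[OF fN *(1,3)] by simp
    then show "?P m (r \<odot>\<^bsub>N\<^esub> n) = r \<odot>\<^bsub>FMN\<^esub> ?P m n"
      using * fc_closed[OF fMc] fc_closed[OF fNc] by (auto simp: m_lcomm)
  qed
  let ?F = "tlift R FMN ?P"
  let ?\<gamma> = "\<lambda>p. tm (gM (fs_delta R (fst p))) (gN (fs_delta R (snd p)))"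
  have gMd: "gM (fs_delta R u) \<in> carrier M" if "u \<in> carrier M" for u
    using lin_mapD(1)[OF gM] fc_delta[OF that] by simp
  have gNd: "gN (fs_delta R v) \<in> carrier N" if "v \<in> carrier N" for v
    using lin_mapD(1)[OF gN] fc_delta[OF that] by simp
  have gc: "?\<gamma> \<in> carrier M \<times> carrier N \<rightarrow> carrier TMN" using gMd gNd by (auto intro!: tm_closed)
  let ?G = "flift R TMN ?\<gamma>"
  have F_lin: "lin_map R TMN FMN ?F" by (rule tlift_lin[OF FM_mod Pb])
  have G_lin: "lin_map R FMN TMN ?G" by (rule T.flift_lin[OF gc])
  have gM_exp: "gM h = (\<Oplus>\<^bsub>M\<^esub>u\<in>{u. h u \<noteq> \<zero>}. h u \<odot>\<^bsub>M\<^esub> gM (fs_delta R u))"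
    if "h \<in> free_carrier R (carrier M)" for h
    using M.lin_free_eq[OF gM that] by (simp add: flift_def)
  have gN_exp: "gN h = (\<Oplus>\<^bsub>N\<^esub>u\<in>{u. h u \<noteq> \<zero>}. h u \<odot>\<^bsub>N\<^esub> gN (fs_delta R u))"
    if "h \<in> free_carrier R (carrier N)" for h
    using N.lin_free_eq[OF gN that] by (simp add: flift_def)
  have GF_tm: "?G (?F (tm m n)) = tm m n" if m: "m \<in> carrier M" and n: "n \<in> carrier N" for m n
  proof -
    let ?Sm = "{u. fM m u \<noteq> \<zero>}" and ?Sn = "{v. fN n v \<noteq> \<zero>}"
    have Sm: "finite ?Sm" "?Sm \<subseteq> carrier M" using fc_fin[OF fMc[OF m]] fc_supp[OF fMc[OF m]] by auto
    have Sn: "finite ?Sn" "?Sn \<subseteq> carrier N" using fc_fin[OF fNc[OF n]] fc_supp[OF fNc[OF n]] by auto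
    have cM: "fM m u \<in> carrier R" for u using fc_closed[OF fMc[OF m]] .
    have cN: "fN n v \<in> carrier R" for v using fc_closed[OF fNc[OF n]] .
    have "?F (tm m n) = ?P m n" by (rule tlift_tm[OF FM_mod Pb m n])
    then have "?G (?F (tm m n)) = ?G (?P m n)" by simp
    also have "\<dots> = (\<Oplus>\<^bsub>TMN\<^esub>p\<in>?Sm \<times> ?Sn. (fM m (fst p) \<otimes> fN n (snd p)) \<odot>\<^bsub>TMN\<^esub> ?\<gamma> p)"
      using Sm Sn cM cN by (intro T.flift_superset[OF fc_prod[OF fMc[OF m] fNc[OF n]] _ _ _ gc]) auto
    also have "\<dots> = (\<Oplus>\<^bsub>TMN\<^esub>u\<in>?Sm. \<Oplus>\<^bsub>TMN\<^esub>v\<in>?Sn. (fM m u \<otimes> fN n v) \<odot>\<^bsub>TMN\<^esub> ?\<gamma> (u, v))"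
      using T.finsum_product[OF Sm(1) Sn(1), of "\<lambda>u v. (fM m u \<otimes> fN n v) \<odot>\<^bsub>TMN\<^esub> ?\<gamma> (u, v)"]
        Sm Sn cM cN gc by (auto simp: Pi_iff subset_iff)
    also have "\<dots> = (\<Oplus>\<^bsub>TMN\<^esub>u\<in>?Sm. \<Oplus>\<^bsub>TMN\<^esub>v\<in>?Sn. tm (fM m u \<odot>\<^bsub>M\<^esub> gM (fs_delta R u)) (fN n v \<odot>\<^bsub>N\<^esub> gN (fs_delta R v)))"
    proof (intro T.finsum_cong_simple)
      fix u v assume u: "u \<in> ?Sm" and v: "v \<in> ?Sn"
      have uc: "u \<in> carrier M" and vc: "v \<in> carrier N" using u v Sm Sn by auto
      show "(fM m u \<otimes> fN n v) \<odot>\<^bsub>TMN\<^esub> ?\<gamma> (u, v) = tm (fM m u \<odot>\<^bsub>M\<^esub> gM (fs_delta R u)) (fN n v \<odot>\<^bsub>N\<^esub> gN (fs_delta R v))"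
      proof -
        have e1: "tm (fM m u \<odot>\<^bsub>M\<^esub> gM (fs_delta R u)) (fN n v \<odot>\<^bsub>N\<^esub> gN (fs_delta R v))
            = fM m u \<odot>\<^bsub>TMN\<^esub> tm (gM (fs_delta R u)) (fN n v \<odot>\<^bsub>N\<^esub> gN (fs_delta R v))"
          using gMd[OF uc] gNd[OF vc] cM cN by (intro tm_smult_l N.smult_closed)
        have e2: "tm (gM (fs_delta R u)) (fN n v \<odot>\<^bsub>N\<^esub> gN (fs_delta R v))
            = fN n v \<odot>\<^bsub>TMN\<^esub> tm (gM (fs_delta R u)) (gN (fs_delta R v))"
          using gMd[OF uc] gNd[OF vc] cM cN by (intro tm_smult_r)
        have e3: "(fM m u \<otimes> fN n v) \<odot>\<^bsub>TMN\<^esub> tm (gM (fs_delta R u)) (gN (fs_delta R v))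
            = fM m u \<odot>\<^bsub>TMN\<^esub> (fN n v \<odot>\<^bsub>TMN\<^esub> tm (gM (fs_delta R u)) (gN (fs_delta R v)))"
          using gMd[OF uc] gNd[OF vc] cM cN by (intro T.smult_assoc1 tm_closed)
        show ?thesis by (simp only: fst_conv snd_conv e1 e2 e3)
      qed
    next
      fix u assume u: "u \<in> ?Sm"
      show "(\<lambda>v. tm (fM m u \<odot>\<^bsub>M\<^esub> gM (fs_delta R u)) (fN n v \<odot>\<^bsub>N\<^esub> gN (fs_delta R v))) \<in> ?Sn \<rightarrow> carrier TMN"
        using u Sm Sn gMd gNd cM cN by (auto intro!: tm_closed)
    next
      show "(\<lambda>u. \<Oplus>\<^bsub>TMN\<^esub>v\<in>?Sn. tm (fM m u \<odot>\<^bsub>M\<^esub> gM (fs_delta R u)) (fN n v \<odot>\<^bsub>N\<^esub> gN (fs_delta R v))) \<in> ?Sm \<rightarrow> carrier TMN"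
        using Sm Sn gMd gNd cM cN by (auto intro!: tm_closed T.finsum_closed)
    qed
    also have "\<dots> = (\<Oplus>\<^bsub>TMN\<^esub>u\<in>?Sm. tm (fM m u \<odot>\<^bsub>M\<^esub> gM (fs_delta R u)) (gN (fN n)))"
    proof (rule T.finsum_cong_simple)
      fix u assume u: "u \<in> ?Sm"
      have uc: "u \<in> carrier M" using u Sm by auto
      have "tm (fM m u \<odot>\<^bsub>M\<^esub> gM (fs_delta R u)) (gN (fN n))
         = tm (fM m u \<odot>\<^bsub>M\<^esub> gM (fs_delta R u)) (\<Oplus>\<^bsub>N\<^esub>v\<in>?Sn. fN n v \<odot>\<^bsub>N\<^esub> gN (fs_delta R v))"
        using gN_exp[OF fNc[OF n]] by simp
      also have "\<dots> = (\<Oplus>\<^bsub>TMN\<^esub>v\<in>?Sn. tm (fM m u \<odot>\<^bsub>M\<^esub> gM (fs_delta R u)) (fN n v \<odot>\<^bsub>N\<^esub> gN (fs_delta R v)))"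
        using Sn gNd cN gMd[OF uc] cM
        by (intro lin_map_finsum[OF N.modM T_module tm_lin_r]) (auto simp: Pi_iff subset_iff)
      finally show "(\<Oplus>\<^bsub>TMN\<^esub>v\<in>?Sn. tm (fM m u \<odot>\<^bsub>M\<^esub> gM (fs_delta R u)) (fN n v \<odot>\<^bsub>N\<^esub> gN (fs_delta R v)))
           = tm (fM m u \<odot>\<^bsub>M\<^esub> gM (fs_delta R u)) (gN (fN n))" by simp
    next
      show "(\<lambda>u. tm (fM m u \<odot>\<^bsub>M\<^esub> gM (fs_delta R u)) (gN (fN n))) \<in> ?Sm \<rightarrow> carrier TMN"
        using Sm gMd cM n idN by (auto intro!: tm_closed)
    qed
    also have "\<dots> = tm (\<Oplus>\<^bsub>M\<^esub>u\<in>?Sm. fM m u \<odot>\<^bsub>M\<^esub> gM (fs_delta R u)) (gN (fN n))"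
      using Sm gMd cM n idN
      by (intro lin_map_finsum[OF M.modM T_module tm_lin_l, symmetric]) (auto simp: Pi_iff subset_iff)
    also have "\<dots> = tm (gM (fM m)) (gN (fN n))" using gM_exp[OF fMc[OF m]] by simp
    also have "\<dots> = tm m n" using idM idN m n by simp
    finally show ?thesis .
  qed
  have "?G (?F U) = U" if U: "U \<in> carrier TMN" for U
    using U
  proof (rule tens_lin_eq[OF T_module, rotated 3])
    show "lin_map R TMN TMN (\<lambda>U. ?G (?F U))" by (rule lin_map_comp[OF F_lin G_lin])
    show "lin_map R TMN TMN (\<lambda>U. U)" by (rule lin_map_id)
    show "\<And>m n. m \<in> carrier M \<Longrightarrow> n \<in> carrier N \<Longrightarrow> ?G (?F (tm m n)) = tm m n" by (rule GF_tm)
  qed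
  then show ?thesis by (intro T.proj_via[OF F_lin G_lin])
qed

end


context module begin

lemma dual_basis_exists:
  assumes fg: "fin_gen R M" and pj: "projective R M"
  shows "\<exists>I d \<alpha>. finite I \<and> I \<subseteq> carrier M \<and> (\<forall>i\<in>I. d i \<in> carrier M) \<and>
     (\<forall>i\<in>I. \<forall>x\<in>carrier M. \<alpha> i x \<in> carrier R) \<and>
     (\<forall>i\<in>I. \<forall>x\<in>carrier M. \<forall>y\<in>carrier M. \<alpha> i (x \<oplus>\<^bsub>M\<^esub> y) = \<alpha> i x \<oplus> \<alpha> i y) \<and>
     (\<forall>i\<in>I. \<forall>r\<in>carrier R. \<forall>x\<in>carrier M. \<alpha> i (r \<odot>\<^bsub>M\<^esub> x) = r \<otimes> \<alpha> i x) \<and>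
     (\<forall>x\<in>carrier M. x = finsum M (\<lambda>i. \<alpha> i x \<odot>\<^bsub>M\<^esub> d i) I)"
proof -
  interpret FC: module R "free_module R (carrier M)" by (rule free_module_module)
  obtain f g where f: "lin_map R M (free_module R (carrier M)) f" and g: "lin_map R (free_module R (carrier M)) M g"
    and gf: "\<forall>x\<in>carrier M. g (f x) = x" using pj unfolding projective_def by blast
  obtain S where S: "finite S" "S \<subseteq> carrier M" "carrier M \<subseteq> fspan R M S" using fin_gen_obtain[OF fg] by blast
  have fc: "f x \<in> free_carrier R (carrier M)" if "x \<in> carrier M" for x using lin_mapD(1)[OF f that] by simp
  let ?I = "\<Union>s\<in>S. {u. f s u \<noteq> \<zero>}"
  have I: "finite ?I" using S fc_fin[OF fc] by auto
  have Isub: "?I \<subseteq> carrier M"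
  proof
    fix u assume "u \<in> ?I"
    then obtain s where s: "s \<in> S" "f s u \<noteq> \<zero>" by blast
    then show "u \<in> carrier M" using fc_out[OF fc[of s]] S by auto
  qed
  have supp: "{u. f x u \<noteq> \<zero>} \<subseteq> ?I" if x: "x \<in> carrier M" for x
  proof
    fix u assume u: "u \<in> {u. f x u \<noteq> \<zero>}"
    obtain c where c: "\<forall>s\<in>S. c s \<in> carrier R" "x = finsum M (\<lambda>s. c s \<odot>\<^bsub>M\<^esub> s) S"
      using S x by (auto simp: fspan_def)
    have "f x = finsum (free_module R (carrier M)) (\<lambda>s. f (c s \<odot>\<^bsub>M\<^esub> s)) S"
      using c S by (subst c(2)) (intro lin_map_finsum[OF modM free_module_module f], auto)
    then have "f x u = (\<Oplus>s\<in>S. f (c s \<odot>\<^bsub>M\<^esub> s) u)"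
      using S c fc by (simp add: free_finsum_apply Pi_iff subset_iff)
    also have "\<dots> = (\<Oplus>s\<in>S. c s \<otimes> f s u)"
      by (rule R.finsum_cong_simple) (use S c lin_mapD(3)[OF f] in \<open>auto simp: subset_iff fc_closed[OF fc]\<close>)
    finally have eq: "f x u = (\<Oplus>s\<in>S. c s \<otimes> f s u)" .
    show "u \<in> ?I"
    proof (rule ccontr)
      assume "u \<notin> ?I"
      then have "\<forall>s\<in>S. f s u = \<zero>" by auto
      have "(\<Oplus>s\<in>S. c s \<otimes> f s u) = (\<Oplus>s\<in>S. \<zero>)"
        by (rule R.finsum_cong_simple) (use c \<open>\<forall>s\<in>S. f s u = \<zero>\<close> in auto)
      then show False using eq u by simp
    qed
  qed
  let ?d = "\<lambda>u. g (fs_delta R u)"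
  let ?\<alpha> = "\<lambda>u x. f x u"
  have gdc: "g (fs_delta R u) \<in> carrier M" if "u \<in> carrier M" for u
    by (rule lin_mapD(1)[OF g]) (simp add: fc_delta[OF that])
  have dc: "?d u \<in> carrier M" if "u \<in> ?I" for u
  proof -
    have "u \<in> carrier M" using Isub that by (rule subsetD)
    then show ?thesis by (rule gdc)
  qed
  have recon: "x = finsum M (\<lambda>u. ?\<alpha> u x \<odot>\<^bsub>M\<^esub> ?d u) ?I" if x: "x \<in> carrier M" for x
  proof -
    have "x = g (f x)" using gf x by simp
    also have "\<dots> = flift R M (\<lambda>s. g (fs_delta R s)) (f x)" by (rule lin_free_eq[OF g fc[OF x]])
    also have "\<dots> = finsum M (\<lambda>u. f x u \<odot>\<^bsub>M\<^esub> g (fs_delta R u)) ?I"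
      using I supp[OF x] Isub gdc
      by (intro flift_superset[OF fc[OF x]]) (auto simp: Pi_iff)
    finally show ?thesis .
  qed
  have ac: "?\<alpha> u x \<in> carrier R" if "x \<in> carrier M" for u x using fc_closed[OF fc[OF that]] .
  have aa: "?\<alpha> u (x \<oplus>\<^bsub>M\<^esub> y) = ?\<alpha> u x \<oplus> ?\<alpha> u y" if "x \<in> carrier M" "y \<in> carrier M" for u x y
    using lin_mapD(2)[OF f that] by simp
  have as: "?\<alpha> u (r \<odot>\<^bsub>M\<^esub> x) = r \<otimes> ?\<alpha> u x" if "r \<in> carrier R" "x \<in> carrier M" for u r x
    using lin_mapD(3)[OF f that] by simp
  show ?thesis
    apply (rule exI[of _ ?I], rule exI[of _ ?d], rule exI[of _ ?\<alpha>])
    apply (intro conjI ballI)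
          apply (rule I)
         apply (rule Isub)
        apply (erule dc)
       apply (erule ac)
      apply (erule aa, assumption)
     apply (erule as, assumption)
    apply (erule recon)
    done
qed

end


locale fr1 = cring R + A: module R A + P: module R P
  for R :: "('k, 'c) ring_scheme" (structure) and A :: "('k, 'a, 'x) module_scheme"
    and P :: "('k, 'p, 'u) module_scheme"
    and I :: "'a set" and d :: "'a \<Rightarrow> 'a" and \<alpha> :: "'a \<Rightarrow> 'a \<Rightarrow> 'k" +
  assumes frob: "frobenius R P A"
    and I_fin: "finite I"
    and dc: "\<And>i. i \<in> I \<Longrightarrow> d i \<in> carrier A"
    and \<alpha>c: "\<And>i x. i \<in> I \<Longrightarrow> x \<in> carrier A \<Longrightarrow> \<alpha> i x \<in> carrier R"
    and \<alpha>add: "\<And>i x y. i \<in> I \<Longrightarrow> x \<in> carrier A \<Longrightarrow> y \<in> carrier A \<Longrightarrow> \<alpha> i (x \<oplus>\<^bsub>A\<^esub> y) = \<alpha> i x \<oplus> \<alpha> i y"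
    and \<alpha>sm: "\<And>i r x. i \<in> I \<Longrightarrow> r \<in> carrier R \<Longrightarrow> x \<in> carrier A \<Longrightarrow> \<alpha> i (r \<odot>\<^bsub>A\<^esub> x) = r \<otimes> \<alpha> i x"
    and db: "\<And>x. x \<in> carrier A \<Longrightarrow> x = finsum A (\<lambda>i. \<alpha> i x \<odot>\<^bsub>A\<^esub> d i) I"

sublocale fr1 \<subseteq> RA: ring A using frob unfolding frobenius_def k_algebra_def by auto

context fr1 begin

lemma algA_l: "r \<in> carrier R \<Longrightarrow> x \<in> carrier A \<Longrightarrow> y \<in> carrier A \<Longrightarrow> (r \<odot>\<^bsub>A\<^esub> x) \<otimes>\<^bsub>A\<^esub> y = r \<odot>\<^bsub>A\<^esub> (x \<otimes>\<^bsub>A\<^esub> y)"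
  using frob unfolding frobenius_def k_algebra_def by blast
lemma algA_r: "r \<in> carrier R \<Longrightarrow> x \<in> carrier A \<Longrightarrow> y \<in> carrier A \<Longrightarrow> x \<otimes>\<^bsub>A\<^esub> (r \<odot>\<^bsub>A\<^esub> y) = r \<odot>\<^bsub>A\<^esub> (x \<otimes>\<^bsub>A\<^esub> y)"
  using frob unfolding frobenius_def k_algebra_def by blast

definition phi where "phi = (SOME \<phi>. bij_betw \<phi> (carrier A) (hom_set R A P) \<and>
        (\<forall>x\<in>carrier A. \<forall>y\<in>carrier A.
            \<phi> (x \<oplus>\<^bsub>A\<^esub> y) = (\<lambda>z\<in>carrier A. \<phi> x z \<oplus>\<^bsub>P\<^esub> \<phi> y z)) \<and>
        (\<forall>x\<in>carrier A. \<forall>a\<in>carrier A.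
            \<phi> (x \<otimes>\<^bsub>A\<^esub> a) = (\<lambda>z\<in>carrier A. \<phi> x (a \<otimes>\<^bsub>A\<^esub> z))))"

lemma phi_props: "bij_betw phi (carrier A) (hom_set R A P) \<and>
        (\<forall>x\<in>carrier A. \<forall>y\<in>carrier A.
            phi (x \<oplus>\<^bsub>A\<^esub> y) = (\<lambda>z\<in>carrier A. phi x z \<oplus>\<^bsub>P\<^esub> phi y z)) \<and>
        (\<forall>x\<in>carrier A. \<forall>a\<in>carrier A.
            phi (x \<otimes>\<^bsub>A\<^esub> a) = (\<lambda>z\<in>carrier A. phi x (a \<otimes>\<^bsub>A\<^esub> z)))"
  unfolding phi_def using frob unfolding frobenius_def by (rule someI_ex[OF conjunct2[OF conjunct2[OF conjunct2]]])

lemma phi_bij: "bij_betw phi (carrier A) (hom_set R A P)" using phi_props by blast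

lemma phi_hom: "a \<in> carrier A \<Longrightarrow> phi a \<in> hom_set R A P"
  using phi_bij bij_betwE by blast

lemma phi_lin: "a \<in> carrier A \<Longrightarrow> lin_map R A P (phi a)"
  using phi_hom by (simp add: hom_set_def)

lemma phi_ext: "a \<in> carrier A \<Longrightarrow> phi a \<in> extensional (carrier A)"
  using phi_hom by (simp add: hom_set_def)

lemma phi_val: "a \<in> carrier A \<Longrightarrow> x \<in> carrier A \<Longrightarrow> phi a x \<in> carrier P"
  using lin_mapD(1)[OF phi_lin] by blast

lemma phi_add: "a \<in> carrier A \<Longrightarrow> a' \<in> carrier A \<Longrightarrow> x \<in> carrier A \<Longrightarrow> phi (a \<oplus>\<^bsub>A\<^esub> a') x = phi a x \<oplus>\<^bsub>P\<^esub> phi a' x"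
  using phi_props by simp

lemma phi_mult: "a \<in> carrier A \<Longrightarrow> a' \<in> carrier A \<Longrightarrow> x \<in> carrier A \<Longrightarrow> phi (a \<otimes>\<^bsub>A\<^esub> a') x = phi a (a' \<otimes>\<^bsub>A\<^esub> x)"
  using phi_props by simp

lemma phi_smult:
  assumes r: "r \<in> carrier R" and a: "a \<in> carrier A" and x: "x \<in> carrier A"
  shows "phi (r \<odot>\<^bsub>A\<^esub> a) x = r \<odot>\<^bsub>P\<^esub> phi a x"
proof -
  have "r \<odot>\<^bsub>A\<^esub> a = a \<otimes>\<^bsub>A\<^esub> (r \<odot>\<^bsub>A\<^esub> \<one>\<^bsub>A\<^esub>)" using algA_r[OF r a RA.one_closed] a by simp
  then have "phi (r \<odot>\<^bsub>A\<^esub> a) x = phi a ((r \<odot>\<^bsub>A\<^esub> \<one>\<^bsub>A\<^esub>) \<otimes>\<^bsub>A\<^esub> x)" using phi_mult r a x by simp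
  also have "(r \<odot>\<^bsub>A\<^esub> \<one>\<^bsub>A\<^esub>) \<otimes>\<^bsub>A\<^esub> x = r \<odot>\<^bsub>A\<^esub> x" using algA_l[OF r RA.one_closed x] x by simp
  also have "phi a (r \<odot>\<^bsub>A\<^esub> x) = r \<odot>\<^bsub>P\<^esub> phi a x" using lin_mapD(3)[OF phi_lin[OF a] r x] .
  finally show ?thesis .
qed

lemma phi_eqI:
  assumes a: "a \<in> carrier A" and a': "a' \<in> carrier A" and eq: "\<And>x. x \<in> carrier A \<Longrightarrow> phi a x = phi a' x"
  shows "a = a'"
proof -
  have "phi a = phi a'" using phi_ext[OF a] phi_ext[OF a'] eq by (rule extensionalityI)
  then show ?thesis using phi_bij a a' by (auto simp: bij_betw_def inj_on_def)
qed

definition psi where "psi = inv_into (carrier A) phi"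

lemma psi: "h \<in> hom_set R A P \<Longrightarrow> psi h \<in> carrier A \<and> phi (psi h) = h"
  unfolding psi_def using phi_bij
  by (metis bij_betw_def f_inv_into_f inv_into_into)

lemma phi_zero: "x \<in> carrier A \<Longrightarrow> phi \<zero>\<^bsub>A\<^esub> x = \<zero>\<^bsub>P\<^esub>"
  using phi_smult[of \<zero> "\<zero>\<^bsub>A\<^esub>" x] phi_val[of "\<zero>\<^bsub>A\<^esub>" x] by simp

lemma phi_finsum:
  assumes J: "finite J" and F: "\<And>j. j \<in> J \<Longrightarrow> F j \<in> carrier A" and x: "x \<in> carrier A"
  shows "phi (finsum A F J) x = finsum P (\<lambda>j. phi (F j) x) J"
  using J F
proof (induction J rule: finite_induct)
  case empty
  then show ?case using phi_zero[OF x] by simp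
next
  case (insert j J)
  have "phi (finsum A F (insert j J)) x = phi (F j \<oplus>\<^bsub>A\<^esub> finsum A F J) x"
    using insert by (subst A.finsum_insert) auto
  also have "\<dots> = phi (F j) x \<oplus>\<^bsub>P\<^esub> phi (finsum A F J) x"
    using insert x by (intro phi_add A.finsum_closed) auto
  also have "\<dots> = finsum P (\<lambda>j. phi (F j) x) (insert j J)"
    using insert x phi_val by (subst P.finsum_insert) (auto simp: Pi_iff)
  finally show ?case .
qed

definition ev where "ev i p = psi (\<lambda>x\<in>carrier A. \<alpha> i x \<odot>\<^bsub>P\<^esub> p)"

lemma hom_alpha: "i \<in> I \<Longrightarrow> p \<in> carrier P \<Longrightarrow> (\<lambda>x\<in>carrier A. \<alpha> i x \<odot>\<^bsub>P\<^esub> p) \<in> hom_set R A P"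
  unfolding hom_set_def
  by (auto intro!: lin_mapI simp: \<alpha>c \<alpha>add \<alpha>sm P.smult_l_distr P.smult_assoc1)

lemma ev_c: "i \<in> I \<Longrightarrow> p \<in> carrier P \<Longrightarrow> ev i p \<in> carrier A"
  unfolding ev_def using psi hom_alpha by blast

lemma phi_ev: "i \<in> I \<Longrightarrow> p \<in> carrier P \<Longrightarrow> x \<in> carrier A \<Longrightarrow> phi (ev i p) x = \<alpha> i x \<odot>\<^bsub>P\<^esub> p"
  unfolding ev_def using psi[OF hom_alpha] by simp

lemma ev_add: "i \<in> I \<Longrightarrow> p \<in> carrier P \<Longrightarrow> p' \<in> carrier P \<Longrightarrow> ev i (p \<oplus>\<^bsub>P\<^esub> p') = ev i p \<oplus>\<^bsub>A\<^esub> ev i p'"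
  by (rule phi_eqI) (auto simp: ev_c phi_add phi_ev \<alpha>c P.smult_r_distr)

lemma ev_smult:
  assumes i: "i \<in> I" and r: "r \<in> carrier R" and p: "p \<in> carrier P"
  shows "ev i (r \<odot>\<^bsub>P\<^esub> p) = r \<odot>\<^bsub>A\<^esub> ev i p"
proof (rule phi_eqI)
  show "ev i (r \<odot>\<^bsub>P\<^esub> p) \<in> carrier A" using i r p by (simp add: ev_c)
  show "r \<odot>\<^bsub>A\<^esub> ev i p \<in> carrier A" using i r p by (simp add: ev_c)
  fix x assume x: "x \<in> carrier A"
  have "phi (ev i (r \<odot>\<^bsub>P\<^esub> p)) x = \<alpha> i x \<odot>\<^bsub>P\<^esub> (r \<odot>\<^bsub>P\<^esub> p)" using i r p x by (simp add: phi_ev)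
  also have "\<dots> = (\<alpha> i x \<otimes> r) \<odot>\<^bsub>P\<^esub> p" using i r p x \<alpha>c by (simp add: P.smult_assoc1)
  also have "\<dots> = (r \<otimes> \<alpha> i x) \<odot>\<^bsub>P\<^esub> p" using i r x \<alpha>c by (simp add: m_comm)
  also have "\<dots> = r \<odot>\<^bsub>P\<^esub> (\<alpha> i x \<odot>\<^bsub>P\<^esub> p)" using i r p x \<alpha>c by (simp add: P.smult_assoc1)
  also have "\<dots> = phi (r \<odot>\<^bsub>A\<^esub> ev i p) x" using i r p x by (simp add: phi_smult phi_ev ev_c)
  finally show "phi (ev i (r \<odot>\<^bsub>P\<^esub> p)) x = phi (r \<odot>\<^bsub>A\<^esub> ev i p) x" .
qed

lemma recon:
  assumes a: "a \<in> carrier A"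
  shows "finsum A (\<lambda>i. ev i (phi a (d i))) I = a"
proof (rule phi_eqI)
  have evc: "ev i (phi a (d i)) \<in> carrier A" if "i \<in> I" for i using that a by (simp add: ev_c phi_val dc)
  show "finsum A (\<lambda>i. ev i (phi a (d i))) I \<in> carrier A" using evc by (intro A.finsum_closed) auto
  show "a \<in> carrier A" by fact
  fix x assume x: "x \<in> carrier A"
  have "phi (finsum A (\<lambda>i. ev i (phi a (d i))) I) x = finsum P (\<lambda>i. phi (ev i (phi a (d i))) x) I"
    using evc x I_fin by (intro phi_finsum) auto
  also have "\<dots> = finsum P (\<lambda>i. \<alpha> i x \<odot>\<^bsub>P\<^esub> phi a (d i)) I"
    using x a by (intro P.finsum_cong_simple) (auto simp: phi_ev phi_val dc \<alpha>c)
  also have "\<dots> = finsum P (\<lambda>i. phi a (\<alpha> i x \<odot>\<^bsub>A\<^esub> d i)) I"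
    using x a by (intro P.finsum_cong_simple) (auto simp: lin_mapD(3)[OF phi_lin[OF a]] phi_val dc \<alpha>c)
  also have "\<dots> = phi a (finsum A (\<lambda>i. \<alpha> i x \<odot>\<^bsub>A\<^esub> d i) I)"
    using x a I_fin by (intro lin_map_finsum[OF A.modM P.modM phi_lin, symmetric]) (auto simp: dc \<alpha>c)
  also have "\<dots> = phi a x" using db[OF x] by simp
  finally show "phi (finsum A (\<lambda>i. ev i (phi a (d i))) I) x = phi a x" .
qed

end


locale fctx = actx R A B + FA: fr1 R A P IA dA \<alpha>A + FB: fr1 R B Q IB dB \<alpha>B
  for R :: "('k, 'c) ring_scheme" (structure) and A :: "('k, 'a, 'x) module_scheme"
    and B :: "('k, 'b, 'y) module_scheme"
    and P :: "('k, 'p, 'u) module_scheme" and Q :: "('k, 'q, 'v) module_scheme"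
    and IA dA \<alpha>A IB dB \<alpha>B

sublocale fctx \<subseteq> PQ: tctx R P Q by unfold_locales

context fctx begin

abbreviation "TPQ \<equiv> tensor_mod R P Q"
abbreviation "tpq p q \<equiv> tens_cls R P Q (fs_delta R (p, q))"

definition Psi where "Psi a b = tlift R TPQ (\<lambda>x y. tpq (FA.phi a x) (FB.phi b y))"
definition gam where "gam W = (\<lambda>a b. Psi a b W)"
definition Phi where "Phi U = (\<lambda>W\<in>carrier TMN. tlift R TPQ (gam W) U)"

lemma TPQ_mod: "module R TPQ" by (rule PQ.T_module)

lemma psi_bilin:
  assumes a: "a \<in> carrier A" and b: "b \<in> carrier B"
  shows "bilin R A B TPQ (\<lambda>x y. tpq (FA.phi a x) (FB.phi b y))"
proof (rule bilinI)
  show "\<And>m n. m \<in> carrier A \<Longrightarrow> n \<in> carrier B \<Longrightarrow> tpq (FA.phi a m) (FB.phi b n) \<in> carrier TPQ"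
    using a b by (intro PQ.tm_closed FA.phi_val FB.phi_val)
  show "\<And>m m' n. m \<in> carrier A \<Longrightarrow> m' \<in> carrier A \<Longrightarrow> n \<in> carrier B \<Longrightarrow>
      tpq (FA.phi a (m \<oplus>\<^bsub>A\<^esub> m')) (FB.phi b n) = tpq (FA.phi a m) (FB.phi b n) \<oplus>\<^bsub>TPQ\<^esub> tpq (FA.phi a m') (FB.phi b n)"
    using a b by (simp add: lin_mapD(2)[OF FA.phi_lin] PQ.tm_add_l FA.phi_val FB.phi_val)
  show "\<And>m n n'. m \<in> carrier A \<Longrightarrow> n \<in> carrier B \<Longrightarrow> n' \<in> carrier B \<Longrightarrow>
      tpq (FA.phi a m) (FB.phi b (n \<oplus>\<^bsub>B\<^esub> n')) = tpq (FA.phi a m) (FB.phi b n) \<oplus>\<^bsub>TPQ\<^esub> tpq (FA.phi a m) (FB.phi b n')"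
    using a b by (simp add: lin_mapD(2)[OF FB.phi_lin] PQ.tm_add_r FA.phi_val FB.phi_val)
  show "\<And>r m n. r \<in> carrier R \<Longrightarrow> m \<in> carrier A \<Longrightarrow> n \<in> carrier B \<Longrightarrow>
      tpq (FA.phi a (r \<odot>\<^bsub>A\<^esub> m)) (FB.phi b n) = r \<odot>\<^bsub>TPQ\<^esub> tpq (FA.phi a m) (FB.phi b n)"
    using a b by (simp add: lin_mapD(3)[OF FA.phi_lin] PQ.tm_smult_l FA.phi_val FB.phi_val)
  show "\<And>r m n. r \<in> carrier R \<Longrightarrow> m \<in> carrier A \<Longrightarrow> n \<in> carrier B \<Longrightarrow>
      tpq (FA.phi a m) (FB.phi b (r \<odot>\<^bsub>B\<^esub> n)) = r \<odot>\<^bsub>TPQ\<^esub> tpq (FA.phi a m) (FB.phi b n)"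
    using a b by (simp add: lin_mapD(3)[OF FB.phi_lin] PQ.tm_smult_r FA.phi_val FB.phi_val)
qed

lemma Psi_lin: "a \<in> carrier A \<Longrightarrow> b \<in> carrier B \<Longrightarrow> lin_map R TMN TPQ (Psi a b)"
  unfolding Psi_def by (intro tlift_lin TPQ_mod psi_bilin)

lemma Psi_closed: "a \<in> carrier A \<Longrightarrow> b \<in> carrier B \<Longrightarrow> W \<in> carrier TMN \<Longrightarrow> Psi a b W \<in> carrier TPQ"
  using lin_mapD(1)[OF Psi_lin] by blast

lemma Psi_tm: "a \<in> carrier A \<Longrightarrow> b \<in> carrier B \<Longrightarrow> x \<in> carrier A \<Longrightarrow> y \<in> carrier B \<Longrightarrow>
   Psi a b (tm x y) = tpq (FA.phi a x) (FB.phi b y)"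
  unfolding Psi_def by (intro tlift_tm TPQ_mod psi_bilin)

lemma PQ_add_closed: "U \<in> carrier TPQ \<Longrightarrow> V \<in> carrier TPQ \<Longrightarrow> U \<oplus>\<^bsub>TPQ\<^esub> V \<in> carrier TPQ"
proof -
  interpret T: module R TPQ by (rule TPQ_mod)
  show "U \<in> carrier TPQ \<Longrightarrow> V \<in> carrier TPQ \<Longrightarrow> U \<oplus>\<^bsub>TPQ\<^esub> V \<in> carrier TPQ" by simp
qed

lemma PQ_smult_closed: "r \<in> carrier R \<Longrightarrow> U \<in> carrier TPQ \<Longrightarrow> r \<odot>\<^bsub>TPQ\<^esub> U \<in> carrier TPQ"
  using module.smult_closed[OF TPQ_mod] .

lemma gam_bilin:
  assumes W: "W \<in> carrier TMN"
  shows "bilin R A B TPQ (gam W)"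
proof (rule bilinI)
  show "\<And>m n. m \<in> carrier A \<Longrightarrow> n \<in> carrier B \<Longrightarrow> gam W m n \<in> carrier TPQ"
    unfolding gam_def using W by (intro Psi_closed)
next
  fix a a' b assume ab: "a \<in> carrier A" "a' \<in> carrier A" "b \<in> carrier B"
  have "Psi (a \<oplus>\<^bsub>A\<^esub> a') b W = tlift R TPQ (\<lambda>x y. tpq (FA.phi a x) (FB.phi b y) \<oplus>\<^bsub>TPQ\<^esub> tpq (FA.phi a' x) (FB.phi b y)) W"
    unfolding Psi_def using ab
    by (intro tlift_cong[OF TPQ_mod W])
       (auto simp: FA.phi_add FA.phi_val FB.phi_val PQ.tm_add_l intro!: PQ_add_closed PQ.tm_closed)
  also have "\<dots> = Psi a b W \<oplus>\<^bsub>TPQ\<^esub> Psi a' b W"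
    unfolding Psi_def using ab by (intro tlift_fun_add[OF TPQ_mod W]) (auto intro!: PQ.tm_closed FA.phi_val FB.phi_val)
  finally show "gam W (a \<oplus>\<^bsub>A\<^esub> a') b = gam W a b \<oplus>\<^bsub>TPQ\<^esub> gam W a' b" by (simp add: gam_def)
next
  fix a b b' assume ab: "a \<in> carrier A" "b \<in> carrier B" "b' \<in> carrier B"
  have "Psi a (b \<oplus>\<^bsub>B\<^esub> b') W = tlift R TPQ (\<lambda>x y. tpq (FA.phi a x) (FB.phi b y) \<oplus>\<^bsub>TPQ\<^esub> tpq (FA.phi a x) (FB.phi b' y)) W"
    unfolding Psi_def using ab
    by (intro tlift_cong[OF TPQ_mod W])
       (auto simp: FB.phi_add FA.phi_val FB.phi_val PQ.tm_add_r intro!: PQ_add_closed PQ.tm_closed)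
  also have "\<dots> = Psi a b W \<oplus>\<^bsub>TPQ\<^esub> Psi a b' W"
    unfolding Psi_def using ab by (intro tlift_fun_add[OF TPQ_mod W]) (auto intro!: PQ.tm_closed FA.phi_val FB.phi_val)
  finally show "gam W a (b \<oplus>\<^bsub>B\<^esub> b') = gam W a b \<oplus>\<^bsub>TPQ\<^esub> gam W a b'" by (simp add: gam_def)
next
  fix r a b assume ab: "r \<in> carrier R" "a \<in> carrier A" "b \<in> carrier B"
  have "Psi (r \<odot>\<^bsub>A\<^esub> a) b W = tlift R TPQ (\<lambda>x y. r \<odot>\<^bsub>TPQ\<^esub> tpq (FA.phi a x) (FB.phi b y)) W"
    unfolding Psi_def using ab
    by (intro tlift_cong[OF TPQ_mod W])
       (auto simp: FA.phi_smult FA.phi_val FB.phi_val PQ.tm_smult_l intro!: PQ_smult_closed PQ.tm_closed)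
  also have "\<dots> = r \<odot>\<^bsub>TPQ\<^esub> Psi a b W"
    unfolding Psi_def using ab by (intro tlift_fun_smult[OF TPQ_mod W]) (auto intro!: PQ.tm_closed FA.phi_val FB.phi_val)
  finally show "gam W (r \<odot>\<^bsub>A\<^esub> a) b = r \<odot>\<^bsub>TPQ\<^esub> gam W a b" by (simp add: gam_def)
next
  fix r a b assume ab: "r \<in> carrier R" "a \<in> carrier A" "b \<in> carrier B"
  have "Psi a (r \<odot>\<^bsub>B\<^esub> b) W = tlift R TPQ (\<lambda>x y. r \<odot>\<^bsub>TPQ\<^esub> tpq (FA.phi a x) (FB.phi b y)) W"
    unfolding Psi_def using ab
    by (intro tlift_cong[OF TPQ_mod W])
       (auto simp: FB.phi_smult FA.phi_val FB.phi_val PQ.tm_smult_r intro!: PQ_smult_closed PQ.tm_closed)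
  also have "\<dots> = r \<odot>\<^bsub>TPQ\<^esub> Psi a b W"
    unfolding Psi_def using ab by (intro tlift_fun_smult[OF TPQ_mod W]) (auto intro!: PQ.tm_closed FA.phi_val FB.phi_val)
  finally show "gam W a (r \<odot>\<^bsub>B\<^esub> b) = r \<odot>\<^bsub>TPQ\<^esub> gam W a b" by (simp add: gam_def)
qed

lemma Phi_val: "W \<in> carrier TMN \<Longrightarrow> Phi U W = tlift R TPQ (gam W) U"
  by (simp add: Phi_def)

lemma Phi_lin_U: "W \<in> carrier TMN \<Longrightarrow> lin_map R TMN TPQ (\<lambda>U. Phi U W)"
  by (simp add: Phi_val tlift_lin[OF TPQ_mod gam_bilin])

lemma Phi_closed: "U \<in> carrier TMN \<Longrightarrow> W \<in> carrier TMN \<Longrightarrow> Phi U W \<in> carrier TPQ"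
  using lin_mapD(1)[OF Phi_lin_U] by blast

lemma Phi_tm:
  assumes a: "a \<in> carrier A" and b: "b \<in> carrier B" and W: "W \<in> carrier TMN"
  shows "Phi (tm a b) W = Psi a b W"
proof -
  have "tlift R TPQ (gam W) (tm a b) = gam W a b" by (rule tlift_tm[OF TPQ_mod gam_bilin[OF W] a b])
  then show ?thesis by (simp add: Phi_val[OF W] gam_def)
qed

lemma Phi_hom:
  assumes U: "U \<in> carrier TMN"
  shows "Phi U \<in> hom_set R TMN TPQ"
  unfolding hom_set_def
proof (intro CollectI conjI)
  show "Phi U \<in> extensional (carrier TMN)" by (simp add: Phi_def)
  show "lin_map R TMN TPQ (Phi U)"
  proof (rule lin_mapI)
    show "\<And>x. x \<in> carrier TMN \<Longrightarrow> Phi U x \<in> carrier TPQ" using Phi_closed[OF U] .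
  next
    fix W W' assume W: "W \<in> carrier TMN" "W' \<in> carrier TMN"
    have "Phi U (W \<oplus>\<^bsub>TMN\<^esub> W') = tlift R TPQ (\<lambda>a b. gam W a b \<oplus>\<^bsub>TPQ\<^esub> gam W' a b) U"
      using W by (simp add: Phi_val T_add_closed)
         (intro tlift_cong[OF TPQ_mod U], auto simp: gam_def lin_mapD(2)[OF Psi_lin] intro!: PQ_add_closed Psi_closed)
    also have "\<dots> = Phi U W \<oplus>\<^bsub>TPQ\<^esub> Phi U W'"
      using W by (simp add: Phi_val) (intro tlift_fun_add[OF TPQ_mod U], auto simp: gam_def intro!: Psi_closed)
    finally show "Phi U (W \<oplus>\<^bsub>TMN\<^esub> W') = Phi U W \<oplus>\<^bsub>TPQ\<^esub> Phi U W'" .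
  next
    fix r W assume r: "r \<in> carrier R" and W: "W \<in> carrier TMN"
    have sc: "r \<odot>\<^bsub>TMN\<^esub> W \<in> carrier TMN" using module.smult_closed[OF T_module r W] .
    have "Phi U (r \<odot>\<^bsub>TMN\<^esub> W) = tlift R TPQ (\<lambda>a b. r \<odot>\<^bsub>TPQ\<^esub> gam W a b) U"
      using W r sc by (simp add: Phi_val)
         (intro tlift_cong[OF TPQ_mod U], auto simp: gam_def lin_mapD(3)[OF Psi_lin] intro!: PQ_smult_closed Psi_closed)
    also have "\<dots> = r \<odot>\<^bsub>TPQ\<^esub> Phi U W"
      using W r by (simp add: Phi_val) (intro tlift_fun_smult[OF TPQ_mod U], auto simp: gam_def intro!: Psi_closed)
    finally show "Phi U (r \<odot>\<^bsub>TMN\<^esub> W) = r \<odot>\<^bsub>TPQ\<^esub> Phi U W" .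
  qed
qed

lemma Phi_lin_W: "U \<in> carrier TMN \<Longrightarrow> lin_map R TMN TPQ (Phi U)"
  using Phi_hom by (simp add: hom_set_def)

lemma Phi_add:
  assumes U: "U \<in> carrier TMN" and V: "V \<in> carrier TMN"
  shows "Phi (U \<oplus>\<^bsub>TMN\<^esub> V) = (\<lambda>W\<in>carrier TMN. Phi U W \<oplus>\<^bsub>TPQ\<^esub> Phi V W)"
proof (rule ext)
  fix W show "Phi (U \<oplus>\<^bsub>TMN\<^esub> V) W = (\<lambda>W\<in>carrier TMN. Phi U W \<oplus>\<^bsub>TPQ\<^esub> Phi V W) W"
  proof (cases "W \<in> carrier TMN")
    case True
    then show ?thesis using lin_mapD(2)[OF Phi_lin_U[OF True] U V] by simp
  next
    case False
    then show ?thesis by (simp add: Phi_def)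
  qed
qed

lemma Phi_mult:
  assumes U: "U \<in> carrier TMN" and V: "V \<in> carrier TMN" and W: "W \<in> carrier TMN"
  shows "Phi (amul U V) W = Phi U (amul V W)"
proof -
  have step3: "Phi (tm (a \<otimes>\<^bsub>A\<^esub> a') (b \<otimes>\<^bsub>B\<^esub> b')) W = Phi (tm a b) (amul (tm a' b') W)"
    if ab: "a \<in> carrier A" "b \<in> carrier B" "a' \<in> carrier A" "b' \<in> carrier B" and W: "W \<in> carrier TMN" for a b a' b' W
  proof -
    have "Psi (a \<otimes>\<^bsub>A\<^esub> a') (b \<otimes>\<^bsub>B\<^esub> b') W = Psi a b (amul (tm a' b') W)"
      using W
    proof (rule tens_lin_eq[OF TPQ_mod, rotated 3])
      show "lin_map R TMN TPQ (Psi (a \<otimes>\<^bsub>A\<^esub> a') (b \<otimes>\<^bsub>B\<^esub> b'))" using ab by (intro Psi_lin) auto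
      show "lin_map R TMN TPQ (\<lambda>W. Psi a b (amul (tm a' b') W))"
        using ab by (intro lin_map_comp[OF amul_lin_r Psi_lin] tm_closed)
      fix x y assume xy: "x \<in> carrier A" "y \<in> carrier B"
      show "Psi (a \<otimes>\<^bsub>A\<^esub> a') (b \<otimes>\<^bsub>B\<^esub> b') (tm x y) = Psi a b (amul (tm a' b') (tm x y))"
        using ab xy by (simp add: Psi_tm amul_tm FA.phi_mult FB.phi_mult)
    qed
    then show ?thesis using ab W by (simp add: Phi_tm amul_closed tm_closed)
  qed
  have step2: "Phi (amul (tm a b) V) W = Phi (tm a b) (amul V W)"
    if ab: "a \<in> carrier A" "b \<in> carrier B" and V: "V \<in> carrier TMN" and W: "W \<in> carrier TMN" for a b V W
    using V
  proof (rule tens_lin_eq[OF TPQ_mod, rotated 3])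
    show "lin_map R TMN TPQ (\<lambda>V. Phi (amul (tm a b) V) W)"
      using ab W by (intro lin_map_comp[OF amul_lin_r Phi_lin_U] tm_closed)
    show "lin_map R TMN TPQ (\<lambda>V. Phi (tm a b) (amul V W))"
      using ab W by (intro lin_map_comp[OF amul_lin_l Phi_lin_W] tm_closed)
    fix x y assume xy: "x \<in> carrier A" "y \<in> carrier B"
    show "Phi (amul (tm a b) (tm x y)) W = Phi (tm a b) (amul (tm x y) W)"
      using ab xy W by (simp add: amul_tm step3)
  qed
  show ?thesis using U
  proof (rule tens_lin_eq[OF TPQ_mod, rotated 3])
    show "lin_map R TMN TPQ (\<lambda>U. Phi (amul U V) W)" using V W by (intro lin_map_comp[OF amul_lin_l Phi_lin_U])
    show "lin_map R TMN TPQ (\<lambda>U. Phi U (amul V W))" using V W by (intro Phi_lin_U amul_closed)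
    fix m n assume mn: "m \<in> carrier A" "n \<in> carrier B"
    show "Phi (amul (tm m n) V) W = Phi (tm m n) (amul V W)" using mn V W by (rule step2)
  qed
qed

end


lemma smult_lin:
  assumes L: "module R L" and c: "c \<in> carrier R"
  shows "lin_map R L L (\<lambda>t. c \<odot>\<^bsub>L\<^esub> t)"
proof -
  interpret L: module R L by fact
  show ?thesis
  proof (rule lin_mapI)
    show "\<And>x. x \<in> carrier L \<Longrightarrow> c \<odot>\<^bsub>L\<^esub> x \<in> carrier L" using c by simp
    show "\<And>x y. x \<in> carrier L \<Longrightarrow> y \<in> carrier L \<Longrightarrow> c \<odot>\<^bsub>L\<^esub> (x \<oplus>\<^bsub>L\<^esub> y) = c \<odot>\<^bsub>L\<^esub> x \<oplus>\<^bsub>L\<^esub> c \<odot>\<^bsub>L\<^esub> y"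
      using c by (simp add: L.smult_r_distr)
    fix r x assume r: "r \<in> carrier R" and x: "x \<in> carrier L"
    have "c \<odot>\<^bsub>L\<^esub> (r \<odot>\<^bsub>L\<^esub> x) = (c \<otimes>\<^bsub>R\<^esub> r) \<odot>\<^bsub>L\<^esub> x" using c r x by (simp add: L.smult_assoc1)
    also have "\<dots> = (r \<otimes>\<^bsub>R\<^esub> c) \<odot>\<^bsub>L\<^esub> x" using c r by (simp add: L.m_comm)
    also have "\<dots> = r \<odot>\<^bsub>L\<^esub> (c \<odot>\<^bsub>L\<^esub> x)" using c r x by (simp add: L.smult_assoc1)
    finally show "c \<odot>\<^bsub>L\<^esub> (r \<odot>\<^bsub>L\<^esub> x) = r \<odot>\<^bsub>L\<^esub> (c \<odot>\<^bsub>L\<^esub> x)" .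
  qed
qed

context tctx begin

lemma tm_finsum2:
  assumes I: "finite I" and J: "finite J" and x: "\<And>i. i \<in> I \<Longrightarrow> x i \<in> carrier M"
    and y: "\<And>j. j \<in> J \<Longrightarrow> y j \<in> carrier N"
  shows "tm (finsum M x I) (finsum N y J) = finsum TMN (\<lambda>p. tm (x (fst p)) (y (snd p))) (I \<times> J)"
proof -
  interpret T: module R TMN by (rule T_module)
  have sy: "finsum N y J \<in> carrier N" using y by (intro N.finsum_closed) auto
  have "tm (finsum M x I) (finsum N y J) = finsum TMN (\<lambda>i. tm (x i) (finsum N y J)) I"
    using I x sy by (intro lin_map_finsum[OF M.modM T_module tm_lin_l]) auto
  also have "\<dots> = finsum TMN (\<lambda>i. finsum TMN (\<lambda>j. tm (x i) (y j)) J) I"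
    using I J x y sy by (intro T.finsum_cong_simple lin_map_finsum[OF N.modM T_module tm_lin_r])
      (auto intro!: tm_closed T.finsum_closed)
  also have "\<dots> = finsum TMN (\<lambda>p. tm (x (fst p)) (y (snd p))) (I \<times> J)"
    using I J x y by (intro T.finsum_product) (auto intro!: tm_closed)
  finally show ?thesis .
qed

end

context fctx begin

definition Eij where "Eij i j = tlift R TMN (\<lambda>p q. tm (FA.ev i p) (FB.ev j q))"

lemma ebil: "i \<in> IA \<Longrightarrow> j \<in> IB \<Longrightarrow> bilin R P Q TMN (\<lambda>p q. tm (FA.ev i p) (FB.ev j q))"
  by (rule bilinI) (auto simp: FA.ev_c FB.ev_c tm_closed FA.ev_add FB.ev_add FA.ev_smult FB.ev_smult
      tm_add_l tm_add_r tm_smult_l tm_smult_r)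

lemma E_lin: "i \<in> IA \<Longrightarrow> j \<in> IB \<Longrightarrow> lin_map R TPQ TMN (Eij i j)"
  unfolding Eij_def by (intro PQ.tlift_lin T_module ebil)

lemma E_closed: "i \<in> IA \<Longrightarrow> j \<in> IB \<Longrightarrow> t \<in> carrier TPQ \<Longrightarrow> Eij i j t \<in> carrier TMN"
  using lin_mapD(1)[OF E_lin] by blast

lemma E_tm: "i \<in> IA \<Longrightarrow> j \<in> IB \<Longrightarrow> p \<in> carrier P \<Longrightarrow> q \<in> carrier Q \<Longrightarrow>
    Eij i j (tpq p q) = tm (FA.ev i p) (FB.ev j q)"
  unfolding Eij_def by (intro PQ.tlift_tm T_module ebil)

definition Theta where
  "Theta F = finsum TMN (\<lambda>ij. Eij (fst ij) (snd ij) (F (tm (dA (fst ij)) (dB (snd ij))))) (IA \<times> IB)"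

lemma dtm_closed: "ij \<in> IA \<times> IB \<Longrightarrow> tm (dA (fst ij)) (dB (snd ij)) \<in> carrier TMN"
  by (auto intro!: tm_closed FA.dc FB.dc)

lemma Theta_closed:
  assumes F: "\<And>W. W \<in> carrier TMN \<Longrightarrow> F W \<in> carrier TPQ"
  shows "Theta F \<in> carrier TMN"
proof -
  interpret T: module R TMN by (rule T_module)
  show ?thesis unfolding Theta_def using F dtm_closed
    by (intro T.finsum_closed) (auto intro!: E_closed)
qed

lemma Theta_Phi:
  assumes U: "U \<in> carrier TMN"
  shows "Theta (Phi U) = U"
  using U
proof (induction rule: tens_induct)
  interpret T: module R TMN by (rule T_module)
  interpret TP: module R TPQ by (rule TPQ_mod)
  case zero
  have "Theta (Phi \<zero>\<^bsub>TMN\<^esub>) = finsum TMN (\<lambda>ij. \<zero>\<^bsub>TMN\<^esub>) (IA \<times> IB)"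
    unfolding Theta_def
  proof (rule T.finsum_cong_simple)
    fix ij assume ij: "ij \<in> IA \<times> IB"
    have "Phi \<zero>\<^bsub>TMN\<^esub> (tm (dA (fst ij)) (dB (snd ij))) = \<zero>\<^bsub>TPQ\<^esub>"
      by (rule lin_map_zero[OF T_module TPQ_mod Phi_lin_U[OF dtm_closed[OF ij]]])
    then show "Eij (fst ij) (snd ij) (Phi \<zero>\<^bsub>TMN\<^esub> (tm (dA (fst ij)) (dB (snd ij)))) = \<zero>\<^bsub>TMN\<^esub>"
      using lin_map_zero[OF TPQ_mod T_module E_lin] ij by auto
  qed auto
  then show ?case by simp
next
  interpret T: module R TMN by (rule T_module)
  interpret TP: module R TPQ by (rule TPQ_mod)
  case (tm a b)
  let ?x = "\<lambda>i. FA.ev i (FA.phi a (dA i))" and ?y = "\<lambda>j. FB.ev j (FB.phi b (dB j))"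
  have xc: "?x i \<in> carrier A" if "i \<in> IA" for i using that tm by (intro FA.ev_c FA.phi_val FA.dc)
  have yc: "?y j \<in> carrier B" if "j \<in> IB" for j using that tm by (intro FB.ev_c FB.phi_val FB.dc)
  have "Theta (Phi (tm a b)) = finsum TMN (\<lambda>ij. tm (?x (fst ij)) (?y (snd ij))) (IA \<times> IB)"
    unfolding Theta_def
  proof (rule T.finsum_cong_simple)
    fix ij assume ij: "ij \<in> IA \<times> IB"
    then have i: "fst ij \<in> IA" and j: "snd ij \<in> IB" by auto
    have "Phi (tm a b) (tm (dA (fst ij)) (dB (snd ij))) = tpq (FA.phi a (dA (fst ij))) (FB.phi b (dB (snd ij)))"
      using tm i j by (simp add: Phi_tm dtm_closed[OF ij] Psi_tm FA.dc FB.dc)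
    then show "Eij (fst ij) (snd ij) (Phi (tm a b) (tm (dA (fst ij)) (dB (snd ij)))) = tm (?x (fst ij)) (?y (snd ij))"
      using tm i j by (simp add: E_tm FA.phi_val FB.phi_val FA.dc FB.dc)
  next
    show "(\<lambda>ij. tm (?x (fst ij)) (?y (snd ij))) \<in> IA \<times> IB \<rightarrow> carrier TMN"
      using xc yc by (auto intro!: tm_closed)
  qed
  also have "\<dots> = tm (finsum A ?x IA) (finsum B ?y IB)"
    using xc yc by (intro tm_finsum2[symmetric] FA.I_fin FB.I_fin)
  also have "\<dots> = tm a b" using tm by (simp add: FA.recon FB.recon)
  finally show ?case .
next
  interpret T: module R TMN by (rule T_module)
  interpret TP: module R TPQ by (rule TPQ_mod)
  case (add U V)
  have "Theta (Phi (U \<oplus>\<^bsub>TMN\<^esub> V)) = finsum TMN (\<lambda>ij. Eij (fst ij) (snd ij) (Phi U (tm (dA (fst ij)) (dB (snd ij))))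
      \<oplus>\<^bsub>TMN\<^esub> Eij (fst ij) (snd ij) (Phi V (tm (dA (fst ij)) (dB (snd ij))))) (IA \<times> IB)"
    unfolding Theta_def
  proof (rule T.finsum_cong_simple)
    fix ij assume ij: "ij \<in> IA \<times> IB"
    then have i: "fst ij \<in> IA" and j: "snd ij \<in> IB" by auto
    have "Phi (U \<oplus>\<^bsub>TMN\<^esub> V) (tm (dA (fst ij)) (dB (snd ij)))
        = Phi U (tm (dA (fst ij)) (dB (snd ij))) \<oplus>\<^bsub>TPQ\<^esub> Phi V (tm (dA (fst ij)) (dB (snd ij)))"
      using lin_mapD(2)[OF Phi_lin_U[OF dtm_closed[OF ij]] add(1,2)] .
    then show "Eij (fst ij) (snd ij) (Phi (U \<oplus>\<^bsub>TMN\<^esub> V) (tm (dA (fst ij)) (dB (snd ij))))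
      = Eij (fst ij) (snd ij) (Phi U (tm (dA (fst ij)) (dB (snd ij))))
      \<oplus>\<^bsub>TMN\<^esub> Eij (fst ij) (snd ij) (Phi V (tm (dA (fst ij)) (dB (snd ij))))"
      using lin_mapD(2)[OF E_lin[OF i j]] Phi_closed add(1,2) dtm_closed[OF ij] by simp
  next
    show "(\<lambda>ij. Eij (fst ij) (snd ij) (Phi U (tm (dA (fst ij)) (dB (snd ij))))
      \<oplus>\<^bsub>TMN\<^esub> Eij (fst ij) (snd ij) (Phi V (tm (dA (fst ij)) (dB (snd ij))))) \<in> IA \<times> IB \<rightarrow> carrier TMN"
      using add(1,2) dtm_closed by (auto intro!: T.add.m_closed E_closed Phi_closed)
  qed
  also have "\<dots> = Theta (Phi U) \<oplus>\<^bsub>TMN\<^esub> Theta (Phi V)"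
    unfolding Theta_def using add(1,2) dtm_closed
    by (intro T.finsum_addf) (auto intro!: E_closed Phi_closed)
  also have "\<dots> = U \<oplus>\<^bsub>TMN\<^esub> V" using add by simp
  finally show ?case .
qed

end


context fctx begin

lemma PhiE:
  assumes i: "i \<in> IA" and j: "j \<in> IB" and t: "t \<in> carrier TPQ" and x: "x \<in> carrier A" and y: "y \<in> carrier B"
  shows "Phi (Eij i j t) (tm x y) = (\<alpha>A i x \<otimes> \<alpha>B j y) \<odot>\<^bsub>TPQ\<^esub> t"
  using t
proof (rule PQ.tens_lin_eq[OF TPQ_mod, rotated 3])
  interpret TP: module R TPQ by (rule TPQ_mod)
  have c: "\<alpha>A i x \<otimes> \<alpha>B j y \<in> carrier R" using i j x y by (intro m_closed FA.\<alpha>c FB.\<alpha>c)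
  show "lin_map R TPQ TPQ (\<lambda>t. Phi (Eij i j t) (tm x y))"
    using x y by (intro lin_map_comp[OF E_lin[OF i j] Phi_lin_U] tm_closed)
  show "lin_map R TPQ TPQ (\<lambda>t. (\<alpha>A i x \<otimes> \<alpha>B j y) \<odot>\<^bsub>TPQ\<^esub> t)" by (rule smult_lin[OF TPQ_mod c])
  fix p q assume p: "p \<in> carrier P" and q: "q \<in> carrier Q"
  have ai: "\<alpha>A i x \<in> carrier R" and bj: "\<alpha>B j y \<in> carrier R" using i j x y by (auto intro: FA.\<alpha>c FB.\<alpha>c)
  have "Phi (Eij i j (tpq p q)) (tm x y) = tpq (FA.phi (FA.ev i p) x) (FB.phi (FB.ev j q) y)"
    using i j p q x y by (simp add: E_tm Phi_tm Psi_tm FA.ev_c FB.ev_c tm_closed)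
  also have "\<dots> = tpq (\<alpha>A i x \<odot>\<^bsub>P\<^esub> p) (\<alpha>B j y \<odot>\<^bsub>Q\<^esub> q)"
    using i j p q x y by (simp add: FA.phi_ev FB.phi_ev)
  also have "\<dots> = \<alpha>A i x \<odot>\<^bsub>TPQ\<^esub> tpq p (\<alpha>B j y \<odot>\<^bsub>Q\<^esub> q)"
    using ai bj p q by (intro PQ.tm_smult_l) auto
  also have "tpq p (\<alpha>B j y \<odot>\<^bsub>Q\<^esub> q) = \<alpha>B j y \<odot>\<^bsub>TPQ\<^esub> tpq p q"
    using ai bj p q by (intro PQ.tm_smult_r) auto
  also have "\<alpha>A i x \<odot>\<^bsub>TPQ\<^esub> (\<alpha>B j y \<odot>\<^bsub>TPQ\<^esub> tpq p q) = (\<alpha>A i x \<otimes> \<alpha>B j y) \<odot>\<^bsub>TPQ\<^esub> tpq p q"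
    using ai bj p q by (intro TP.smult_assoc1[symmetric] PQ.tm_closed)
  finally show "Phi (Eij i j (tpq p q)) (tm x y) = (\<alpha>A i x \<otimes> \<alpha>B j y) \<odot>\<^bsub>TPQ\<^esub> tpq p q" .
qed

lemma Phi_Theta:
  assumes h: "h \<in> hom_set R TMN TPQ"
  shows "Phi (Theta h) = h"
proof -
  interpret T: module R TMN by (rule T_module)
  interpret TP: module R TPQ by (rule TPQ_mod)
  have hl: "lin_map R TMN TPQ h" and he: "h \<in> extensional (carrier TMN)" using h by (auto simp: hom_set_def)
  have hc: "\<And>W. W \<in> carrier TMN \<Longrightarrow> h W \<in> carrier TPQ" using lin_mapD(1)[OF hl] .
  have Th: "Theta h \<in> carrier TMN" by (rule Theta_closed[OF hc])
  let ?t = "\<lambda>ij. h (tm (dA (fst ij)) (dB (snd ij)))"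
  have tc: "?t ij \<in> carrier TPQ" if "ij \<in> IA \<times> IB" for ij using hc dtm_closed[OF that] .
  have eq: "Phi (Theta h) W = h W" if W: "W \<in> carrier TMN" for W
    using W
  proof (rule tens_lin_eq[OF TPQ_mod, rotated 3])
    show "lin_map R TMN TPQ (Phi (Theta h))" by (rule Phi_lin_W[OF Th])
    show "lin_map R TMN TPQ h" by (rule hl)
    fix x y assume x: "x \<in> carrier A" and y: "y \<in> carrier B"
    have c: "\<alpha>A (fst ij) x \<otimes> \<alpha>B (snd ij) y \<in> carrier R" if "ij \<in> IA \<times> IB" for ij
      using that x y by (auto intro!: m_closed FA.\<alpha>c FB.\<alpha>c)
    have "Phi (Theta h) (tm x y) = finsum TPQ (\<lambda>ij. Phi (Eij (fst ij) (snd ij) (?t ij)) (tm x y)) (IA \<times> IB)"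
      unfolding Theta_def using tc FA.I_fin FB.I_fin
      by (intro lin_map_finsum[OF T_module TPQ_mod Phi_lin_U] tm_closed x y)
         (auto intro!: E_closed)
    also have "\<dots> = finsum TPQ (\<lambda>ij. (\<alpha>A (fst ij) x \<otimes> \<alpha>B (snd ij) y) \<odot>\<^bsub>TPQ\<^esub> ?t ij) (IA \<times> IB)"
      using tc c x y by (intro TP.finsum_cong_simple) (auto simp: PhiE)
    also have "\<dots> = finsum TPQ (\<lambda>ij. h ((\<alpha>A (fst ij) x \<otimes> \<alpha>B (snd ij) y) \<odot>\<^bsub>TMN\<^esub> tm (dA (fst ij)) (dB (snd ij)))) (IA \<times> IB)"
      using tc c dtm_closed by (intro TP.finsum_cong_simple) (auto simp: lin_mapD(3)[OF hl])
    also have "\<dots> = h (finsum TMN (\<lambda>ij. (\<alpha>A (fst ij) x \<otimes> \<alpha>B (snd ij) y) \<odot>\<^bsub>TMN\<^esub> tm (dA (fst ij)) (dB (snd ij))) (IA \<times> IB))"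
      using c dtm_closed FA.I_fin FB.I_fin
      by (intro lin_map_finsum[OF T_module TPQ_mod hl, symmetric]) auto
    also have "finsum TMN (\<lambda>ij. (\<alpha>A (fst ij) x \<otimes> \<alpha>B (snd ij) y) \<odot>\<^bsub>TMN\<^esub> tm (dA (fst ij)) (dB (snd ij))) (IA \<times> IB)
        = finsum TMN (\<lambda>ij. tm (\<alpha>A (fst ij) x \<odot>\<^bsub>A\<^esub> dA (fst ij)) (\<alpha>B (snd ij) y \<odot>\<^bsub>B\<^esub> dB (snd ij))) (IA \<times> IB)"
    proof (rule T.finsum_cong_simple)
      fix ij assume ij: "ij \<in> IA \<times> IB"
      then have i: "fst ij \<in> IA" and j: "snd ij \<in> IB" by auto
      have ai: "\<alpha>A (fst ij) x \<in> carrier R" and bj: "\<alpha>B (snd ij) y \<in> carrier R" using i j x y by (auto intro: FA.\<alpha>c FB.\<alpha>c)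
      have da: "dA (fst ij) \<in> carrier A" and db: "dB (snd ij) \<in> carrier B" using i j by (auto intro: FA.dc FB.dc)
      have "tm (\<alpha>A (fst ij) x \<odot>\<^bsub>A\<^esub> dA (fst ij)) (\<alpha>B (snd ij) y \<odot>\<^bsub>B\<^esub> dB (snd ij))
          = \<alpha>A (fst ij) x \<odot>\<^bsub>TMN\<^esub> tm (dA (fst ij)) (\<alpha>B (snd ij) y \<odot>\<^bsub>B\<^esub> dB (snd ij))"
        using ai bj da db by (intro tm_smult_l) auto
      also have "tm (dA (fst ij)) (\<alpha>B (snd ij) y \<odot>\<^bsub>B\<^esub> dB (snd ij)) = \<alpha>B (snd ij) y \<odot>\<^bsub>TMN\<^esub> tm (dA (fst ij)) (dB (snd ij))"
        using ai bj da db by (intro tm_smult_r) auto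
      also have "\<alpha>A (fst ij) x \<odot>\<^bsub>TMN\<^esub> (\<alpha>B (snd ij) y \<odot>\<^bsub>TMN\<^esub> tm (dA (fst ij)) (dB (snd ij)))
          = (\<alpha>A (fst ij) x \<otimes> \<alpha>B (snd ij) y) \<odot>\<^bsub>TMN\<^esub> tm (dA (fst ij)) (dB (snd ij))"
        using ai bj da db by (intro T.smult_assoc1[symmetric] tm_closed)
      finally show "(\<alpha>A (fst ij) x \<otimes> \<alpha>B (snd ij) y) \<odot>\<^bsub>TMN\<^esub> tm (dA (fst ij)) (dB (snd ij))
          = tm (\<alpha>A (fst ij) x \<odot>\<^bsub>A\<^esub> dA (fst ij)) (\<alpha>B (snd ij) y \<odot>\<^bsub>B\<^esub> dB (snd ij))" by simp
    next
      show "(\<lambda>ij. tm (\<alpha>A (fst ij) x \<odot>\<^bsub>A\<^esub> dA (fst ij)) (\<alpha>B (snd ij) y \<odot>\<^bsub>B\<^esub> dB (snd ij))) \<in> IA \<times> IB \<rightarrow> carrier TMN"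
        using x y by (auto intro!: tm_closed FA.\<alpha>c FB.\<alpha>c FA.dc FB.dc)
    qed
    also have "\<dots> = tm (finsum A (\<lambda>i. \<alpha>A i x \<odot>\<^bsub>A\<^esub> dA i) IA) (finsum B (\<lambda>j. \<alpha>B j y \<odot>\<^bsub>B\<^esub> dB j) IB)"
      using x y by (intro tm_finsum2[symmetric] FA.I_fin FB.I_fin) (auto intro!: FA.\<alpha>c FB.\<alpha>c FA.dc FB.dc)
    also have "\<dots> = tm x y" using FA.db[OF x, symmetric] FB.db[OF y, symmetric] by simp
    finally show "Phi (Theta h) (tm x y) = h (tm x y)" .
  qed
  show ?thesis
    by (rule extensionalityI[where A = "carrier TMN"]) (use eq he in \<open>auto simp: Phi_def\<close>)
qed

lemma Phi_bij: "bij_betw Phi (carrier TMN) (hom_set R TMN TPQ)"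
proof (rule bij_betw_imageI)
  show "inj_on Phi (carrier TMN)"
    by (rule inj_onI) (metis Theta_Phi)
  show "Phi ` carrier TMN = hom_set R TMN TPQ"
  proof
    show "Phi ` carrier TMN \<subseteq> hom_set R TMN TPQ" using Phi_hom by auto
    show "hom_set R TMN TPQ \<subseteq> Phi ` carrier TMN"
    proof
      fix h assume h: "h \<in> hom_set R TMN TPQ"
      have "Theta h \<in> carrier TMN"
        using h by (intro Theta_closed) (auto simp: hom_set_def lin_map_def)
      then show "h \<in> Phi ` carrier TMN" using Phi_Theta[OF h] by (metis image_eqI)
    qed
  qed
qed

end


context actx begin

lemma TA_ops:
  "carrier TA = carrier TMN" "ring.add TA = ring.add TMN" "ring.zero TA = ring.zero TMN"
  "module.smult TA = module.smult TMN"
  by (simp_all add: tensor_alg_def)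

lemma finsum_TA: "finsum TA = finsum TMN"
  by (simp add: finsum_def TA_ops)

lemma lin_map_TA_dom: "lin_map R TA L h = lin_map R TMN L h"
  by (simp add: lin_map_def TA_ops)

lemma lin_map_TA_cod: "lin_map R L TA h = lin_map R L TMN h"
  by (simp add: lin_map_def TA_ops)

lemma fin_gen_TA: "fin_gen R TA = fin_gen R TMN"
  by (simp add: fin_gen_def finsum_TA TA_ops)

lemma projective_TA: "projective R TA = projective R TMN"
  by (simp add: projective_def lin_map_TA_dom lin_map_TA_cod TA_ops)

end

context fctx begin

lemma hom_TA: "hom_set R TA TPQ = hom_set R TMN TPQ"
  by (simp add: hom_set_def lin_map_TA_dom TA_ops)

lemma fctx_frob: "frobenius R TPQ TA"
  unfolding frobenius_def
proof (intro conjI)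
  show "k_algebra R TA" by (rule TA_k_algebra)
  have fgA: "fin_gen R A" and pA: "projective R A" using FA.frob by (auto simp: frobenius_def)
  have fgB: "fin_gen R B" and pB: "projective R B" using FB.frob by (auto simp: frobenius_def)
  show "fin_gen R TA" unfolding fin_gen_TA by (rule T_fin_gen[OF fgA fgB])
  show "projective R TA" unfolding projective_TA by (rule T_projective[OF pA pB])
  show "\<exists>\<phi>. bij_betw \<phi> (carrier TA) (hom_set R TA TPQ) \<and>
        (\<forall>x\<in>carrier TA. \<forall>y\<in>carrier TA. \<phi> (x \<oplus>\<^bsub>TA\<^esub> y) = (\<lambda>z\<in>carrier TA. \<phi> x z \<oplus>\<^bsub>TPQ\<^esub> \<phi> y z)) \<and>
        (\<forall>x\<in>carrier TA. \<forall>a\<in>carrier TA. \<phi> (x \<otimes>\<^bsub>TA\<^esub> a) = (\<lambda>z\<in>carrier TA. \<phi> x (a \<otimes>\<^bsub>TA\<^esub> z)))"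
  proof (intro exI[of _ Phi] conjI ballI)
    show "bij_betw Phi (carrier TA) (hom_set R TA TPQ)"
      unfolding hom_TA TA_ops(1) by (rule Phi_bij)
  next
    fix x y assume "x \<in> carrier TA" "y \<in> carrier TA"
    then show "Phi (x \<oplus>\<^bsub>TA\<^esub> y) = (\<lambda>z\<in>carrier TA. Phi x z \<oplus>\<^bsub>TPQ\<^esub> Phi y z)"
      unfolding TA_ops(1) using Phi_add by (simp add: TA_ops)
  next
    fix x a assume x: "x \<in> carrier TA" and a: "a \<in> carrier TA"
    show "Phi (x \<otimes>\<^bsub>TA\<^esub> a) = (\<lambda>z\<in>carrier TA. Phi x (a \<otimes>\<^bsub>TA\<^esub> z))"
    proof (rule ext)
      fix z
      show "Phi (x \<otimes>\<^bsub>TA\<^esub> a) z = (\<lambda>z\<in>carrier TA. Phi x (a \<otimes>\<^bsub>TA\<^esub> z)) z"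
      proof (cases "z \<in> carrier TA")
        case True
        then show ?thesis using x a unfolding TA_ops(1) by (simp add: mult_eq Phi_mult amul_closed)
      next
        case False
        then show ?thesis by (simp add: Phi_def TA_ops(1))
      qed
    qed
  qed
qed

end

theorem lemma2p9:
  fixes R :: "('k, 'c) ring_scheme"
    and P :: "('k, 'p, 'u) module_scheme" and Q :: "('k, 'q, 'v) module_scheme"
    and A :: "('k, 'a, 'x) module_scheme" and B :: "('k, 'b, 'y) module_scheme"
  assumes "cring R"
    and "invertible_mod R P" and "invertible_mod R Q"
    and "frobenius R P A" and "frobenius R Q B"
  shows "frobenius R (tensor_mod R P Q) (tensor_alg R A B)"
proof -
  have mP: "module R P" and mQ: "module R Q" using assms(2,3) by (auto simp: invertible_mod_def)
  have algA: "k_algebra R A" and fgA: "fin_gen R A" and pA: "projective R A"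
    using assms(4) by (auto simp: frobenius_def)
  have algB: "k_algebra R B" and fgB: "fin_gen R B" and pB: "projective R B"
    using assms(5) by (auto simp: frobenius_def)
  have mA: "module R A" using algA by (simp add: k_algebra_def)
  have mB: "module R B" using algB by (simp add: k_algebra_def)
  obtain IA dA \<alpha>A where dbA: "finite IA \<and> IA \<subseteq> carrier A \<and> (\<forall>i\<in>IA. dA i \<in> carrier A) \<and>
     (\<forall>i\<in>IA. \<forall>x\<in>carrier A. \<alpha>A i x \<in> carrier R) \<and>
     (\<forall>i\<in>IA. \<forall>x\<in>carrier A. \<forall>y\<in>carrier A. \<alpha>A i (x \<oplus>\<^bsub>A\<^esub> y) = \<alpha>A i x \<oplus>\<^bsub>R\<^esub> \<alpha>A i y) \<and>
     (\<forall>i\<in>IA. \<forall>r\<in>carrier R. \<forall>x\<in>carrier A. \<alpha>A i (r \<odot>\<^bsub>A\<^esub> x) = r \<otimes>\<^bsub>R\<^esub> \<alpha>A i x) \<and>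
     (\<forall>x\<in>carrier A. x = finsum A (\<lambda>i. \<alpha>A i x \<odot>\<^bsub>A\<^esub> dA i) IA)"
    using module.dual_basis_exists[OF mA fgA pA] by blast
  obtain IB dB \<alpha>B where dbB: "finite IB \<and> IB \<subseteq> carrier B \<and> (\<forall>i\<in>IB. dB i \<in> carrier B) \<and>
     (\<forall>i\<in>IB. \<forall>x\<in>carrier B. \<alpha>B i x \<in> carrier R) \<and>
     (\<forall>i\<in>IB. \<forall>x\<in>carrier B. \<forall>y\<in>carrier B. \<alpha>B i (x \<oplus>\<^bsub>B\<^esub> y) = \<alpha>B i x \<oplus>\<^bsub>R\<^esub> \<alpha>B i y) \<and>
     (\<forall>i\<in>IB. \<forall>r\<in>carrier R. \<forall>x\<in>carrier B. \<alpha>B i (r \<odot>\<^bsub>B\<^esub> x) = r \<otimes>\<^bsub>R\<^esub> \<alpha>B i x) \<and>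
     (\<forall>x\<in>carrier B. x = finsum B (\<lambda>i. \<alpha>B i x \<odot>\<^bsub>B\<^esub> dB i) IB)"
    using module.dual_basis_exists[OF mB fgB pB] by blast
  have t: "tctx R A B" using assms(1) mA mB by (simp add: tctx_def)
  have a: "actx R A B" using t algA algB by (simp add: actx_def actx_axioms_def)
  have fa: "fr1 R A P IA dA \<alpha>A" using assms(1,4) mA mP dbA by (simp add: fr1_def fr1_axioms_def)
  have fb: "fr1 R B Q IB dB \<alpha>B" using assms(1,5) mB mQ dbB by (simp add: fr1_def fr1_axioms_def)
  interpret F: fctx R A B P Q IA dA \<alpha>A IB dB \<alpha>B
    using a fa fb by (simp add: fctx_def)
  show ?thesis by (rule F.fctx_frob)
qed


end
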